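(* Every bigroupoid $\mathcal B$ has a path object: the diagonal morphism $\Delta:\mathcal B\to\mathcal B\times\mathcal B$ factors as $\Delta=\langle S,T\rangle\circ R$ with $R:\mathcal B\to\mathcal P\mathcal B$ a weak equivalence and $\langle S,T\rangle:\mathcal P\mathcal B\to\mathcal B\times\mathcal B$ a fibration.
   Context: A bigroupoid $\mathcal B$ consists of: a set $\mathcal B_0$ of 0-cells; for each $A,B\in\mathcal B_0$ a groupoid $\mathcal B(A,B)$ whose objects are 1-cells and whose arrows are 2-cells; composition functors $*$; identity 1-cells $1_A$; inversion functors $(-)^*$; and natural isomorphisms $\mathbf a:(h*g)*f\Rightarrow h*(g*f)$, $\mathbf l:1_B*f\Rightarrow f$, $\mathbf r:f*1_A\Rightarrow f$, $\mathbf e:f^**f\Rightarrow 1_A$, $\mathbf i:1_B\Rightarrow f*f^*$, such that the pentagon for $\mathbf a$ commutes, $(\mathrm{id}*\mathbf l)\circ\mathbf a=\mathbf r*\mathrm{id}$, and $\mathbf r_f\circ(\mathrm{id}*\mathbf e_f)\circ\mathbf a\circ(\mathbf i_f*\mathrm{id})=\mathbf l_f$. A morphism $(F,\phi):\mathcal A\to\mathcal B$ consists of a function on 0-cells, functors $F_{A,A'}:\mathcal A(A,A')\to\mathcal B(FA,FA')$ and natural isomorphisms $\phi_{g,f}:Fg*Ff\Rightarrow F(g*f)$, $\phi_A:1_{FA}\Rightarrow F1_A$, $\phi_f:(Ff)^*\Rightarrow F(f^* )$ satisfying $F\mathbf a\circ\phi\circ(\phi*\mathrm{id})=\phi\circ(\mathrm{id}*\phi)\circ\mathbf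 a$, $F\mathbf r\circ\phi\circ(\mathrm{id}*\phi_A)=\mathbf r$, $F\mathbf l\circ\phi\circ(\phi_B*\mathrm{id})=\mathbf l$, $F\mathbf e\circ\phi\circ(\phi_f*\mathrm{id})=\phi_A\circ\mathbf e$, $F\mathbf i\circ\phi_B=\phi\circ(\mathrm{id}*\phi_f)\circ\mathbf i$. The product $\mathcal B\times\mathcal B$ is formed componentwise (0-cells, hom-groupoids and all structure taken as products), and $\Delta$ is the strict diagonal morphism. Fibration: (1) for every 0-cell $A'$ of $\mathcal A$ and 1-cell $b:B\to FA'$ there is $a:A\to A'$ with $FA=B$, $Fa=b$; (2) for every 1-cell $a'$ and 2-cell $\beta:b\Rightarrow Fa'$ there is $\alpha:a\Rightarrow a'$ with $Fa=b$, $F\alpha=\beta$. Weak equivalence: every 0-cell $B$ of the codomain admits a 1-cell $B\to FA'$ for some 0-cell $A'$, and each $F_{A,A'}$ is an equivalence of categories. *)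

theory Defs
  imports Main
begin

text \<open>The hom-groupoid B(X,Y) has as objects the 1-cells f in arr1 with src1 f = X, trg1 f = Y,
  and as arrows the 2-cells between such 1-cells.  vcomp is vertical composition
  (vcomp beta alpha = beta o alpha), hcomp1/hcomp2 the composition functor *,
  unit1 the identity 1-cells, inv1/inv2 the inversion functor, and asc, lunit, runit,
  counit_e, unit_i the structure cells a, l, r, e, i.\<close>

record ('o,'a,'c) bigroupoid =
  obj :: "'o set"
  arr1 :: "'a set"
  src1 :: "'a \<Rightarrow> 'o"
  trg1 :: "'a \<Rightarrow> 'o"
  arr2 :: "'c set"
  dom2 :: "'c \<Rightarrow> 'a"
  cod2 :: "'c \<Rightarrow> 'a"
  vcomp :: "'c \<Rightarrow> 'c \<Rightarrow> 'c"
  id2 :: "'a \<Rightarrow> 'c"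
  hcomp1 :: "'a \<Rightarrow> 'a \<Rightarrow> 'a"
  hcomp2 :: "'c \<Rightarrow> 'c \<Rightarrow> 'c"
  unit1 :: "'o \<Rightarrow> 'a"
  inv1 :: "'a \<Rightarrow> 'a"
  inv2 :: "'c \<Rightarrow> 'c"
  asc :: "'a \<Rightarrow> 'a \<Rightarrow> 'a \<Rightarrow> 'c"
  lunit :: "'a \<Rightarrow> 'c"
  runit :: "'a \<Rightarrow> 'c"
  counit_e :: "'a \<Rightarrow> 'c"
  unit_i :: "'a \<Rightarrow> 'c"

definition hom1 :: "('o,'a,'c) bigroupoid \<Rightarrow> 'o \<Rightarrow> 'o \<Rightarrow> 'a \<Rightarrow> bool" where
  "hom1 B X Y f \<longleftrightarrow> f \<in> arr1 B \<and> src1 B f = X \<and> trg1 B f = Y"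

definition cell2 :: "('o,'a,'c) bigroupoid \<Rightarrow> 'a \<Rightarrow> 'a \<Rightarrow> 'c \<Rightarrow> bool" where
  "cell2 B f g \<alpha> \<longleftrightarrow> \<alpha> \<in> arr2 B \<and> dom2 B \<alpha> = f \<and> cod2 B \<alpha> = g"

definition bigroupoid :: "('o,'a,'c) bigroupoid \<Rightarrow> bool" where
  "bigroupoid B \<longleftrightarrow>
    \<comment> \<open>hom-groupoids\<close>
    (\<forall>f\<in>arr1 B. src1 B f \<in> obj B \<and> trg1 B f \<in> obj B) \<and>
    (\<forall>\<alpha>\<in>arr2 B. dom2 B \<alpha> \<in> arr1 B \<and> cod2 B \<alpha> \<in> arr1 B \<and>
        src1 B (dom2 B \<alpha>) = src1 B (cod2 B \<alpha>) \<and> trg1 B (dom2 B \<alpha>) = trg1 B (cod2 B \<alpha>)) \<and>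
    (\<forall>f\<in>arr1 B. cell2 B f f (id2 B f)) \<and>
    (\<forall>\<alpha>\<in>arr2 B. \<forall>\<beta>\<in>arr2 B. cod2 B \<alpha> = dom2 B \<beta> \<longrightarrow>
        cell2 B (dom2 B \<alpha>) (cod2 B \<beta>) (vcomp B \<beta> \<alpha>)) \<and>
    (\<forall>\<alpha>\<in>arr2 B. vcomp B \<alpha> (id2 B (dom2 B \<alpha>)) = \<alpha> \<and> vcomp B (id2 B (cod2 B \<alpha>)) \<alpha> = \<alpha>) \<and>
    (\<forall>\<alpha>\<in>arr2 B. \<forall>\<beta>\<in>arr2 B. \<forall>\<gamma>\<in>arr2 B. cod2 B \<alpha> = dom2 B \<beta> \<and> cod2 B \<beta> = dom2 B \<gamma> \<longrightarrow>
        vcomp B \<gamma> (vcomp B \<beta> \<alpha>) = vcomp B (vcomp B \<gamma> \<beta>) \<alpha>) \<and>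
    (\<forall>\<alpha>\<in>arr2 B. \<exists>\<beta>\<in>arr2 B. dom2 B \<beta> = cod2 B \<alpha> \<and> cod2 B \<beta> = dom2 B \<alpha> \<and>
        vcomp B \<beta> \<alpha> = id2 B (dom2 B \<alpha>) \<and> vcomp B \<alpha> \<beta> = id2 B (cod2 B \<alpha>)) \<and>
    \<comment> \<open>composition functor\<close>
    (\<forall>f\<in>arr1 B. \<forall>g\<in>arr1 B. trg1 B f = src1 B g \<longrightarrow>
        hom1 B (src1 B f) (trg1 B g) (hcomp1 B g f)) \<and>
    (\<forall>\<alpha>\<in>arr2 B. \<forall>\<beta>\<in>arr2 B. trg1 B (dom2 B \<alpha>) = src1 B (dom2 B \<beta>) \<longrightarrow>
        cell2 B (hcomp1 B (dom2 B \<beta>) (dom2 B \<alpha>)) (hcomp1 B (cod2 B \<beta>) (cod2 B \<alpha>)) (hcomp2 B \<beta> \<alpha>)) \<and>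
    (\<forall>f\<in>arr1 B. \<forall>g\<in>arr1 B. trg1 B f = src1 B g \<longrightarrow>
        hcomp2 B (id2 B g) (id2 B f) = id2 B (hcomp1 B g f)) \<and>
    (\<forall>\<alpha>\<in>arr2 B. \<forall>\<alpha>'\<in>arr2 B. \<forall>\<beta>\<in>arr2 B. \<forall>\<beta>'\<in>arr2 B.
        cod2 B \<alpha> = dom2 B \<alpha>' \<and> cod2 B \<beta> = dom2 B \<beta>' \<and> trg1 B (dom2 B \<alpha>) = src1 B (dom2 B \<beta>) \<longrightarrow>
        hcomp2 B (vcomp B \<beta>' \<beta>) (vcomp B \<alpha>' \<alpha>) = vcomp B (hcomp2 B \<beta>' \<alpha>') (hcomp2 B \<beta> \<alpha>)) \<and>
    \<comment> \<open>identity 1-cells\<close>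
    (\<forall>X\<in>obj B. hom1 B X X (unit1 B X)) \<and>
    \<comment> \<open>inversion functor\<close>
    (\<forall>f\<in>arr1 B. hom1 B (trg1 B f) (src1 B f) (inv1 B f)) \<and>
    (\<forall>\<alpha>\<in>arr2 B. cell2 B (inv1 B (dom2 B \<alpha>)) (inv1 B (cod2 B \<alpha>)) (inv2 B \<alpha>)) \<and>
    (\<forall>f\<in>arr1 B. inv2 B (id2 B f) = id2 B (inv1 B f)) \<and>
    (\<forall>\<alpha>\<in>arr2 B. \<forall>\<beta>\<in>arr2 B. cod2 B \<alpha> = dom2 B \<beta> \<longrightarrow>
        inv2 B (vcomp B \<beta> \<alpha>) = vcomp B (inv2 B \<beta>) (inv2 B \<alpha>)) \<and>
    \<comment> \<open>associator a : (h*g)*f => h*(g*f), natural\<close>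
    (\<forall>f\<in>arr1 B. \<forall>g\<in>arr1 B. \<forall>h\<in>arr1 B. trg1 B f = src1 B g \<and> trg1 B g = src1 B h \<longrightarrow>
        cell2 B (hcomp1 B (hcomp1 B h g) f) (hcomp1 B h (hcomp1 B g f)) (asc B h g f)) \<and>
    (\<forall>\<alpha>\<in>arr2 B. \<forall>\<beta>\<in>arr2 B. \<forall>\<gamma>\<in>arr2 B.
        trg1 B (dom2 B \<alpha>) = src1 B (dom2 B \<beta>) \<and> trg1 B (dom2 B \<beta>) = src1 B (dom2 B \<gamma>) \<longrightarrow>
        vcomp B (asc B (cod2 B \<gamma>) (cod2 B \<beta>) (cod2 B \<alpha>)) (hcomp2 B (hcomp2 B \<gamma> \<beta>) \<alpha>) =
        vcomp B (hcomp2 B \<gamma> (hcomp2 B \<beta> \<alpha>)) (asc B (dom2 B \<gamma>) (dom2 B \<beta>) (dom2 B \<alpha>))) \<and>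
    \<comment> \<open>left unitor l : 1_B * f => f, natural\<close>
    (\<forall>f\<in>arr1 B. cell2 B (hcomp1 B (unit1 B (trg1 B f)) f) f (lunit B f)) \<and>
    (\<forall>\<alpha>\<in>arr2 B. vcomp B \<alpha> (lunit B (dom2 B \<alpha>)) =
        vcomp B (lunit B (cod2 B \<alpha>)) (hcomp2 B (id2 B (unit1 B (trg1 B (dom2 B \<alpha>)))) \<alpha>)) \<and>
    \<comment> \<open>right unitor r : f * 1_A => f, natural\<close>
    (\<forall>f\<in>arr1 B. cell2 B (hcomp1 B f (unit1 B (src1 B f))) f (runit B f)) \<and>
    (\<forall>\<alpha>\<in>arr2 B. vcomp B \<alpha> (runit B (dom2 B \<alpha>)) =
        vcomp B (runit B (cod2 B \<alpha>)) (hcomp2 B \<alpha> (id2 B (unit1 B (src1 B (dom2 B \<alpha>)))))) \<and>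
    \<comment> \<open>e : f^* * f => 1_A, natural\<close>
    (\<forall>f\<in>arr1 B. cell2 B (hcomp1 B (inv1 B f) f) (unit1 B (src1 B f)) (counit_e B f)) \<and>
    (\<forall>\<alpha>\<in>arr2 B. vcomp B (counit_e B (cod2 B \<alpha>)) (hcomp2 B (inv2 B \<alpha>) \<alpha>) = counit_e B (dom2 B \<alpha>)) \<and>
    \<comment> \<open>i : 1_B => f * f^*, natural\<close>
    (\<forall>f\<in>arr1 B. cell2 B (unit1 B (trg1 B f)) (hcomp1 B f (inv1 B f)) (unit_i B f)) \<and>
    (\<forall>\<alpha>\<in>arr2 B. vcomp B (hcomp2 B \<alpha> (inv2 B \<alpha>)) (unit_i B (dom2 B \<alpha>)) = unit_i B (cod2 B \<alpha>)) \<and>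
    \<comment> \<open>pentagon\<close>
    (\<forall>f\<in>arr1 B. \<forall>g\<in>arr1 B. \<forall>h\<in>arr1 B. \<forall>k\<in>arr1 B.
        trg1 B f = src1 B g \<and> trg1 B g = src1 B h \<and> trg1 B h = src1 B k \<longrightarrow>
        vcomp B (asc B k h (hcomp1 B g f)) (asc B (hcomp1 B k h) g f) =
        vcomp B (hcomp2 B (id2 B k) (asc B h g f))
          (vcomp B (asc B k (hcomp1 B h g) f) (hcomp2 B (asc B k h g) (id2 B f)))) \<and>
    \<comment> \<open>(id * l) o a = r * id\<close>
    (\<forall>f\<in>arr1 B. \<forall>g\<in>arr1 B. trg1 B f = src1 B g \<longrightarrow>
        vcomp B (hcomp2 B (id2 B g) (lunit B f)) (asc B g (unit1 B (trg1 B f)) f) =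
        hcomp2 B (runit B g) (id2 B f)) \<and>
    \<comment> \<open>r_f o (id * e_f) o a o (i_f * id) = l_f\<close>
    (\<forall>f\<in>arr1 B.
        vcomp B (runit B f) (vcomp B (hcomp2 B (id2 B f) (counit_e B f))
          (vcomp B (asc B f (inv1 B f) f) (hcomp2 B (unit_i B f) (id2 B f)))) = lunit B f)"

record ('o1,'a1,'c1,'o2,'a2,'c2) bgmorph =
  fobj :: "'o1 \<Rightarrow> 'o2"
  fone :: "'a1 \<Rightarrow> 'a2"
  ftwo :: "'c1 \<Rightarrow> 'c2"
  phic :: "'a1 \<Rightarrow> 'a1 \<Rightarrow> 'c2"   \<comment> \<open>phi_{g,f} : Fg * Ff => F(g*f)\<close>
  phiu :: "'o1 \<Rightarrow> 'c2"            \<comment> \<open>phi_A : 1_{FA} => F 1_A\<close>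
  phii :: "'a1 \<Rightarrow> 'c2"            \<comment> \<open>phi_f : (Ff)^* => F(f^*)\<close>

definition bgmorphism ::
  "('o1,'a1,'c1) bigroupoid \<Rightarrow> ('o2,'a2,'c2) bigroupoid \<Rightarrow> ('o1,'a1,'c1,'o2,'a2,'c2) bgmorph \<Rightarrow> bool" where
  "bgmorphism A B F \<longleftrightarrow>
    (\<forall>X\<in>obj A. fobj F X \<in> obj B) \<and>
    (\<forall>f\<in>arr1 A. hom1 B (fobj F (src1 A f)) (fobj F (trg1 A f)) (fone F f)) \<and>
    (\<forall>\<alpha>\<in>arr2 A. cell2 B (fone F (dom2 A \<alpha>)) (fone F (cod2 A \<alpha>)) (ftwo F \<alpha>)) \<and>
    (\<forall>f\<in>arr1 A. ftwo F (id2 A f) = id2 B (fone F f)) \<and>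
    (\<forall>\<alpha>\<in>arr2 A. \<forall>\<beta>\<in>arr2 A. cod2 A \<alpha> = dom2 A \<beta> \<longrightarrow>
        ftwo F (vcomp A \<beta> \<alpha>) = vcomp B (ftwo F \<beta>) (ftwo F \<alpha>)) \<and>
    \<comment> \<open>phi_{g,f}, natural\<close>
    (\<forall>f\<in>arr1 A. \<forall>g\<in>arr1 A. trg1 A f = src1 A g \<longrightarrow>
        cell2 B (hcomp1 B (fone F g) (fone F f)) (fone F (hcomp1 A g f)) (phic F g f)) \<and>
    (\<forall>\<alpha>\<in>arr2 A. \<forall>\<beta>\<in>arr2 A. trg1 A (dom2 A \<alpha>) = src1 A (dom2 A \<beta>) \<longrightarrow>
        vcomp B (ftwo F (hcomp2 A \<beta> \<alpha>)) (phic F (dom2 A \<beta>) (dom2 A \<alpha>)) =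
        vcomp B (phic F (cod2 A \<beta>) (cod2 A \<alpha>)) (hcomp2 B (ftwo F \<beta>) (ftwo F \<alpha>))) \<and>
    \<comment> \<open>phi_A\<close>
    (\<forall>X\<in>obj A. cell2 B (unit1 B (fobj F X)) (fone F (unit1 A X)) (phiu F X)) \<and>
    \<comment> \<open>phi_f, natural\<close>
    (\<forall>f\<in>arr1 A. cell2 B (inv1 B (fone F f)) (fone F (inv1 A f)) (phii F f)) \<and>
    (\<forall>\<alpha>\<in>arr2 A. vcomp B (ftwo F (inv2 A \<alpha>)) (phii F (dom2 A \<alpha>)) =
        vcomp B (phii F (cod2 A \<alpha>)) (inv2 B (ftwo F \<alpha>))) \<and>
    \<comment> \<open>F a o phi o (phi * id) = phi o (id * phi) o a\<close>
    (\<forall>f\<in>arr1 A. \<forall>g\<in>arr1 A. \<forall>h\<in>arr1 A. trg1 A f = src1 A g \<and> trg1 A g = src1 A h \<longrightarrow>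
        vcomp B (ftwo F (asc A h g f))
          (vcomp B (phic F (hcomp1 A h g) f) (hcomp2 B (phic F h g) (id2 B (fone F f)))) =
        vcomp B (phic F h (hcomp1 A g f))
          (vcomp B (hcomp2 B (id2 B (fone F h)) (phic F g f)) (asc B (fone F h) (fone F g) (fone F f)))) \<and>
    \<comment> \<open>F r o phi o (id * phi_A) = r\<close>
    (\<forall>f\<in>arr1 A.
        vcomp B (ftwo F (runit A f))
          (vcomp B (phic F f (unit1 A (src1 A f))) (hcomp2 B (id2 B (fone F f)) (phiu F (src1 A f)))) =
        runit B (fone F f)) \<and>
    \<comment> \<open>F l o phi o (phi_B * id) = l\<close>
    (\<forall>f\<in>arr1 A.
        vcomp B (ftwo F (lunit A f))
          (vcomp B (phic F (unit1 A (trg1 A f)) f) (hcomp2 B (phiu F (trg1 A f)) (id2 B (fone F f)))) =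
        lunit B (fone F f)) \<and>
    \<comment> \<open>F e o phi o (phi_f * id) = phi_A o e\<close>
    (\<forall>f\<in>arr1 A.
        vcomp B (ftwo F (counit_e A f))
          (vcomp B (phic F (inv1 A f) f) (hcomp2 B (phii F f) (id2 B (fone F f)))) =
        vcomp B (phiu F (src1 A f)) (counit_e B (fone F f))) \<and>
    \<comment> \<open>F i o phi_B = phi o (id * phi_f) o i\<close>
    (\<forall>f\<in>arr1 A.
        vcomp B (ftwo F (unit_i A f)) (phiu F (trg1 A f)) =
        vcomp B (phic F f (inv1 A f))
          (vcomp B (hcomp2 B (id2 B (fone F f)) (phii F f)) (unit_i B (fone F f))))"

text \<open>Composite G o F of morphisms F : A -> B and G : B -> C (C is the codomain of G).\<close>
definition morph_comp ::
  "('o3,'a3,'c3) bigroupoid \<Rightarrow> ('o2,'a2,'c2,'o3,'a3,'c3) bgmorph \<Rightarrow>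
   ('o1,'a1,'c1,'o2,'a2,'c2) bgmorph \<Rightarrow> ('o1,'a1,'c1,'o3,'a3,'c3) bgmorph" where
  "morph_comp C G F =
    \<lparr> fobj = fobj G \<circ> fobj F, fone = fone G \<circ> fone F, ftwo = ftwo G \<circ> ftwo F,
      phic = (\<lambda>g f. vcomp C (ftwo G (phic F g f)) (phic G (fone F g) (fone F f))),
      phiu = (\<lambda>X. vcomp C (ftwo G (phiu F X)) (phiu G (fobj F X))),
      phii = (\<lambda>f. vcomp C (ftwo G (phii F f)) (phii G (fone F f))) \<rparr>"

definition morph_eq ::
  "('o1,'a1,'c1) bigroupoid \<Rightarrow> ('o1,'a1,'c1,'o2,'a2,'c2) bgmorph \<Rightarrow>
   ('o1,'a1,'c1,'o2,'a2,'c2) bgmorph \<Rightarrow> bool" where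
  "morph_eq A F G \<longleftrightarrow>
    (\<forall>X\<in>obj A. fobj F X = fobj G X) \<and>
    (\<forall>f\<in>arr1 A. fone F f = fone G f) \<and>
    (\<forall>\<alpha>\<in>arr2 A. ftwo F \<alpha> = ftwo G \<alpha>) \<and>
    (\<forall>f\<in>arr1 A. \<forall>g\<in>arr1 A. trg1 A f = src1 A g \<longrightarrow> phic F g f = phic G g f) \<and>
    (\<forall>X\<in>obj A. phiu F X = phiu G X) \<and>
    (\<forall>f\<in>arr1 A. phii F f = phii G f)"

definition prod_bg ::
  "('o1,'a1,'c1) bigroupoid \<Rightarrow> ('o2,'a2,'c2) bigroupoid \<Rightarrow> ('o1\<times>'o2,'a1\<times>'a2,'c1\<times>'c2) bigroupoid" where
  "prod_bg A B =
    \<lparr> obj = obj A \<times> obj B,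
      arr1 = arr1 A \<times> arr1 B,
      src1 = (\<lambda>f. (src1 A (fst f), src1 B (snd f))),
      trg1 = (\<lambda>f. (trg1 A (fst f), trg1 B (snd f))),
      arr2 = arr2 A \<times> arr2 B,
      dom2 = (\<lambda>\<alpha>. (dom2 A (fst \<alpha>), dom2 B (snd \<alpha>))),
      cod2 = (\<lambda>\<alpha>. (cod2 A (fst \<alpha>), cod2 B (snd \<alpha>))),
      vcomp = (\<lambda>\<beta> \<alpha>. (vcomp A (fst \<beta>) (fst \<alpha>), vcomp B (snd \<beta>) (snd \<alpha>))),
      id2 = (\<lambda>f. (id2 A (fst f), id2 B (snd f))),
      hcomp1 = (\<lambda>g f. (hcomp1 A (fst g) (fst f), hcomp1 B (snd g) (snd f))),
      hcomp2 = (\<lambda>\<beta> \<alpha>. (hcomp2 A (fst \<beta>) (fst \<alpha>), hcomp2 B (snd \<beta>) (snd \<alpha>))),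
      unit1 = (\<lambda>X. (unit1 A (fst X), unit1 B (snd X))),
      inv1 = (\<lambda>f. (inv1 A (fst f), inv1 B (snd f))),
      inv2 = (\<lambda>\<alpha>. (inv2 A (fst \<alpha>), inv2 B (snd \<alpha>))),
      asc = (\<lambda>h g f. (asc A (fst h) (fst g) (fst f), asc B (snd h) (snd g) (snd f))),
      lunit = (\<lambda>f. (lunit A (fst f), lunit B (snd f))),
      runit = (\<lambda>f. (runit A (fst f), runit B (snd f))),
      counit_e = (\<lambda>f. (counit_e A (fst f), counit_e B (snd f))),
      unit_i = (\<lambda>f. (unit_i A (fst f), unit_i B (snd f))) \<rparr>"

definition diag :: "('o,'a,'c) bigroupoid \<Rightarrow> ('o,'a,'c,'o\<times>'o,'a\<times>'a,'c\<times>'c) bgmorph" where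
  "diag B =
    \<lparr> fobj = (\<lambda>X. (X, X)), fone = (\<lambda>f. (f, f)), ftwo = (\<lambda>\<alpha>. (\<alpha>, \<alpha>)),
      phic = (\<lambda>g f. (id2 B (hcomp1 B g f), id2 B (hcomp1 B g f))),
      phiu = (\<lambda>X. (id2 B (unit1 B X), id2 B (unit1 B X))),
      phii = (\<lambda>f. (id2 B (inv1 B f), id2 B (inv1 B f))) \<rparr>"

definition fibration ::
  "('o1,'a1,'c1) bigroupoid \<Rightarrow> ('o2,'a2,'c2) bigroupoid \<Rightarrow> ('o1,'a1,'c1,'o2,'a2,'c2) bgmorph \<Rightarrow> bool" where
  "fibration A B F \<longleftrightarrow>
    (\<forall>X'\<in>obj A. \<forall>b\<in>arr1 B. trg1 B b = fobj F X' \<longrightarrow>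
        (\<exists>a\<in>arr1 A. trg1 A a = X' \<and> fobj F (src1 A a) = src1 B b \<and> fone F a = b)) \<and>
    (\<forall>a'\<in>arr1 A. \<forall>\<beta>\<in>arr2 B. cod2 B \<beta> = fone F a' \<longrightarrow>
        (\<exists>\<alpha>\<in>arr2 A. cod2 A \<alpha> = a' \<and> fone F (dom2 A \<alpha>) = dom2 B \<beta> \<and> ftwo F \<alpha> = \<beta>))"

text \<open>The functor F_{X,Y} : A(X,Y) -> B(FX,FY) is an equivalence of categories: there are a
  functor G : B(FX,FY) -> A(X,Y) and natural isomorphisms eta : Id => G F, eps : F G => Id
  (in a groupoid every natural transformation is a natural isomorphism).\<close>
definition hom_equivalence ::
  "('o1,'a1,'c1) bigroupoid \<Rightarrow> ('o2,'a2,'c2) bigroupoid \<Rightarrow> ('o1,'a1,'c1,'o2,'a2,'c2) bgmorph \<Rightarrow>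
   'o1 \<Rightarrow> 'o1 \<Rightarrow> bool" where
  "hom_equivalence A B F X Y \<longleftrightarrow>
    (\<exists>(G1 :: 'a2 \<Rightarrow> 'a1) (G2 :: 'c2 \<Rightarrow> 'c1) (\<eta> :: 'a1 \<Rightarrow> 'c1) (\<epsilon> :: 'a2 \<Rightarrow> 'c2).
      (\<forall>b. hom1 B (fobj F X) (fobj F Y) b \<longrightarrow> hom1 A X Y (G1 b)) \<and>
      (\<forall>\<beta>\<in>arr2 B. hom1 B (fobj F X) (fobj F Y) (dom2 B \<beta>) \<longrightarrow>
          cell2 A (G1 (dom2 B \<beta>)) (G1 (cod2 B \<beta>)) (G2 \<beta>)) \<and>
      (\<forall>b. hom1 B (fobj F X) (fobj F Y) b \<longrightarrow> G2 (id2 B b) = id2 A (G1 b)) \<and>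
      (\<forall>\<beta>\<in>arr2 B. \<forall>\<beta>'\<in>arr2 B. hom1 B (fobj F X) (fobj F Y) (dom2 B \<beta>) \<and> cod2 B \<beta> = dom2 B \<beta>' \<longrightarrow>
          G2 (vcomp B \<beta>' \<beta>) = vcomp A (G2 \<beta>') (G2 \<beta>)) \<and>
      (\<forall>a. hom1 A X Y a \<longrightarrow> cell2 A a (G1 (fone F a)) (\<eta> a)) \<and>
      (\<forall>\<alpha>\<in>arr2 A. hom1 A X Y (dom2 A \<alpha>) \<longrightarrow>
          vcomp A (G2 (ftwo F \<alpha>)) (\<eta> (dom2 A \<alpha>)) = vcomp A (\<eta> (cod2 A \<alpha>)) \<alpha>) \<and>
      (\<forall>b. hom1 B (fobj F X) (fobj F Y) b \<longrightarrow> cell2 B (fone F (G1 b)) b (\<epsilon> b)) \<and>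
      (\<forall>\<beta>\<in>arr2 B. hom1 B (fobj F X) (fobj F Y) (dom2 B \<beta>) \<longrightarrow>
          vcomp B \<beta> (\<epsilon> (dom2 B \<beta>)) = vcomp B (\<epsilon> (cod2 B \<beta>)) (ftwo F (G2 \<beta>))))"

definition weak_equivalence ::
  "('o1,'a1,'c1) bigroupoid \<Rightarrow> ('o2,'a2,'c2) bigroupoid \<Rightarrow> ('o1,'a1,'c1,'o2,'a2,'c2) bgmorph \<Rightarrow> bool" where
  "weak_equivalence A B F \<longleftrightarrow>
    (\<forall>Y\<in>obj B. \<exists>X'\<in>obj A. \<exists>f\<in>arr1 B. src1 B f = Y \<and> trg1 B f = fobj F X') \<and>
    (\<forall>X\<in>obj A. \<forall>Y\<in>obj A. hom_equivalence A B F X Y)"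

text \<open>Carrier type used for all cells of the path object: finite words of cells of B.\<close>
type_synonym ('o,'a,'c) pcell = "('o + 'a + 'c) list"

end

theory Submission
  imports Defs
begin

locale bg =
  fixes B :: "('o,'a,'c) bigroupoid"
  assumes bg: "bigroupoid B"
begin

abbreviation A1 where "A1 \<equiv> arr1 B"
abbreviation A2 where "A2 \<equiv> arr2 B"
abbreviation dm where "dm \<equiv> dom2 B"
abbreviation cd where "cd \<equiv> cod2 B"
abbreviation sr where "sr \<equiv> src1 B"
abbreviation tg where "tg \<equiv> trg1 B"
abbreviation vc (infixr "\<cdot>" 55) where "x \<cdot> y \<equiv> vcomp B x y"
abbreviation hc (infixr "\<star>" 57) where "x \<star> y \<equiv> hcomp2 B x y"
abbreviation h1 (infixr "\<diamond>" 58) where "x \<diamond> y \<equiv> hcomp1 B x y"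
abbreviation I where "I \<equiv> id2 B"
abbreviation wl (infixr "\<lhd>" 57) where "g \<lhd> x \<equiv> hcomp2 B (id2 B g) x"
abbreviation wr (infixl "\<rhd>" 57) where "x \<rhd> g \<equiv> hcomp2 B x (id2 B g)"
abbreviation U where "U \<equiv> unit1 B"
abbreviation inv where "inv \<equiv> inv1 B"
abbreviation iv2 where "iv2 \<equiv> inv2 B"
abbreviation As where "As \<equiv> asc B"
abbreviation L where "L \<equiv> lunit B"
abbreviation Rr where "Rr \<equiv> runit B"
abbreviation Ee where "Ee \<equiv> counit_e B"
abbreviation Ii where "Ii \<equiv> unit_i B"

lemmas AX0 = bg[unfolded bigroupoid_def]
lemmas ax1 = AX0[THEN conjunct1]
lemmas AX1 = AX0[THEN conjunct2]
lemmas ax2 = AX1[THEN conjunct1]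
lemmas AX2 = AX1[THEN conjunct2]
lemmas ax3 = AX2[THEN conjunct1]
lemmas AX3 = AX2[THEN conjunct2]
lemmas ax4 = AX3[THEN conjunct1]
lemmas AX4 = AX3[THEN conjunct2]
lemmas ax5 = AX4[THEN conjunct1]
lemmas AX5 = AX4[THEN conjunct2]
lemmas ax6 = AX5[THEN conjunct1]
lemmas AX6 = AX5[THEN conjunct2]
lemmas ax7 = AX6[THEN conjunct1]
lemmas AX7 = AX6[THEN conjunct2]
lemmas ax8 = AX7[THEN conjunct1]
lemmas AX8 = AX7[THEN conjunct2]
lemmas ax9 = AX8[THEN conjunct1]
lemmas AX9 = AX8[THEN conjunct2]
lemmas ax10 = AX9[THEN conjunct1]
lemmas AX10 = AX9[THEN conjunct2]
lemmas ax11 = AX10[THEN conjunct1]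
lemmas AX11 = AX10[THEN conjunct2]
lemmas ax12 = AX11[THEN conjunct1]
lemmas AX12 = AX11[THEN conjunct2]
lemmas ax13 = AX12[THEN conjunct1]
lemmas AX13 = AX12[THEN conjunct2]
lemmas ax14 = AX13[THEN conjunct1]
lemmas AX14 = AX13[THEN conjunct2]
lemmas ax15 = AX14[THEN conjunct1]
lemmas AX15 = AX14[THEN conjunct2]
lemmas ax16 = AX15[THEN conjunct1]
lemmas AX16 = AX15[THEN conjunct2]
lemmas ax17 = AX16[THEN conjunct1]
lemmas AX17 = AX16[THEN conjunct2]
lemmas ax18 = AX17[THEN conjunct1]
lemmas AX18 = AX17[THEN conjunct2]
lemmas ax19 = AX18[THEN conjunct1]
lemmas AX19 = AX18[THEN conjunct2]
lemmas ax20 = AX19[THEN conjunct1]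
lemmas AX20 = AX19[THEN conjunct2]
lemmas ax21 = AX20[THEN conjunct1]
lemmas AX21 = AX20[THEN conjunct2]
lemmas ax22 = AX21[THEN conjunct1]
lemmas AX22 = AX21[THEN conjunct2]
lemmas ax23 = AX22[THEN conjunct1]
lemmas AX23 = AX22[THEN conjunct2]
lemmas ax24 = AX23[THEN conjunct1]
lemmas AX24 = AX23[THEN conjunct2]
lemmas ax25 = AX24[THEN conjunct1]
lemmas AX25 = AX24[THEN conjunct2]
lemmas ax26 = AX25[THEN conjunct1]
lemmas AX26 = AX25[THEN conjunct2]
lemmas ax27 = AX26[THEN conjunct1]
lemmas AX27 = AX26[THEN conjunct2]
lemmas ax28 = AX27[THEN conjunct1]
lemmas AX28 = AX27[THEN conjunct2]
lemmas ax29 = AX28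

lemma src_obj[simp]: "f \<in> A1 \<Longrightarrow> sr f \<in> obj B"
  using ax1 by blast
lemma trg_obj[simp]: "f \<in> A1 \<Longrightarrow> tg f \<in> obj B"
  using ax1 by blast


lemma dom_arr[simp]: "x \<in> A2 \<Longrightarrow> dm x \<in> A1" using ax2 by blast
lemma cod_arr[simp]: "x \<in> A2 \<Longrightarrow> cd x \<in> A1" using ax2 by blast
lemma src_cod[simp]: "x \<in> A2 \<Longrightarrow> sr (cd x) = sr (dm x)" using ax2 by metis
lemma trg_cod[simp]: "x \<in> A2 \<Longrightarrow> tg (cd x) = tg (dm x)" using ax2 by metis

lemma I_arr[simp]: "f \<in> A1 \<Longrightarrow> I f \<in> A2" using ax3 unfolding cell2_def by blast
lemma I_dom[simp]: "f \<in> A1 \<Longrightarrow> dm (I f) = f" using ax3 unfolding cell2_def by blast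
lemma I_cod[simp]: "f \<in> A1 \<Longrightarrow> cd (I f) = f" using ax3 unfolding cell2_def by blast

lemma vc_arr[simp]: "x \<in> A2 \<Longrightarrow> y \<in> A2 \<Longrightarrow> cd y = dm x \<Longrightarrow> x \<cdot> y \<in> A2"
  using ax4 unfolding cell2_def by blast
lemma vc_dom[simp]: "x \<in> A2 \<Longrightarrow> y \<in> A2 \<Longrightarrow> cd y = dm x \<Longrightarrow> dm (x \<cdot> y) = dm y"
  using ax4 unfolding cell2_def by blast
lemma vc_cod[simp]: "x \<in> A2 \<Longrightarrow> y \<in> A2 \<Longrightarrow> cd y = dm x \<Longrightarrow> cd (x \<cdot> y) = cd x"
  using ax4 unfolding cell2_def by blast
lemma vc_idr[simp]: "x \<in> A2 \<Longrightarrow> dm x = f \<Longrightarrow> x \<cdot> I f = x" using ax5 by blast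
lemma vc_idl[simp]: "x \<in> A2 \<Longrightarrow> cd x = f \<Longrightarrow> I f \<cdot> x = x" using ax5 by blast
lemma vc_assoc[simp]: "x \<in> A2 \<Longrightarrow> y \<in> A2 \<Longrightarrow> z \<in> A2 \<Longrightarrow> cd z = dm y \<Longrightarrow> cd y = dm x \<Longrightarrow>
   (x \<cdot> y) \<cdot> z = x \<cdot> (y \<cdot> z)"
  using ax6 by metis

lemma h1_arr[simp]: "f \<in> A1 \<Longrightarrow> g \<in> A1 \<Longrightarrow> tg f = sr g \<Longrightarrow> g \<diamond> f \<in> A1"
  using ax8 unfolding hom1_def by blast
lemma h1_src[simp]: "f \<in> A1 \<Longrightarrow> g \<in> A1 \<Longrightarrow> tg f = sr g \<Longrightarrow> sr (g \<diamond> f) = sr f"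
  using ax8 unfolding hom1_def by blast
lemma h1_trg[simp]: "f \<in> A1 \<Longrightarrow> g \<in> A1 \<Longrightarrow> tg f = sr g \<Longrightarrow> tg (g \<diamond> f) = tg g"
  using ax8 unfolding hom1_def by blast

lemma hc_arr[simp]: "x \<in> A2 \<Longrightarrow> y \<in> A2 \<Longrightarrow> tg (dm y) = sr (dm x) \<Longrightarrow> x \<star> y \<in> A2"
  using ax9 unfolding cell2_def by blast
lemma hc_dom[simp]: "x \<in> A2 \<Longrightarrow> y \<in> A2 \<Longrightarrow> tg (dm y) = sr (dm x) \<Longrightarrow> dm (x \<star> y) = dm x \<diamond> dm y"
  using ax9 unfolding cell2_def by blast
lemma hc_cod[simp]: "x \<in> A2 \<Longrightarrow> y \<in> A2 \<Longrightarrow> tg (dm y) = sr (dm x) \<Longrightarrow> cd (x \<star> y) = cd x \<diamond> cd y"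
  using ax9 unfolding cell2_def by blast
lemma hc_I[simp]: "f \<in> A1 \<Longrightarrow> g \<in> A1 \<Longrightarrow> tg f = sr g \<Longrightarrow> I g \<star> I f = I (g \<diamond> f)"
  using ax10 by blast
lemma interchange: "y \<in> A2 \<Longrightarrow> y' \<in> A2 \<Longrightarrow> x \<in> A2 \<Longrightarrow> x' \<in> A2 \<Longrightarrow>
   cd y = dm y' \<Longrightarrow> cd x = dm x' \<Longrightarrow> tg (dm y) = sr (dm x) \<Longrightarrow>
   (x' \<cdot> x) \<star> (y' \<cdot> y) = (x' \<star> y') \<cdot> (x \<star> y)"
  using ax11 by blast

lemma U_arr[simp]: "X \<in> obj B \<Longrightarrow> U X \<in> A1" using ax12 unfolding hom1_def by blast
lemma U_src[simp]: "X \<in> obj B \<Longrightarrow> sr (U X) = X" using ax12 unfolding hom1_def by blast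
lemma U_trg[simp]: "X \<in> obj B \<Longrightarrow> tg (U X) = X" using ax12 unfolding hom1_def by blast

lemma inv_arr[simp]: "f \<in> A1 \<Longrightarrow> inv f \<in> A1" using ax13 unfolding hom1_def by blast
lemma inv_src[simp]: "f \<in> A1 \<Longrightarrow> sr (inv f) = tg f" using ax13 unfolding hom1_def by blast
lemma inv_trg[simp]: "f \<in> A1 \<Longrightarrow> tg (inv f) = sr f" using ax13 unfolding hom1_def by blast
lemma iv2_arr[simp]: "x \<in> A2 \<Longrightarrow> iv2 x \<in> A2" using ax14 unfolding cell2_def by blast
lemma iv2_dom[simp]: "x \<in> A2 \<Longrightarrow> dm (iv2 x) = inv (dm x)" using ax14 unfolding cell2_def by blast
lemma iv2_cod[simp]: "x \<in> A2 \<Longrightarrow> cd (iv2 x) = inv (cd x)" using ax14 unfolding cell2_def by blast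
lemma iv2_I[simp]: "f \<in> A1 \<Longrightarrow> iv2 (I f) = I (inv f)" using ax15 by blast
lemma iv2_vc[simp]: "x \<in> A2 \<Longrightarrow> y \<in> A2 \<Longrightarrow> cd x = dm y \<Longrightarrow> iv2 (y \<cdot> x) = iv2 y \<cdot> iv2 x"
  using ax16 by blast

lemma As_arr[simp]: "f \<in> A1 \<Longrightarrow> g \<in> A1 \<Longrightarrow> h \<in> A1 \<Longrightarrow> tg f = sr g \<Longrightarrow> tg g = sr h \<Longrightarrow> As h g f \<in> A2"
  using ax17 unfolding cell2_def by blast
lemma As_dom[simp]: "f \<in> A1 \<Longrightarrow> g \<in> A1 \<Longrightarrow> h \<in> A1 \<Longrightarrow> tg f = sr g \<Longrightarrow> tg g = sr h \<Longrightarrow> dm (As h g f) = (h \<diamond> g) \<diamond> f"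
  using ax17 unfolding cell2_def by blast
lemma As_cod[simp]: "f \<in> A1 \<Longrightarrow> g \<in> A1 \<Longrightarrow> h \<in> A1 \<Longrightarrow> tg f = sr g \<Longrightarrow> tg g = sr h \<Longrightarrow> cd (As h g f) = h \<diamond> (g \<diamond> f)"
  using ax17 unfolding cell2_def by blast
lemma As_nat: "x \<in> A2 \<Longrightarrow> y \<in> A2 \<Longrightarrow> z \<in> A2 \<Longrightarrow> tg (dm x) = sr (dm y) \<Longrightarrow> tg (dm y) = sr (dm z) \<Longrightarrow>
   As (cd z) (cd y) (cd x) \<cdot> ((z \<star> y) \<star> x) = (z \<star> (y \<star> x)) \<cdot> As (dm z) (dm y) (dm x)"
  using ax18 by blast

lemma L_arr[simp]: "f \<in> A1 \<Longrightarrow> L f \<in> A2" using ax19 unfolding cell2_def by blast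
lemma L_dom[simp]: "f \<in> A1 \<Longrightarrow> dm (L f) = U (tg f) \<diamond> f" using ax19 unfolding cell2_def by blast
lemma L_cod[simp]: "f \<in> A1 \<Longrightarrow> cd (L f) = f" using ax19 unfolding cell2_def by blast
lemma L_nat: "x \<in> A2 \<Longrightarrow> x \<cdot> L (dm x) = L (cd x) \<cdot> (U (tg (dm x)) \<lhd> x)" using ax20 by blast
lemma R_arr[simp]: "f \<in> A1 \<Longrightarrow> Rr f \<in> A2" using ax21 unfolding cell2_def by blast
lemma R_dom[simp]: "f \<in> A1 \<Longrightarrow> dm (Rr f) = f \<diamond> U (sr f)" using ax21 unfolding cell2_def by blast
lemma R_cod[simp]: "f \<in> A1 \<Longrightarrow> cd (Rr f) = f" using ax21 unfolding cell2_def by blast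
lemma R_nat: "x \<in> A2 \<Longrightarrow> x \<cdot> Rr (dm x) = Rr (cd x) \<cdot> (x \<rhd> U (sr (dm x)))" using ax22 by blast
lemma E_arr[simp]: "f \<in> A1 \<Longrightarrow> Ee f \<in> A2" using ax23 unfolding cell2_def by blast
lemma E_dom[simp]: "f \<in> A1 \<Longrightarrow> dm (Ee f) = inv f \<diamond> f" using ax23 unfolding cell2_def by blast
lemma E_cod[simp]: "f \<in> A1 \<Longrightarrow> cd (Ee f) = U (sr f)" using ax23 unfolding cell2_def by blast
lemma E_nat: "x \<in> A2 \<Longrightarrow> Ee (cd x) \<cdot> (iv2 x \<star> x) = Ee (dm x)" using ax24 by blast
lemma Ii_arr[simp]: "f \<in> A1 \<Longrightarrow> Ii f \<in> A2" using ax25 unfolding cell2_def by blast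
lemma Ii_dom[simp]: "f \<in> A1 \<Longrightarrow> dm (Ii f) = U (tg f)" using ax25 unfolding cell2_def by blast
lemma Ii_cod[simp]: "f \<in> A1 \<Longrightarrow> cd (Ii f) = f \<diamond> inv f" using ax25 unfolding cell2_def by blast
lemma Ii_nat: "x \<in> A2 \<Longrightarrow> (x \<star> iv2 x) \<cdot> Ii (dm x) = Ii (cd x)" using ax26 by blast
lemma pentagon: "f \<in> A1 \<Longrightarrow> g \<in> A1 \<Longrightarrow> h \<in> A1 \<Longrightarrow> k \<in> A1 \<Longrightarrow> tg f = sr g \<Longrightarrow> tg g = sr h \<Longrightarrow> tg h = sr k \<Longrightarrow>
  As k h (g \<diamond> f) \<cdot> As (k \<diamond> h) g f = (k \<lhd> As h g f) \<cdot> As k (h \<diamond> g) f \<cdot> (As k h g \<rhd> f)"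
  using ax27 by blast
lemma triangle: "f \<in> A1 \<Longrightarrow> g \<in> A1 \<Longrightarrow> tg f = sr g \<Longrightarrow> (g \<lhd> L f) \<cdot> As g (U (tg f)) f = Rr g \<rhd> f"
  using ax28 by blast
lemma zigzag: "f \<in> A1 \<Longrightarrow> Rr f \<cdot> (f \<lhd> Ee f) \<cdot> As f (inv f) f \<cdot> (Ii f \<rhd> f) = L f"
  using ax29 by blast

lemma inverse_ex: "x \<in> A2 \<Longrightarrow> \<exists>y\<in>A2. dm y = cd x \<and> cd y = dm x \<and> y \<cdot> x = I (dm x) \<and> x \<cdot> y = I (cd x)"
  using ax7 by blast

definition vinv where "vinv x = (SOME y. y\<in>A2 \<and> dm y = cd x \<and> cd y = dm x \<and> y \<cdot> x = I (dm x) \<and> x \<cdot> y = I (cd x))"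

lemma vinv_props: "x \<in> A2 \<Longrightarrow> vinv x\<in>A2 \<and> dm (vinv x) = cd x \<and> cd (vinv x) = dm x \<and> vinv x \<cdot> x = I (dm x) \<and> x \<cdot> vinv x = I (cd x)"
  unfolding vinv_def by (rule someI_ex) (use inverse_ex in blast)
lemma vinv_arr[simp]: "x \<in> A2 \<Longrightarrow> vinv x \<in> A2" using vinv_props by blast
lemma vinv_dom[simp]: "x \<in> A2 \<Longrightarrow> dm (vinv x) = cd x" using vinv_props by blast
lemma vinv_cod[simp]: "x \<in> A2 \<Longrightarrow> cd (vinv x) = dm x" using vinv_props by blast
lemma vinv_l[simp]: "x \<in> A2 \<Longrightarrow> vinv x \<cdot> x = I (dm x)" using vinv_props by blast
lemma vinv_r[simp]: "x \<in> A2 \<Longrightarrow> x \<cdot> vinv x = I (cd x)" using vinv_props by blast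
lemma vinv_l2[simp]: "x \<in> A2 \<Longrightarrow> z \<in> A2 \<Longrightarrow> cd z = dm x \<Longrightarrow> vinv x \<cdot> x \<cdot> z = z"
proof -
  assume a: "x \<in> A2" "z \<in> A2" "cd z = dm x"
  have "vinv x \<cdot> x \<cdot> z = (vinv x \<cdot> x) \<cdot> z" using a by (intro vc_assoc[symmetric]) simp_all
  also have "\<dots> = z" using a by simp
  finally show ?thesis .
qed
lemma vinv_r2[simp]: "x \<in> A2 \<Longrightarrow> z \<in> A2 \<Longrightarrow> cd z = cd x \<Longrightarrow> x \<cdot> vinv x \<cdot> z = z"
proof -
  assume a: "x \<in> A2" "z \<in> A2" "cd z = cd x"
  have "x \<cdot> vinv x \<cdot> z = (x \<cdot> vinv x) \<cdot> z" using a by (intro vc_assoc[symmetric]) simp_all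
  also have "\<dots> = z" using a by simp
  finally show ?thesis .
qed
lemma vinv_unique: "x \<in> A2 \<Longrightarrow> y \<in> A2 \<Longrightarrow> dm y = cd x \<Longrightarrow> y \<cdot> x = I (dm x) \<Longrightarrow> y = vinv x"
proof -
  assume a: "x \<in> A2" "y \<in> A2" "dm y = cd x" "y \<cdot> x = I (dm x)"
  have "y = y \<cdot> (x \<cdot> vinv x)" using a by simp
  also have "\<dots> = (y \<cdot> x) \<cdot> vinv x" using a by (intro vc_assoc[symmetric]) simp_all
  also have "\<dots> = vinv x" using a by simp
  finally show ?thesis .
qed

end


context bg
begin

lemma assoc_sym: "x \<in> A2 \<Longrightarrow> y \<in> A2 \<Longrightarrow> z \<in> A2 \<Longrightarrow> cd z = dm y \<Longrightarrow> cd y = dm x \<Longrightarrow>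
   x \<cdot> (y \<cdot> z) = (x \<cdot> y) \<cdot> z" by simp

lemma cont: "a \<cdot> b = c \<Longrightarrow> a \<in> A2 \<Longrightarrow> b \<in> A2 \<Longrightarrow> z \<in> A2 \<Longrightarrow> cd b = dm a \<Longrightarrow> cd z = dm b \<Longrightarrow> a \<cdot> (b \<cdot> z) = c \<cdot> z"
  by (metis vc_assoc)

lemma vinv_vinv[simp]: "x \<in> A2 \<Longrightarrow> vinv (vinv x) = x"
  using vinv_unique[of "vinv x" x] by simp

lemma vinv_vc[simp]: "x \<in> A2 \<Longrightarrow> y \<in> A2 \<Longrightarrow> cd x = dm y \<Longrightarrow> vinv (y \<cdot> x) = vinv x \<cdot> vinv y"
proof -
  assume a: "x \<in> A2" "y \<in> A2" "cd x = dm y"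
  have "(vinv x \<cdot> vinv y) \<cdot> (y \<cdot> x) = I (dm (y \<cdot> x))" using a by simp
  thus ?thesis using a by (intro vinv_unique[symmetric]) simp_all
qed

lemma vinv_I[simp]: "f \<in> A1 \<Longrightarrow> vinv (I f) = I f"
  using vinv_unique[of "I f" "I f"] by simp

lemma vinv_hc[simp]: "x \<in> A2 \<Longrightarrow> y \<in> A2 \<Longrightarrow> tg (dm y) = sr (dm x) \<Longrightarrow> vinv (x \<star> y) = vinv x \<star> vinv y"
proof -
  assume a: "x \<in> A2" "y \<in> A2" "tg (dm y) = sr (dm x)"
  have "(vinv x \<star> vinv y) \<cdot> (x \<star> y) = (vinv x \<cdot> x) \<star> (vinv y \<cdot> y)"
    using a by (subst interchange) simp_all
  also have "\<dots> = I (dm (x \<star> y))" using a by simp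
  finally show ?thesis using a by (intro vinv_unique[symmetric]) simp_all
qed

lemma wl_vc: "x \<in> A2 \<Longrightarrow> y \<in> A2 \<Longrightarrow> g \<in> A1 \<Longrightarrow> cd y = dm x \<Longrightarrow> tg (dm y) = sr g \<Longrightarrow>
   g \<lhd> (x \<cdot> y) = (g \<lhd> x) \<cdot> (g \<lhd> y)"
  using interchange[of y x "I g" "I g"] by simp
lemma wr_vc: "x \<in> A2 \<Longrightarrow> y \<in> A2 \<Longrightarrow> g \<in> A1 \<Longrightarrow> cd y = dm x \<Longrightarrow> tg g = sr (dm y) \<Longrightarrow>
   (x \<cdot> y) \<rhd> g = (x \<rhd> g) \<cdot> (y \<rhd> g)"
  using interchange[of "I g" "I g" y x] by simp
lemma hc_split1: "x \<in> A2 \<Longrightarrow> y \<in> A2 \<Longrightarrow> tg (dm y) = sr (dm x) \<Longrightarrow> x \<star> y = (x \<rhd> cd y) \<cdot> (dm x \<lhd> y)"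
  using interchange[of y "I (cd y)" "I (dm x)" x] by simp
lemma hc_split2: "x \<in> A2 \<Longrightarrow> y \<in> A2 \<Longrightarrow> tg (dm y) = sr (dm x) \<Longrightarrow> x \<star> y = (cd x \<lhd> y) \<cdot> (x \<rhd> dm y)"
  using interchange[of "I (dm y)" y x "I (cd x)"] by simp

lemma As_nat_l: "x \<in> A2 \<Longrightarrow> g \<in> A1 \<Longrightarrow> h \<in> A1 \<Longrightarrow> tg (dm x) = sr h \<Longrightarrow> tg h = sr g \<Longrightarrow>
  As g h (cd x) \<cdot> ((g \<diamond> h) \<lhd> x) = (g \<lhd> (h \<lhd> x)) \<cdot> As g h (dm x)"
  using As_nat[of x "I h" "I g"] by simp
lemma As_nat_m: "x \<in> A2 \<Longrightarrow> g \<in> A1 \<Longrightarrow> f \<in> A1 \<Longrightarrow> tg f = sr (dm x) \<Longrightarrow> tg (dm x) = sr g \<Longrightarrow>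
  As g (cd x) f \<cdot> ((g \<lhd> x) \<rhd> f) = (g \<lhd> (x \<rhd> f)) \<cdot> As g (dm x) f"
  using As_nat[of "I f" x "I g"] by simp
lemma As_nat_r: "x \<in> A2 \<Longrightarrow> g \<in> A1 \<Longrightarrow> f \<in> A1 \<Longrightarrow> tg f = sr g \<Longrightarrow> tg g = sr (dm x) \<Longrightarrow>
  As (cd x) g f \<cdot> ((x \<rhd> g) \<rhd> f) = (x \<rhd> (g \<diamond> f)) \<cdot> As (dm x) g f"
  using As_nat[of "I f" "I g" x] by simp

lemma vc_cancel_r: "x \<in> A2 \<Longrightarrow> y \<in> A2 \<Longrightarrow> z \<in> A2 \<Longrightarrow> cd z = dm x \<Longrightarrow> cd z = dm y \<Longrightarrow>
   x \<cdot> z = y \<cdot> z \<Longrightarrow> x = y"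
proof -
  assume a: "x \<in> A2" "y \<in> A2" "z \<in> A2" "cd z = dm x" "cd z = dm y" "x \<cdot> z = y \<cdot> z"
  have "x = (x \<cdot> z) \<cdot> vinv z" using a(1-5) by simp
  also have "\<dots> = (y \<cdot> z) \<cdot> vinv z" using a by simp
  also have "\<dots> = y" using a(1-5) by simp
  finally show ?thesis .
qed
lemma vc_cancel_l: "x \<in> A2 \<Longrightarrow> y \<in> A2 \<Longrightarrow> z \<in> A2 \<Longrightarrow> cd x = dm z \<Longrightarrow> cd y = dm z \<Longrightarrow>
   z \<cdot> x = z \<cdot> y \<Longrightarrow> x = y"
proof -
  assume a: "x \<in> A2" "y \<in> A2" "z \<in> A2" "cd x = dm z" "cd y = dm z" "z \<cdot> x = z \<cdot> y"
  have "x = vinv z \<cdot> (z \<cdot> x)" using a(1-5) by simp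
  also have "\<dots> = vinv z \<cdot> (z \<cdot> y)" using a by simp
  also have "\<dots> = y" using a(1-5) by simp
  finally show ?thesis .
qed

lemma faithful_l: "x \<in> A2 \<Longrightarrow> y \<in> A2 \<Longrightarrow> dm x = dm y \<Longrightarrow> cd x = cd y \<Longrightarrow>
   U (tg (dm x)) \<lhd> x = U (tg (dm x)) \<lhd> y \<Longrightarrow> x = y"
  by (rule vc_cancel_r[of x y "L (dm x)"]) (simp_all add: L_nat, metis L_nat trg_cod)
lemma faithful_r: "x \<in> A2 \<Longrightarrow> y \<in> A2 \<Longrightarrow> dm x = dm y \<Longrightarrow> cd x = cd y \<Longrightarrow>
   x \<rhd> U (sr (dm x)) = y \<rhd> U (sr (dm x)) \<Longrightarrow> x = y"
  by (rule vc_cancel_r[of x y "Rr (dm x)"]) (simp_all add: R_nat, metis R_nat src_cod)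

end


context bg
begin
lemma cancel_r: "x \<cdot> z = y \<cdot> z \<Longrightarrow> x \<in> A2 \<Longrightarrow> y \<in> A2 \<Longrightarrow> z \<in> A2 \<Longrightarrow> cd z = dm x \<Longrightarrow> cd z = dm y \<Longrightarrow> x = y"
  by (rule vc_cancel_r)
lemma cancel_l: "z \<cdot> x = z \<cdot> y \<Longrightarrow> x \<in> A2 \<Longrightarrow> y \<in> A2 \<Longrightarrow> z \<in> A2 \<Longrightarrow> cd x = dm z \<Longrightarrow> cd y = dm z \<Longrightarrow> x = y"
  by (rule vc_cancel_l)
lemma faithful_l': "U Z \<lhd> x = U Z \<lhd> y \<Longrightarrow> x \<in> A2 \<Longrightarrow> y \<in> A2 \<Longrightarrow> dm x = dm y \<Longrightarrow> cd x = cd y \<Longrightarrow> tg (dm x) = Z \<Longrightarrow> x = y"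
  using faithful_l by blast
lemma faithful_r': "x \<rhd> U Z = y \<rhd> U Z \<Longrightarrow> x \<in> A2 \<Longrightarrow> y \<in> A2 \<Longrightarrow> dm x = dm y \<Longrightarrow> cd x = cd y \<Longrightarrow> sr (dm x) = Z \<Longrightarrow> x = y"
  using faithful_r by blast

lemma K1: assumes g: "g \<in> A1" and f: "f \<in> A1" and gf: "tg f = sr g"
  shows "L (g \<diamond> f) \<cdot> As (U (tg g)) g f = L g \<rhd> f"
proof -
  obtain Y where Y: "tg g = Y" "Y \<in> obj B" using g by simp
  note ctx = g f gf Y
  have T1: "(U Y \<lhd> L (g \<diamond> f)) \<cdot> As (U Y) (U Y) (g \<diamond> f) = Rr (U Y) \<rhd> (g \<diamond> f)"
    using triangle[of "g \<diamond> f" "U Y"] ctx by simp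
  have P: "As (U Y) (U Y) (g \<diamond> f) \<cdot> As (U Y \<diamond> U Y) g f = (U Y \<lhd> As (U Y) g f) \<cdot> As (U Y) (U Y \<diamond> g) f \<cdot> (As (U Y) (U Y) g \<rhd> f)"
    using pentagon[of f g "U Y" "U Y"] ctx by simp
  have N1: "As (U Y) g f \<cdot> ((Rr (U Y) \<rhd> g) \<rhd> f) = (Rr (U Y) \<rhd> (g \<diamond> f)) \<cdot> As (U Y \<diamond> U Y) g f"
    using As_nat_r[of "Rr (U Y)" g f] ctx by simp
  have T2: "(U Y \<lhd> L g) \<cdot> As (U Y) (U Y) g = Rr (U Y) \<rhd> g"
    using triangle[of g "U Y"] ctx by simp
  have N2: "As (U Y) g f \<cdot> ((U Y \<lhd> L g) \<rhd> f) = (U Y \<lhd> (L g \<rhd> f)) \<cdot> As (U Y) (U Y \<diamond> g) f"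
    using As_nat_m[of "L g" "U Y" f] ctx by simp
  have "(U Y \<lhd> (L (g \<diamond> f) \<cdot> As (U Y) g f)) \<cdot> As (U Y) (U Y \<diamond> g) f \<cdot> (As (U Y) (U Y) g \<rhd> f)
      = (U Y \<lhd> L (g \<diamond> f)) \<cdot> (U Y \<lhd> As (U Y) g f) \<cdot> As (U Y) (U Y \<diamond> g) f \<cdot> (As (U Y) (U Y) g \<rhd> f)"
    using ctx by (simp add: wl_vc)
  also have "\<dots> = (U Y \<lhd> L (g \<diamond> f)) \<cdot> As (U Y) (U Y) (g \<diamond> f) \<cdot> As (U Y \<diamond> U Y) g f"
    using ctx by (simp add: P[symmetric])
  also have "\<dots> = (Rr (U Y) \<rhd> (g \<diamond> f)) \<cdot> As (U Y \<diamond> U Y) g f"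
    using ctx by (simp add: cont[OF T1])
  also have "\<dots> = As (U Y) g f \<cdot> ((Rr (U Y) \<rhd> g) \<rhd> f)"
    using N1 by simp
  also have "\<dots> = As (U Y) g f \<cdot> (((U Y \<lhd> L g) \<cdot> As (U Y) (U Y) g) \<rhd> f)"
    using T2 by simp
  also have "\<dots> = As (U Y) g f \<cdot> ((U Y \<lhd> L g) \<rhd> f) \<cdot> (As (U Y) (U Y) g \<rhd> f)"
    using ctx by (simp add: wr_vc)
  also have "\<dots> = (U Y \<lhd> (L g \<rhd> f)) \<cdot> As (U Y) (U Y \<diamond> g) f \<cdot> (As (U Y) (U Y) g \<rhd> f)"
    using ctx by (simp add: cont[OF N2])
  finally have "U Y \<lhd> (L (g \<diamond> f) \<cdot> As (U Y) g f) = U Y \<lhd> (L g \<rhd> f)"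
    by (rule cancel_r) (use ctx in simp_all)
  hence "L (g \<diamond> f) \<cdot> As (U Y) g f = L g \<rhd> f" by (rule faithful_l') (use ctx in simp_all)
  thus ?thesis using ctx by simp
qed

lemma K2: assumes g: "g \<in> A1" and f: "f \<in> A1" and gf: "tg f = sr g"
  shows "(g \<lhd> Rr f) \<cdot> As g f (U (sr f)) = Rr (g \<diamond> f)"
proof -
  obtain X where X: "sr f = X" "X \<in> obj B" using f by simp
  note ctx = g f gf X
  have T1: "((g \<diamond> f) \<lhd> L (U X)) \<cdot> As (g \<diamond> f) (U X) (U X) = Rr (g \<diamond> f) \<rhd> U X"
    using triangle[of "U X" "g \<diamond> f"] ctx by simp
  have T2: "(f \<lhd> L (U X)) \<cdot> As f (U X) (U X) = Rr f \<rhd> U X"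
    using triangle[of "U X" f] ctx by simp
  have P: "As g f (U X \<diamond> U X) \<cdot> As (g \<diamond> f) (U X) (U X) = (g \<lhd> As f (U X) (U X)) \<cdot> As g (f \<diamond> U X) (U X) \<cdot> (As g f (U X) \<rhd> U X)"
    using pentagon[of "U X" "U X" f g] ctx by simp
  have N1: "As g f (U X) \<cdot> ((g \<diamond> f) \<lhd> L (U X)) = (g \<lhd> (f \<lhd> L (U X))) \<cdot> As g f (U X \<diamond> U X)"
    using As_nat_l[of "L (U X)" g f] ctx by simp
  have N2: "As g f (U X) \<cdot> ((g \<lhd> Rr f) \<rhd> U X) = (g \<lhd> (Rr f \<rhd> U X)) \<cdot> As g (f \<diamond> U X) (U X)"
    using As_nat_m[of "Rr f" g "U X"] ctx by simp
  have "As g f (U X) \<cdot> (((g \<lhd> Rr f) \<cdot> As g f (U X)) \<rhd> U X)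
      = As g f (U X) \<cdot> ((g \<lhd> Rr f) \<rhd> U X) \<cdot> (As g f (U X) \<rhd> U X)"
    using ctx by (simp add: wr_vc)
  also have "\<dots> = (g \<lhd> (Rr f \<rhd> U X)) \<cdot> As g (f \<diamond> U X) (U X) \<cdot> (As g f (U X) \<rhd> U X)"
    using ctx by (simp add: cont[OF N2])
  also have "\<dots> = (g \<lhd> ((f \<lhd> L (U X)) \<cdot> As f (U X) (U X))) \<cdot> As g (f \<diamond> U X) (U X) \<cdot> (As g f (U X) \<rhd> U X)"
    using T2 by simp
  also have "\<dots> = (g \<lhd> (f \<lhd> L (U X))) \<cdot> (g \<lhd> As f (U X) (U X)) \<cdot> As g (f \<diamond> U X) (U X) \<cdot> (As g f (U X) \<rhd> U X)"
    using ctx by (simp add: wl_vc)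
  also have "\<dots> = (g \<lhd> (f \<lhd> L (U X))) \<cdot> As g f (U X \<diamond> U X) \<cdot> As (g \<diamond> f) (U X) (U X)"
    using ctx by (simp add: P[symmetric])
  also have "\<dots> = As g f (U X) \<cdot> ((g \<diamond> f) \<lhd> L (U X)) \<cdot> As (g \<diamond> f) (U X) (U X)"
    using ctx by (simp add: cont[OF N1])
  also have "\<dots> = As g f (U X) \<cdot> (Rr (g \<diamond> f) \<rhd> U X)"
    using ctx by (simp add: T1)
  finally have "((g \<lhd> Rr f) \<cdot> As g f (U X)) \<rhd> U X = Rr (g \<diamond> f) \<rhd> U X"
    by (rule cancel_l) (use ctx in simp_all)
  hence "(g \<lhd> Rr f) \<cdot> As g f (U X) = Rr (g \<diamond> f)" by (rule faithful_r') (use ctx in simp_all)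
  thus ?thesis using ctx by simp
qed

lemma K3: assumes X: "X \<in> obj B" shows "L (U X) = Rr (U X)"
proof -
  have k1: "L (U X \<diamond> U X) \<cdot> As (U X) (U X) (U X) = L (U X) \<rhd> U X"
    using K1[of "U X" "U X"] X by simp
  have t: "(U X \<lhd> L (U X)) \<cdot> As (U X) (U X) (U X) = Rr (U X) \<rhd> U X"
    using triangle[of "U X" "U X"] X by simp
  have n: "L (U X) \<cdot> L (U X \<diamond> U X) = L (U X) \<cdot> (U X \<lhd> L (U X))"
    using L_nat[of "L (U X)"] X by simp
  have e: "L (U X \<diamond> U X) = U X \<lhd> L (U X)"
    using n by (rule cancel_l) (use X in simp_all)
  have "L (U X) \<rhd> U X = Rr (U X) \<rhd> U X" using k1 t e by simp
  thus ?thesis by (rule faithful_r') (use X in simp_all)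
qed

end


context bg
begin

lemma wr_inv1[simp]: "x \<in> A2 \<Longrightarrow> g \<in> A1 \<Longrightarrow> tg g = sr (dm x) \<Longrightarrow> (x \<rhd> g) \<cdot> (vinv x \<rhd> g) = I (cd x \<diamond> g)"
  using wr_vc[of x "vinv x" g] by simp
lemma wr_inv2[simp]: "x \<in> A2 \<Longrightarrow> g \<in> A1 \<Longrightarrow> tg g = sr (dm x) \<Longrightarrow> (vinv x \<rhd> g) \<cdot> (x \<rhd> g) = I (dm x \<diamond> g)"
  using wr_vc[of "vinv x" x g] by simp
lemma wl_inv1[simp]: "x \<in> A2 \<Longrightarrow> g \<in> A1 \<Longrightarrow> tg (dm x) = sr g \<Longrightarrow> (g \<lhd> x) \<cdot> (g \<lhd> vinv x) = I (g \<diamond> cd x)"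
  using wl_vc[of x "vinv x" g] by simp
lemma wl_inv2[simp]: "x \<in> A2 \<Longrightarrow> g \<in> A1 \<Longrightarrow> tg (dm x) = sr g \<Longrightarrow> (g \<lhd> vinv x) \<cdot> (g \<lhd> x) = I (g \<diamond> dm x)"
  using wl_vc[of "vinv x" x g] by simp
lemma wr_inv1c[simp]: "x \<in> A2 \<Longrightarrow> g \<in> A1 \<Longrightarrow> tg g = sr (dm x) \<Longrightarrow> z \<in> A2 \<Longrightarrow> cd z = cd x \<diamond> g \<Longrightarrow> (x \<rhd> g) \<cdot> (vinv x \<rhd> g) \<cdot> z = z"
  by (subst assoc_sym) simp_all
lemma wr_inv2c[simp]: "x \<in> A2 \<Longrightarrow> g \<in> A1 \<Longrightarrow> tg g = sr (dm x) \<Longrightarrow> z \<in> A2 \<Longrightarrow> cd z = dm x \<diamond> g \<Longrightarrow> (vinv x \<rhd> g) \<cdot> (x \<rhd> g) \<cdot> z = z"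
  by (subst assoc_sym) simp_all
lemma wl_inv1c[simp]: "x \<in> A2 \<Longrightarrow> g \<in> A1 \<Longrightarrow> tg (dm x) = sr g \<Longrightarrow> z \<in> A2 \<Longrightarrow> cd z = g \<diamond> cd x \<Longrightarrow> (g \<lhd> x) \<cdot> (g \<lhd> vinv x) \<cdot> z = z"
  by (subst assoc_sym) simp_all
lemma wl_inv2c[simp]: "x \<in> A2 \<Longrightarrow> g \<in> A1 \<Longrightarrow> tg (dm x) = sr g \<Longrightarrow> z \<in> A2 \<Longrightarrow> cd z = g \<diamond> dm x \<Longrightarrow> (g \<lhd> vinv x) \<cdot> (g \<lhd> x) \<cdot> z = z"
  by (subst assoc_sym) simp_all

lemma whisk_faithful: assumes eq: "b \<lhd> x = b \<lhd> y" and b: "b \<in> A1" and xy: "x \<in> A2" "y \<in> A2" "dm x = dm y" "cd x = cd y" "tg (dm x) = sr b"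
  shows "x = y"
proof -
  note ctx = b xy
  have n1: "As (inv b) b (cd x) \<cdot> ((inv b \<diamond> b) \<lhd> x) = (inv b \<lhd> (b \<lhd> x)) \<cdot> As (inv b) b (dm x)"
    using As_nat_l[of x "inv b" b] ctx by simp
  have n2: "As (inv b) b (cd x) \<cdot> ((inv b \<diamond> b) \<lhd> y) = (inv b \<lhd> (b \<lhd> y)) \<cdot> As (inv b) b (dm x)"
    using As_nat_l[of y "inv b" b] ctx by simp
  have "As (inv b) b (cd x) \<cdot> ((inv b \<diamond> b) \<lhd> x) = As (inv b) b (cd x) \<cdot> ((inv b \<diamond> b) \<lhd> y)"
    using n1 n2 eq by simp
  hence e1: "(inv b \<diamond> b) \<lhd> x = (inv b \<diamond> b) \<lhd> y" by (rule cancel_l) (use ctx in simp_all)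
  have s1: "Ee b \<star> x = (U (sr b) \<lhd> x) \<cdot> (Ee b \<rhd> dm x)" using hc_split2[of "Ee b" x] ctx by simp
  have s2: "Ee b \<star> x = (Ee b \<rhd> cd x) \<cdot> ((inv b \<diamond> b) \<lhd> x)" using hc_split1[of "Ee b" x] ctx by simp
  have s3: "Ee b \<star> y = (U (sr b) \<lhd> y) \<cdot> (Ee b \<rhd> dm x)" using hc_split2[of "Ee b" y] ctx by simp
  have s4: "Ee b \<star> y = (Ee b \<rhd> cd x) \<cdot> ((inv b \<diamond> b) \<lhd> y)" using hc_split1[of "Ee b" y] ctx by simp
  have "(U (sr b) \<lhd> x) \<cdot> (Ee b \<rhd> dm x) = (U (sr b) \<lhd> y) \<cdot> (Ee b \<rhd> dm x)"
    using s1 s2 s3 s4 e1 by simp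
  hence "U (sr b) \<lhd> x = U (sr b) \<lhd> y" by (rule cancel_r) (use ctx in simp_all)
  thus ?thesis by (rule faithful_l') (use ctx in simp_all)
qed


definition sq where "sq f f' a b \<sigma> \<longleftrightarrow> f \<in> A1 \<and> f' \<in> A1 \<and> a \<in> A1 \<and> b \<in> A1 \<and> sr a = sr f \<and> tg a = sr f' \<and>
   sr b = tg f \<and> tg b = tg f' \<and> \<sigma> \<in> A2 \<and> dm \<sigma> = f' \<diamond> a \<and> cd \<sigma> = b \<diamond> f"

definition pc where "pc f f' a b \<sigma> a' b' \<sigma>' \<alpha> \<beta> \<longleftrightarrow> sq f f' a b \<sigma> \<and> sq f f' a' b' \<sigma>' \<and>
   \<alpha> \<in> A2 \<and> dm \<alpha> = a \<and> cd \<alpha> = a' \<and> \<beta> \<in> A2 \<and> dm \<beta> = b \<and> cd \<beta> = b' \<and>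
   \<sigma>' \<cdot> (f' \<lhd> \<alpha>) = (\<beta> \<rhd> f) \<cdot> \<sigma>"

lemma pcI: "sq f f' a b \<sigma> \<Longrightarrow> sq f f' a' b' \<sigma>' \<Longrightarrow> \<alpha> \<in> A2 \<Longrightarrow> dm \<alpha> = a \<Longrightarrow> cd \<alpha> = a' \<Longrightarrow>
   \<beta> \<in> A2 \<Longrightarrow> dm \<beta> = b \<Longrightarrow> cd \<beta> = b' \<Longrightarrow> \<sigma>' \<cdot> (f' \<lhd> \<alpha>) = (\<beta> \<rhd> f) \<cdot> \<sigma> \<Longrightarrow> pc f f' a b \<sigma> a' b' \<sigma>' \<alpha> \<beta>"
  unfolding pc_def by blast

lemma C_id: "sq f f' a b \<sigma> \<Longrightarrow> pc f f' a b \<sigma> a b \<sigma> (I a) (I b)"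
  unfolding pc_def sq_def by simp

lemma C_vc: assumes 1: "pc f f' a b \<sigma> a' b' \<sigma>' \<alpha> \<beta>" and 2: "pc f f' a' b' \<sigma>' a'' b'' \<sigma>'' \<alpha>' \<beta>'"
  shows "pc f f' a b \<sigma> a'' b'' \<sigma>'' (\<alpha>' \<cdot> \<alpha>) (\<beta>' \<cdot> \<beta>)"
proof -
  have t: "sq f f' a b \<sigma>" "sq f f' a' b' \<sigma>'" "sq f f' a'' b'' \<sigma>''" "\<alpha> \<in> A2" "dm \<alpha> = a" "cd \<alpha> = a'"
     "\<beta> \<in> A2" "dm \<beta> = b" "cd \<beta> = b'" "\<alpha>' \<in> A2" "dm \<alpha>' = a'" "cd \<alpha>' = a''"
     "\<beta>' \<in> A2" "dm \<beta>' = b'" "cd \<beta>' = b''" using 1 2 unfolding pc_def by auto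
  have e1: "\<sigma>' \<cdot> (f' \<lhd> \<alpha>) = (\<beta> \<rhd> f) \<cdot> \<sigma>" and e2: "\<sigma>'' \<cdot> (f' \<lhd> \<alpha>') = (\<beta>' \<rhd> f) \<cdot> \<sigma>'"
    using 1 2 unfolding pc_def by auto
  note ctx = t[unfolded sq_def]
  have "\<sigma>'' \<cdot> (f' \<lhd> (\<alpha>' \<cdot> \<alpha>)) = \<sigma>'' \<cdot> (f' \<lhd> \<alpha>') \<cdot> (f' \<lhd> \<alpha>)"
    using ctx by (simp add: wl_vc)
  also have "\<dots> = (\<beta>' \<rhd> f) \<cdot> \<sigma>' \<cdot> (f' \<lhd> \<alpha>)" using ctx by (simp add: cont[OF e2])
  also have "\<dots> = (\<beta>' \<rhd> f) \<cdot> (\<beta> \<rhd> f) \<cdot> \<sigma>" using e1 by simp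
  also have "\<dots> = ((\<beta>' \<cdot> \<beta>) \<rhd> f) \<cdot> \<sigma>" using ctx by (simp add: wr_vc)
  finally show ?thesis using t by (intro pcI) simp_all
qed

lemma C_vinv: assumes 1: "pc f f' a b \<sigma> a' b' \<sigma>' \<alpha> \<beta>"
  shows "pc f f' a' b' \<sigma>' a b \<sigma> (vinv \<alpha>) (vinv \<beta>)"
proof -
  have t: "sq f f' a b \<sigma>" "sq f f' a' b' \<sigma>'" "\<alpha> \<in> A2" "dm \<alpha> = a" "cd \<alpha> = a'"
     "\<beta> \<in> A2" "dm \<beta> = b" "cd \<beta> = b'" using 1 unfolding pc_def by auto
  have e1: "\<sigma>' \<cdot> (f' \<lhd> \<alpha>) = (\<beta> \<rhd> f) \<cdot> \<sigma>" using 1 unfolding pc_def by auto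
  note ctx = t[unfolded sq_def]
  have "(\<beta> \<rhd> f) \<cdot> \<sigma> \<cdot> (f' \<lhd> vinv \<alpha>) = \<sigma>'"
    using ctx by (simp add: cont[OF e1[symmetric]])
  also have "\<dots> = (\<beta> \<rhd> f) \<cdot> (vinv \<beta> \<rhd> f) \<cdot> \<sigma>'" using ctx by simp
  finally have "\<sigma> \<cdot> (f' \<lhd> vinv \<alpha>) = (vinv \<beta> \<rhd> f) \<cdot> \<sigma>'"
    by (rule cancel_l) (use ctx in simp_all)
  thus ?thesis using t by (intro pcI) simp_all
qed


lemma swap1: "p \<cdot> x = y \<cdot> q \<Longrightarrow> p \<in> A2 \<Longrightarrow> x \<in> A2 \<Longrightarrow> y \<in> A2 \<Longrightarrow> q \<in> A2 \<Longrightarrow> cd x = dm p \<Longrightarrow> cd q = dm y \<Longrightarrow>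
   vinv p \<cdot> y = x \<cdot> vinv q"
proof -
  assume e: "p \<cdot> x = y \<cdot> q" and t: "p \<in> A2" "x \<in> A2" "y \<in> A2" "q \<in> A2" "cd x = dm p" "cd q = dm y"
  have d: "dm x = dm q" using arg_cong[OF e, of dm] t by simp
  have c: "cd y = cd p" using arg_cong[OF e, of cd] t by simp
  have 1: "vinv p \<cdot> (y \<cdot> q) = x" using e[symmetric] t by simp
  have "(vinv p \<cdot> y) \<cdot> q = (x \<cdot> vinv q) \<cdot> q" using 1 t d c by simp
  thus ?thesis by (rule cancel_r) (use t d c in simp_all)
qed

definition Sg where "Sg f f' f'' a b a' b' \<tau> \<sigma> =
   vinv (As b' b f) \<cdot> (b' \<lhd> \<sigma>) \<cdot> As b' f' a \<cdot> (\<tau> \<rhd> a) \<cdot> vinv (As f'' a' a)"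

lemma sq_comp: "sq f f' a b \<sigma> \<Longrightarrow> sq f' f'' a' b' \<tau> \<Longrightarrow> sq f f'' (a' \<diamond> a) (b' \<diamond> b) (Sg f f' f'' a b a' b' \<tau> \<sigma>)"
  unfolding sq_def Sg_def by simp

lemma lw_core:
  assumes u: "sq f' f'' a b \<sigma>" and v: "sq f f' c d \<tau>" and v': "sq f f' c' d' \<tau>'"
    and al: "\<alpha> \<in> A2" "dm \<alpha> = c" "cd \<alpha> = c'" and be: "\<beta> \<in> A2" "dm \<beta> = d" "cd \<beta> = d'"
  shows "Sg f f' f'' c' d' a b \<sigma> \<tau>' \<cdot> (f'' \<lhd> (a \<lhd> \<alpha>)) =
           vinv (As b d' f) \<cdot> (b \<lhd> (\<tau>' \<cdot> (f' \<lhd> \<alpha>))) \<cdot> As b f' c \<cdot> (\<sigma> \<rhd> c) \<cdot> vinv (As f'' a c)"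
    and "((b \<lhd> \<beta>) \<rhd> f) \<cdot> Sg f f' f'' c d a b \<sigma> \<tau> =
           vinv (As b d' f) \<cdot> (b \<lhd> ((\<beta> \<rhd> f) \<cdot> \<tau>)) \<cdot> As b f' c \<cdot> (\<sigma> \<rhd> c) \<cdot> vinv (As f'' a c)"
proof -
  note ctx = u[unfolded sq_def] v[unfolded sq_def] v'[unfolded sq_def] al be
  have n1: "vinv (As f'' a c') \<cdot> (f'' \<lhd> (a \<lhd> \<alpha>)) = ((f'' \<diamond> a) \<lhd> \<alpha>) \<cdot> vinv (As f'' a c)"
    using As_nat_l[of \<alpha> f'' a] ctx by (intro swap1) simp_all
  have n2: "(\<sigma> \<rhd> c') \<cdot> ((f'' \<diamond> a) \<lhd> \<alpha>) = ((b \<diamond> f') \<lhd> \<alpha>) \<cdot> (\<sigma> \<rhd> c)"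
    using hc_split1[of \<sigma> \<alpha>] hc_split2[of \<sigma> \<alpha>] ctx by simp
  have n3: "As b f' c' \<cdot> ((b \<diamond> f') \<lhd> \<alpha>) = (b \<lhd> (f' \<lhd> \<alpha>)) \<cdot> As b f' c"
    using As_nat_l[of \<alpha> b f'] ctx by simp
  have "Sg f f' f'' c' d' a b \<sigma> \<tau>' \<cdot> (f'' \<lhd> (a \<lhd> \<alpha>)) =
     vinv (As b d' f) \<cdot> (b \<lhd> \<tau>') \<cdot> As b f' c' \<cdot> (\<sigma> \<rhd> c') \<cdot> vinv (As f'' a c') \<cdot> (f'' \<lhd> (a \<lhd> \<alpha>))"
    unfolding Sg_def using ctx by simp
  also have "\<dots> = vinv (As b d' f) \<cdot> (b \<lhd> \<tau>') \<cdot> As b f' c' \<cdot> (\<sigma> \<rhd> c') \<cdot> ((f'' \<diamond> a) \<lhd> \<alpha>) \<cdot> vinv (As f'' a c)"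
    using n1 by simp
  also have "\<dots> = vinv (As b d' f) \<cdot> (b \<lhd> \<tau>') \<cdot> As b f' c' \<cdot> ((b \<diamond> f') \<lhd> \<alpha>) \<cdot> (\<sigma> \<rhd> c) \<cdot> vinv (As f'' a c)"
    using ctx by (simp add: cont[OF n2])
  also have "\<dots> = vinv (As b d' f) \<cdot> (b \<lhd> \<tau>') \<cdot> (b \<lhd> (f' \<lhd> \<alpha>)) \<cdot> As b f' c \<cdot> (\<sigma> \<rhd> c) \<cdot> vinv (As f'' a c)"
    using ctx by (simp add: cont[OF n3])
  also have "\<dots> = vinv (As b d' f) \<cdot> (b \<lhd> (\<tau>' \<cdot> (f' \<lhd> \<alpha>))) \<cdot> As b f' c \<cdot> (\<sigma> \<rhd> c) \<cdot> vinv (As f'' a c)"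
    using ctx by (simp add: wl_vc)
  finally show "Sg f f' f'' c' d' a b \<sigma> \<tau>' \<cdot> (f'' \<lhd> (a \<lhd> \<alpha>)) =
           vinv (As b d' f) \<cdot> (b \<lhd> (\<tau>' \<cdot> (f' \<lhd> \<alpha>))) \<cdot> As b f' c \<cdot> (\<sigma> \<rhd> c) \<cdot> vinv (As f'' a c)" .
  have m1: "((b \<lhd> \<beta>) \<rhd> f) \<cdot> vinv (As b d f) = vinv (As b d' f) \<cdot> (b \<lhd> (\<beta> \<rhd> f))"
    using As_nat_m[of \<beta> b f] ctx by (intro swap1[symmetric]) simp_all
  have "((b \<lhd> \<beta>) \<rhd> f) \<cdot> Sg f f' f'' c d a b \<sigma> \<tau> =
      ((b \<lhd> \<beta>) \<rhd> f) \<cdot> vinv (As b d f) \<cdot> (b \<lhd> \<tau>) \<cdot> As b f' c \<cdot> (\<sigma> \<rhd> c) \<cdot> vinv (As f'' a c)"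
    unfolding Sg_def using ctx by simp
  also have "\<dots> = vinv (As b d' f) \<cdot> (b \<lhd> (\<beta> \<rhd> f)) \<cdot> (b \<lhd> \<tau>) \<cdot> As b f' c \<cdot> (\<sigma> \<rhd> c) \<cdot> vinv (As f'' a c)"
    using ctx by (simp add: cont[OF m1])
  also have "\<dots> = vinv (As b d' f) \<cdot> (b \<lhd> ((\<beta> \<rhd> f) \<cdot> \<tau>)) \<cdot> As b f' c \<cdot> (\<sigma> \<rhd> c) \<cdot> vinv (As f'' a c)"
    using ctx by (simp add: wl_vc)
  finally show "((b \<lhd> \<beta>) \<rhd> f) \<cdot> Sg f f' f'' c d a b \<sigma> \<tau> =
           vinv (As b d' f) \<cdot> (b \<lhd> ((\<beta> \<rhd> f) \<cdot> \<tau>)) \<cdot> As b f' c \<cdot> (\<sigma> \<rhd> c) \<cdot> vinv (As f'' a c)" .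
qed


lemma C_lw: assumes u: "sq f' f'' a b \<sigma>" and p: "pc f f' c d \<tau> c' d' \<tau>' \<alpha> \<beta>"
  shows "pc f f'' (a \<diamond> c) (b \<diamond> d) (Sg f f' f'' c d a b \<sigma> \<tau>) (a \<diamond> c') (b \<diamond> d') (Sg f f' f'' c' d' a b \<sigma> \<tau>') (a \<lhd> \<alpha>) (b \<lhd> \<beta>)"
proof -
  have t: "sq f f' c d \<tau>" "sq f f' c' d' \<tau>'" "\<alpha> \<in> A2" "dm \<alpha> = c" "cd \<alpha> = c'"
     "\<beta> \<in> A2" "dm \<beta> = d" "cd \<beta> = d'" and e: "\<tau>' \<cdot> (f' \<lhd> \<alpha>) = (\<beta> \<rhd> f) \<cdot> \<tau>"
    using p unfolding pc_def by auto
  note ctx = u[unfolded sq_def] t[unfolded sq_def]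
  show ?thesis
    apply (rule pcI)
    using sq_comp[OF t(1) u] sq_comp[OF t(2) u] ctx apply simp_all
    using lw_core[OF u t] e by simp
qed

lemma C_lw_rev: assumes u: "sq f' f'' a b \<sigma>" and t: "sq f f' c d \<tau>" "sq f f' c' d' \<tau>'" "\<alpha> \<in> A2" "dm \<alpha> = c" "cd \<alpha> = c'"
     "\<beta> \<in> A2" "dm \<beta> = d" "cd \<beta> = d'"
   and p: "pc f f'' (a \<diamond> c) (b \<diamond> d) (Sg f f' f'' c d a b \<sigma> \<tau>) (a \<diamond> c') (b \<diamond> d') (Sg f f' f'' c' d' a b \<sigma> \<tau>') (a \<lhd> \<alpha>) (b \<lhd> \<beta>)"
  shows "pc f f' c d \<tau> c' d' \<tau>' \<alpha> \<beta>"
proof -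
  note ctx = u[unfolded sq_def] t[unfolded sq_def]
  have e: "Sg f f' f'' c' d' a b \<sigma> \<tau>' \<cdot> (f'' \<lhd> (a \<lhd> \<alpha>)) = ((b \<lhd> \<beta>) \<rhd> f) \<cdot> Sg f f' f'' c d a b \<sigma> \<tau>"
    using p unfolding pc_def by auto
  have "vinv (As b d' f) \<cdot> (b \<lhd> (\<tau>' \<cdot> (f' \<lhd> \<alpha>))) \<cdot> (As b f' c \<cdot> (\<sigma> \<rhd> c) \<cdot> vinv (As f'' a c)) =
        vinv (As b d' f) \<cdot> (b \<lhd> ((\<beta> \<rhd> f) \<cdot> \<tau>)) \<cdot> (As b f' c \<cdot> (\<sigma> \<rhd> c) \<cdot> vinv (As f'' a c))"
    using lw_core[OF u t] e by simp
  hence "(b \<lhd> (\<tau>' \<cdot> (f' \<lhd> \<alpha>))) \<cdot> (As b f' c \<cdot> (\<sigma> \<rhd> c) \<cdot> vinv (As f'' a c)) =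
        (b \<lhd> ((\<beta> \<rhd> f) \<cdot> \<tau>)) \<cdot> (As b f' c \<cdot> (\<sigma> \<rhd> c) \<cdot> vinv (As f'' a c))"
    by (rule cancel_l) (use ctx in simp_all)
  hence "b \<lhd> (\<tau>' \<cdot> (f' \<lhd> \<alpha>)) = b \<lhd> ((\<beta> \<rhd> f) \<cdot> \<tau>)"
    by (rule cancel_r) (use ctx in simp_all)
  hence "\<tau>' \<cdot> (f' \<lhd> \<alpha>) = (\<beta> \<rhd> f) \<cdot> \<tau>"
    by (rule whisk_faithful) (use ctx in simp_all)
  thus ?thesis using t by (intro pcI) simp_all
qed

lemma C_rw: assumes p: "pc f' f'' a b \<sigma> a' b' \<sigma>' \<alpha> \<beta>" and v: "sq f f' c d \<tau>"
  shows "pc f f'' (a \<diamond> c) (b \<diamond> d) (Sg f f' f'' c d a b \<sigma> \<tau>) (a' \<diamond> c) (b' \<diamond> d) (Sg f f' f'' c d a' b' \<sigma>' \<tau>) (\<alpha> \<rhd> c) (\<beta> \<rhd> d)"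
proof -
  have t: "sq f' f'' a b \<sigma>" "sq f' f'' a' b' \<sigma>'" "\<alpha> \<in> A2" "dm \<alpha> = a" "cd \<alpha> = a'"
     "\<beta> \<in> A2" "dm \<beta> = b" "cd \<beta> = b'" and e: "\<sigma>' \<cdot> (f'' \<lhd> \<alpha>) = (\<beta> \<rhd> f') \<cdot> \<sigma>"
    using p unfolding pc_def by auto
  note ctx = v[unfolded sq_def] t[unfolded sq_def]
  have r1: "vinv (As f'' a' c) \<cdot> (f'' \<lhd> (\<alpha> \<rhd> c)) = ((f'' \<lhd> \<alpha>) \<rhd> c) \<cdot> vinv (As f'' a c)"
    using As_nat_m[of \<alpha> f'' c] ctx by (intro swap1) simp_all
  have r2: "(\<sigma>' \<rhd> c) \<cdot> ((f'' \<lhd> \<alpha>) \<rhd> c) = ((\<beta> \<rhd> f') \<rhd> c) \<cdot> (\<sigma> \<rhd> c)"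
  proof -
    have "(\<sigma>' \<rhd> c) \<cdot> ((f'' \<lhd> \<alpha>) \<rhd> c) = (\<sigma>' \<cdot> (f'' \<lhd> \<alpha>)) \<rhd> c" using ctx by (simp add: wr_vc)
    also have "\<dots> = ((\<beta> \<rhd> f') \<cdot> \<sigma>) \<rhd> c" using e by simp
    also have "\<dots> = ((\<beta> \<rhd> f') \<rhd> c) \<cdot> (\<sigma> \<rhd> c)" using ctx by (simp add: wr_vc)
    finally show ?thesis .
  qed
  have r3: "As b' f' c \<cdot> ((\<beta> \<rhd> f') \<rhd> c) = (\<beta> \<rhd> (f' \<diamond> c)) \<cdot> As b f' c"
    using As_nat_r[of \<beta> f' c] ctx by simp
  have r4: "(b' \<lhd> \<tau>) \<cdot> (\<beta> \<rhd> (f' \<diamond> c)) = (\<beta> \<rhd> (d \<diamond> f)) \<cdot> (b \<lhd> \<tau>)"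
    using hc_split1[of \<beta> \<tau>] hc_split2[of \<beta> \<tau>] ctx by simp
  have r5: "vinv (As b' d f) \<cdot> (\<beta> \<rhd> (d \<diamond> f)) = ((\<beta> \<rhd> d) \<rhd> f) \<cdot> vinv (As b d f)"
    using As_nat_r[of \<beta> d f] ctx by (intro swap1) simp_all
  have "Sg f f' f'' c d a' b' \<sigma>' \<tau> \<cdot> (f'' \<lhd> (\<alpha> \<rhd> c)) =
     vinv (As b' d f) \<cdot> (b' \<lhd> \<tau>) \<cdot> As b' f' c \<cdot> (\<sigma>' \<rhd> c) \<cdot> vinv (As f'' a' c) \<cdot> (f'' \<lhd> (\<alpha> \<rhd> c))"
    unfolding Sg_def using ctx by simp
  also have "\<dots> = vinv (As b' d f) \<cdot> (b' \<lhd> \<tau>) \<cdot> As b' f' c \<cdot> (\<sigma>' \<rhd> c) \<cdot> ((f'' \<lhd> \<alpha>) \<rhd> c) \<cdot> vinv (As f'' a c)"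
    using r1 by simp
  also have "\<dots> = vinv (As b' d f) \<cdot> (b' \<lhd> \<tau>) \<cdot> As b' f' c \<cdot> ((\<beta> \<rhd> f') \<rhd> c) \<cdot> (\<sigma> \<rhd> c) \<cdot> vinv (As f'' a c)"
    using ctx by (simp add: cont[OF r2])
  also have "\<dots> = vinv (As b' d f) \<cdot> (b' \<lhd> \<tau>) \<cdot> (\<beta> \<rhd> (f' \<diamond> c)) \<cdot> As b f' c \<cdot> (\<sigma> \<rhd> c) \<cdot> vinv (As f'' a c)"
    using ctx by (simp add: cont[OF r3])
  also have "\<dots> = vinv (As b' d f) \<cdot> (\<beta> \<rhd> (d \<diamond> f)) \<cdot> (b \<lhd> \<tau>) \<cdot> As b f' c \<cdot> (\<sigma> \<rhd> c) \<cdot> vinv (As f'' a c)"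
    using ctx by (simp add: cont[OF r4])
  also have "\<dots> = ((\<beta> \<rhd> d) \<rhd> f) \<cdot> vinv (As b d f) \<cdot> (b \<lhd> \<tau>) \<cdot> As b f' c \<cdot> (\<sigma> \<rhd> c) \<cdot> vinv (As f'' a c)"
    using ctx by (simp add: cont[OF r5])
  also have "\<dots> = ((\<beta> \<rhd> d) \<rhd> f) \<cdot> Sg f f' f'' c d a b \<sigma> \<tau>"
    unfolding Sg_def using ctx by simp
  finally have eq: "Sg f f' f'' c d a' b' \<sigma>' \<tau> \<cdot> (f'' \<lhd> (\<alpha> \<rhd> c)) = ((\<beta> \<rhd> d) \<rhd> f) \<cdot> Sg f f' f'' c d a b \<sigma> \<tau>" .
  show ?thesis
    apply (rule pcI)
    using sq_comp[OF v t(1)] sq_comp[OF v t(2)] ctx eq by simp_all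
qed

end


context bg
begin

lemma C_hc: assumes p2: "pc f' f'' a b \<sigma> a' b' \<sigma>' \<alpha>2 \<beta>2" and p1: "pc f f' c d \<tau> c' d' \<tau>' \<alpha> \<beta>"
  shows "pc f f'' (a \<diamond> c) (b \<diamond> d) (Sg f f' f'' c d a b \<sigma> \<tau>) (a' \<diamond> c') (b' \<diamond> d') (Sg f f' f'' c' d' a' b' \<sigma>' \<tau>') (\<alpha>2 \<star> \<alpha>) (\<beta>2 \<star> \<beta>)"
proof -
  have t2: "sq f' f'' a b \<sigma>" "sq f' f'' a' b' \<sigma>'" "\<alpha>2 \<in> A2" "dm \<alpha>2 = a" "cd \<alpha>2 = a'"
     "\<beta>2 \<in> A2" "dm \<beta>2 = b" "cd \<beta>2 = b'" using p2 unfolding pc_def by auto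
  have t1: "sq f f' c d \<tau>" "sq f f' c' d' \<tau>'" "\<alpha> \<in> A2" "dm \<alpha> = c" "cd \<alpha> = c'"
     "\<beta> \<in> A2" "dm \<beta> = d" "cd \<beta> = d'" using p1 unfolding pc_def by auto
  note ctx = t1[unfolded sq_def] t2[unfolded sq_def]
  have "pc f f'' (a \<diamond> c) (b \<diamond> d) (Sg f f' f'' c d a b \<sigma> \<tau>) (a' \<diamond> c') (b' \<diamond> d') (Sg f f' f'' c' d' a' b' \<sigma>' \<tau>')
         ((\<alpha>2 \<rhd> c') \<cdot> (a \<lhd> \<alpha>)) ((\<beta>2 \<rhd> d') \<cdot> (b \<lhd> \<beta>))"
    by (rule C_vc[OF C_lw[OF t2(1) p1] C_rw[OF p2 t1(2)]])
  moreover have "\<alpha>2 \<star> \<alpha> = (\<alpha>2 \<rhd> c') \<cdot> (a \<lhd> \<alpha>)" using hc_split1[of \<alpha>2 \<alpha>] ctx by simp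
  moreover have "\<beta>2 \<star> \<beta> = (\<beta>2 \<rhd> d') \<cdot> (b \<lhd> \<beta>)" using hc_split1[of \<beta>2 \<beta>] ctx by simp
  ultimately show ?thesis by simp
qed

definition iota where "iota f = vinv (L f) \<cdot> Rr f"

lemma iota_arr[simp]: "f \<in> A1 \<Longrightarrow> iota f \<in> A2" unfolding iota_def by simp
lemma iota_dom[simp]: "f \<in> A1 \<Longrightarrow> dm (iota f) = f \<diamond> U (sr f)" unfolding iota_def by simp
lemma iota_cod[simp]: "f \<in> A1 \<Longrightarrow> cd (iota f) = U (tg f) \<diamond> f" unfolding iota_def by simp
lemma L_iota[simp]: "f \<in> A1 \<Longrightarrow> L f \<cdot> iota f = Rr f" unfolding iota_def by simp

lemma sq_unit: "f \<in> A1 \<Longrightarrow> sq f f (U (sr f)) (U (tg f)) (iota f)"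
  unfolding sq_def by simp

lemma mvr: "x \<cdot> p = y \<Longrightarrow> x \<in> A2 \<Longrightarrow> p \<in> A2 \<Longrightarrow> cd p = dm x \<Longrightarrow> x = y \<cdot> vinv p"
proof -
  assume e: "x \<cdot> p = y" and t: "x \<in> A2" "p \<in> A2" "cd p = dm x"
  have "x = (x \<cdot> p) \<cdot> vinv p" using t by simp
  thus ?thesis using e by simp
qed
lemma mvl: "p \<cdot> x = y \<Longrightarrow> x \<in> A2 \<Longrightarrow> p \<in> A2 \<Longrightarrow> cd x = dm p \<Longrightarrow> x = vinv p \<cdot> y"
proof -
  assume e: "p \<cdot> x = y" and t: "x \<in> A2" "p \<in> A2" "cd x = dm p"
  have "x = vinv p \<cdot> (p \<cdot> x)" using t by simp
  thus ?thesis using e by simp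
qed

lemma C_l: assumes u: "sq f f' a b \<sigma>"
  shows "pc f f' (U (sr f') \<diamond> a) (U (tg f') \<diamond> b) (Sg f f' f' a b (U (sr f')) (U (tg f')) (iota f') \<sigma>) a b \<sigma> (L a) (L b)"
proof -
  note ctx = u[unfolded sq_def]
  have k1': "L (b \<diamond> f) = (L b \<rhd> f) \<cdot> vinv (As (U (tg b)) b f)"
    by (rule mvr[OF K1]) (use ctx in simp_all)
  have k1: "L (b \<diamond> f) = (L b \<rhd> f) \<cdot> vinv (As (U (tg f')) b f)"
    using k1' ctx by simp
  have n: "L (b \<diamond> f) \<cdot> (U (tg f') \<lhd> \<sigma>) = \<sigma> \<cdot> L (f' \<diamond> a)"
    using L_nat[of \<sigma>] ctx by simp
  have k2: "L (f' \<diamond> a) \<cdot> As (U (tg f')) f' a = L f' \<rhd> a"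
    using K1[of f' a] ctx by simp
  have w: "(L f' \<rhd> a) \<cdot> (iota f' \<rhd> a) = Rr f' \<rhd> a"
    using wr_vc[of "L f'" "iota f'" a] ctx by simp
  have t: "f' \<lhd> L a = (Rr f' \<rhd> a) \<cdot> vinv (As f' (U (tg a)) a)"
    by (rule mvr[OF triangle]) (use ctx in simp_all)
  have "(L b \<rhd> f) \<cdot> Sg f f' f' a b (U (sr f')) (U (tg f')) (iota f') \<sigma> =
     (L b \<rhd> f) \<cdot> vinv (As (U (tg f')) b f) \<cdot> (U (tg f') \<lhd> \<sigma>) \<cdot> As (U (tg f')) f' a \<cdot> (iota f' \<rhd> a) \<cdot> vinv (As f' (U (sr f')) a)"
    unfolding Sg_def using ctx by simp
  also have "\<dots> = L (b \<diamond> f) \<cdot> (U (tg f') \<lhd> \<sigma>) \<cdot> As (U (tg f')) f' a \<cdot> (iota f' \<rhd> a) \<cdot> vinv (As f' (U (sr f')) a)"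
    using ctx by (simp add: cont[OF k1[symmetric]])
  also have "\<dots> = \<sigma> \<cdot> L (f' \<diamond> a) \<cdot> As (U (tg f')) f' a \<cdot> (iota f' \<rhd> a) \<cdot> vinv (As f' (U (sr f')) a)"
    using ctx by (simp add: cont[OF n])
  also have "\<dots> = \<sigma> \<cdot> (L f' \<rhd> a) \<cdot> (iota f' \<rhd> a) \<cdot> vinv (As f' (U (sr f')) a)"
    using ctx by (simp add: cont[OF k2])
  also have "\<dots> = \<sigma> \<cdot> (Rr f' \<rhd> a) \<cdot> vinv (As f' (U (sr f')) a)"
    using ctx by (simp add: cont[OF w])
  also have "\<dots> = \<sigma> \<cdot> (f' \<lhd> L a)"
    using t ctx by simp
  finally have eq: "\<sigma> \<cdot> (f' \<lhd> L a) = (L b \<rhd> f) \<cdot> Sg f f' f' a b (U (sr f')) (U (tg f')) (iota f') \<sigma>" by simp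
  show ?thesis
    apply (rule pcI)
    using sq_comp[OF u sq_unit[of f']] ctx eq u by simp_all
qed

lemma C_r: assumes u: "sq f f' a b \<sigma>"
  shows "pc f f' (a \<diamond> U (sr f)) (b \<diamond> U (tg f)) (Sg f f f' (U (sr f)) (U (tg f)) a b \<sigma> (iota f)) a b \<sigma> (Rr a) (Rr b)"
proof -
  note ctx = u[unfolded sq_def]
  have t: "b \<lhd> L f = (Rr b \<rhd> f) \<cdot> vinv (As b (U (tg f)) f)"
    by (rule mvr[OF triangle]) (use ctx in simp_all)
  have w: "(b \<lhd> L f) \<cdot> (b \<lhd> iota f) = b \<lhd> Rr f"
    using wl_vc[of "L f" "iota f" b] ctx by simp
  have k2: "(b \<lhd> Rr f) \<cdot> As b f (U (sr f)) = Rr (b \<diamond> f)"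
    using K2[of b f] ctx by simp
  have n: "Rr (b \<diamond> f) \<cdot> (\<sigma> \<rhd> U (sr f)) = \<sigma> \<cdot> Rr (f' \<diamond> a)"
    using R_nat[of \<sigma>] ctx by simp
  have k3: "f' \<lhd> Rr a = Rr (f' \<diamond> a) \<cdot> vinv (As f' a (U (sr a)))"
    by (rule mvr[OF K2]) (use ctx in simp_all)
  have "(Rr b \<rhd> f) \<cdot> Sg f f f' (U (sr f)) (U (tg f)) a b \<sigma> (iota f) =
     (Rr b \<rhd> f) \<cdot> vinv (As b (U (tg f)) f) \<cdot> (b \<lhd> iota f) \<cdot> As b f (U (sr f)) \<cdot> (\<sigma> \<rhd> U (sr f)) \<cdot> vinv (As f' a (U (sr f)))"
    unfolding Sg_def using ctx by simp
  also have "\<dots> = (b \<lhd> L f) \<cdot> (b \<lhd> iota f) \<cdot> As b f (U (sr f)) \<cdot> (\<sigma> \<rhd> U (sr f)) \<cdot> vinv (As f' a (U (sr f)))"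
    using ctx by (simp add: cont[OF t[symmetric]])
  also have "\<dots> = (b \<lhd> Rr f) \<cdot> As b f (U (sr f)) \<cdot> (\<sigma> \<rhd> U (sr f)) \<cdot> vinv (As f' a (U (sr f)))"
    using ctx by (simp add: cont[OF w])
  also have "\<dots> = Rr (b \<diamond> f) \<cdot> (\<sigma> \<rhd> U (sr f)) \<cdot> vinv (As f' a (U (sr f)))"
    using ctx by (simp add: cont[OF k2])
  also have "\<dots> = \<sigma> \<cdot> Rr (f' \<diamond> a) \<cdot> vinv (As f' a (U (sr f)))"
    using ctx by (simp add: cont[OF n])
  also have "\<dots> = \<sigma> \<cdot> (f' \<lhd> Rr a)"
    using k3 ctx by simp
  finally have eq: "\<sigma> \<cdot> (f' \<lhd> Rr a) = (Rr b \<rhd> f) \<cdot> Sg f f f' (U (sr f)) (U (tg f)) a b \<sigma> (iota f)" by simp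
  show ?thesis
    apply (rule pcI)
    using sq_comp[OF sq_unit[of f] u] ctx eq u by simp_all
qed


context
  fixes k h g f
  assumes pf: "f \<in> A1" "g \<in> A1" "h \<in> A1" "k \<in> A1" "tg f = sr g" "tg g = sr h" "tg h = sr k"
begin
lemma pent_s1: "k \<lhd> As h g f = As k h (g \<diamond> f) \<cdot> As (k \<diamond> h) g f \<cdot> (vinv (As k h g) \<rhd> f) \<cdot> vinv (As k (h \<diamond> g) f)"
proof -
  have "(k \<lhd> As h g f) \<cdot> (As k (h \<diamond> g) f \<cdot> (As k h g \<rhd> f)) = As k h (g \<diamond> f) \<cdot> As (k \<diamond> h) g f"
    using pentagon[OF pf] by simp
  hence "k \<lhd> As h g f = (As k h (g \<diamond> f) \<cdot> As (k \<diamond> h) g f) \<cdot> vinv (As k (h \<diamond> g) f \<cdot> (As k h g \<rhd> f))"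
    by (rule mvr) (use pf in simp_all)
  thus ?thesis using pf by simp
qed
lemma pent_s3: "vinv (As k h (g \<diamond> f)) \<cdot> (k \<lhd> As h g f) = As (k \<diamond> h) g f \<cdot> (vinv (As k h g) \<rhd> f) \<cdot> vinv (As k (h \<diamond> g) f)"
  using pent_s1 pf by simp
lemma pent_s2: "(k \<lhd> vinv (As h g f)) \<cdot> As k h (g \<diamond> f) = As k (h \<diamond> g) f \<cdot> (As k h g \<rhd> f) \<cdot> vinv (As (k \<diamond> h) g f)"
proof -
  have "((k \<lhd> vinv (As h g f)) \<cdot> As k h (g \<diamond> f)) \<cdot> As (k \<diamond> h) g f = (k \<lhd> vinv (As h g f)) \<cdot> (As k h (g \<diamond> f) \<cdot> As (k \<diamond> h) g f)"
    using pf by simp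
  also have "\<dots> = (k \<lhd> vinv (As h g f)) \<cdot> (k \<lhd> As h g f) \<cdot> As k (h \<diamond> g) f \<cdot> (As k h g \<rhd> f)"
    using pentagon[OF pf] by simp
  also have "\<dots> = As k (h \<diamond> g) f \<cdot> (As k h g \<rhd> f)" using pf by simp
  finally have "(k \<lhd> vinv (As h g f)) \<cdot> As k h (g \<diamond> f) = (As k (h \<diamond> g) f \<cdot> (As k h g \<rhd> f)) \<cdot> vinv (As (k \<diamond> h) g f)"
    by (rule mvr) (use pf in simp_all)
  thus ?thesis using pf by simp
qed
lemma pent_s4: "vinv (As k (h \<diamond> g) f) \<cdot> (k \<lhd> vinv (As h g f)) = (As k h g \<rhd> f) \<cdot> vinv (As (k \<diamond> h) g f) \<cdot> vinv (As k h (g \<diamond> f))"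
proof -
  have "vinv (k \<lhd> As h g f) = vinv (As k h (g \<diamond> f) \<cdot> As (k \<diamond> h) g f \<cdot> (vinv (As k h g) \<rhd> f) \<cdot> vinv (As k (h \<diamond> g) f))"
    using pent_s1 by simp
  hence "k \<lhd> vinv (As h g f) = As k (h \<diamond> g) f \<cdot> (As k h g \<rhd> f) \<cdot> vinv (As (k \<diamond> h) g f) \<cdot> vinv (As k h (g \<diamond> f))"
    using pf by simp
  thus ?thesis using pf by simp
qed
end



fun cmp :: "'c list \<Rightarrow> 'c" where
  "cmp [] = undefined" | "cmp [x] = x" | "cmp (x # y # xs) = x \<cdot> cmp (y # xs)"

fun ok :: "'c list \<Rightarrow> bool" where
  "ok [] = True" | "ok [x] = (x \<in> A2)" | "ok (x # y # xs) = (x \<in> A2 \<and> dm x = cd y \<and> ok (y # xs))"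

lemma ok_typ: "ok xs \<Longrightarrow> xs \<noteq> [] \<Longrightarrow> cmp xs \<in> A2 \<and> dm (cmp xs) = dm (last xs) \<and> cd (cmp xs) = cd (hd xs)"
proof (induction xs rule: cmp.induct)
  case (3 x y xs)
  have "cmp (y # xs) \<in> A2 \<and> dm (cmp (y # xs)) = dm (last (y # xs)) \<and> cd (cmp (y # xs)) = cd y"
    using 3 by simp
  then show ?case using 3 by simp
qed auto

lemma ok_app: "ok (xs @ ys) \<Longrightarrow> ok xs \<and> ok ys \<and> (xs \<noteq> [] \<longrightarrow> ys \<noteq> [] \<longrightarrow> dm (last xs) = cd (hd ys))"
proof (induction xs rule: cmp.induct)
  case (2 x)
  then show ?case by (cases ys) auto
next
  case (3 x y xs)
  then show ?case by auto
qed auto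

lemma ok_hd: "ok (x # xs) \<Longrightarrow> x \<in> A2" by (cases xs) auto

lemma ok_app2: "ok xs \<Longrightarrow> ok ys \<Longrightarrow> (xs \<noteq> [] \<and> ys \<noteq> [] \<longrightarrow> dm (last xs) = cd (hd ys)) \<Longrightarrow> ok (xs @ ys)"
proof (cases "ys = []")
  case False
  assume a: "ok xs" "ok ys" "(xs \<noteq> [] \<and> ys \<noteq> [] \<longrightarrow> dm (last xs) = cd (hd ys))"
  show ?thesis using a False
  proof (induction xs rule: cmp.induct)
    case (2 x)
    then show ?case by (cases ys) auto
  next
    case (3 x y xs)
    have "ok ((y # xs) @ ys)" using 3 by (intro 3(1)) auto
    then show ?case using 3 by simp
  qed auto
qed auto

lemma cmp_app: "ok (xs @ ys) \<Longrightarrow> xs \<noteq> [] \<Longrightarrow> ys \<noteq> [] \<Longrightarrow> cmp (xs @ ys) = cmp xs \<cdot> cmp ys"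
proof (induction xs rule: cmp.induct)
  case (2 x)
  then show ?case by (cases ys) auto
next
  case (3 x y xs)
  have o: "ok (y # xs)" "ok ys" "x \<in> A2" "dm x = cd y" "dm (last (y # xs)) = cd (hd ys)"
    using ok_app[OF 3(2)] 3(4) by auto
  have h: "cmp ((y # xs) @ ys) = cmp (y # xs) \<cdot> cmp ys" using 3 by auto
  have t1: "cmp (y # xs) \<in> A2" "dm (cmp (y # xs)) = dm (last (y # xs))" "cd (cmp (y # xs)) = cd y"
    using ok_typ[OF o(1)] by auto
  have t2: "cmp ys \<in> A2" "cd (cmp ys) = cd (hd ys)" using ok_typ[OF o(2)] 3 by auto
  have "cmp ((x # y # xs) @ ys) = x \<cdot> (cmp (y # xs) \<cdot> cmp ys)" using h by simp
  also have "\<dots> = (x \<cdot> cmp (y # xs)) \<cdot> cmp ys" using t1 t2 o by simp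
  finally show ?case by simp
qed auto

lemma cmp_rep: "ok (pre @ xs @ post) \<Longrightarrow> ok xs' \<Longrightarrow> xs \<noteq> [] \<Longrightarrow> xs' \<noteq> [] \<Longrightarrow>
  cmp xs = cmp xs' \<Longrightarrow> cmp (pre @ xs @ post) = cmp (pre @ xs' @ post)"
proof -
  assume a: "ok (pre @ xs @ post)" "ok xs'" "xs \<noteq> []" "xs' \<noteq> []" "cmp xs = cmp xs'"
  have o1: "ok pre" "ok (xs @ post)" "pre \<noteq> [] \<Longrightarrow> dm (last pre) = cd (hd xs)" using ok_app[OF a(1)] a(3) by auto
  have o2: "ok xs" "ok post" "post \<noteq> [] \<Longrightarrow> dm (last xs) = cd (hd post)" using ok_app[OF o1(2)] a(3) by auto
  have t: "dm (cmp xs) = dm (last xs)" "cd (cmp xs) = cd (hd xs)" "dm (cmp xs') = dm (last xs')" "cd (cmp xs') = cd (hd xs')"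
    using ok_typ[OF o2(1) a(3)] ok_typ[OF a(2) a(4)] by auto
  have j1: "dm (last xs') = dm (last xs)" "cd (hd xs') = cd (hd xs)" using t a(5) by metis+
  have o3: "ok (xs' @ post)" using ok_app2[OF a(2) o2(2)] o2(3) j1 by simp
  have o4: "ok (pre @ xs' @ post)" using ok_app2[OF o1(1) o3] o1(3) j1 a(4) by simp
  have 1: "cmp (xs @ post) = cmp (xs' @ post)"
  proof (cases "post = []")
    case False
    thus ?thesis using cmp_app[OF o1(2) a(3)] cmp_app[OF o3 a(4)] a(5) by simp
  qed (use a in simp)
  show ?thesis
  proof (cases "pre = []")
    case False
    thus ?thesis using cmp_app[OF a(1) False] cmp_app[OF o4 False] 1 a(3,4) by simp
  qed (use 1 in simp)
qed

lemma wl_cmp: "ok xs \<Longrightarrow> xs \<noteq> [] \<Longrightarrow> b \<in> A1 \<Longrightarrow> tg (dm (last xs)) = sr b \<Longrightarrow>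
   b \<lhd> cmp xs = cmp (map (\<lambda>x. b \<lhd> x) xs) \<and> ok (map (\<lambda>x. b \<lhd> x) xs)"
proof (induction xs rule: cmp.induct)
  case (3 x y xs)
  have o: "ok (y # xs)" "x \<in> A2" "dm x = cd y" using 3 by auto
  have yA: "y \<in> A2" using ok_hd o(1) by blast
  have t1: "cmp (y # xs) \<in> A2" "dm (cmp (y # xs)) = dm (last (y # xs))" "cd (cmp (y # xs)) = cd y"
    using ok_typ[OF o(1)] by auto
  have s: "tg (dm x) = sr b"
  proof -
    have "tg (dm x) = tg (cd (cmp (y # xs)))" by (simp only: t1(3) o(3))
    also have "\<dots> = tg (dm (last (y # xs)))" by (simp only: trg_cod[OF t1(1)] t1(2))
    finally show ?thesis using 3(5) by simp
  qed
  have IH: "b \<lhd> cmp (y # xs) = cmp (map (\<lambda>x. b \<lhd> x) (y # xs)) \<and> ok (map (\<lambda>x. b \<lhd> x) (y # xs))"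
    using 3 o by simp
  have e1: "b \<lhd> cmp (x # y # xs) = (b \<lhd> x) \<cdot> (b \<lhd> cmp (y # xs))"
    using wl_vc[of x "cmp (y # xs)" b] t1 s 3(4,5) o by simp
  have s2: "tg (dm y) = sr b"
  proof -
    have "tg (dm y) = tg (cd y)" using yA by simp
    thus ?thesis using s o by simp
  qed
  show ?case using IH e1 o s s2 3(4) yA by simp
qed auto

lemma wr_cmp: "ok xs \<Longrightarrow> xs \<noteq> [] \<Longrightarrow> b \<in> A1 \<Longrightarrow> tg b = sr (dm (last xs)) \<Longrightarrow>
   cmp xs \<rhd> b = cmp (map (\<lambda>x. x \<rhd> b) xs) \<and> ok (map (\<lambda>x. x \<rhd> b) xs)"
proof (induction xs rule: cmp.induct)
  case (3 x y xs)
  have o: "ok (y # xs)" "x \<in> A2" "dm x = cd y" using 3 by auto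
  have yA: "y \<in> A2" using ok_hd o(1) by blast
  have t1: "cmp (y # xs) \<in> A2" "dm (cmp (y # xs)) = dm (last (y # xs))" "cd (cmp (y # xs)) = cd y"
    using ok_typ[OF o(1)] by auto
  have s: "sr (dm x) = tg b"
  proof -
    have "sr (dm x) = sr (cd (cmp (y # xs)))" by (simp only: t1(3) o(3))
    also have "\<dots> = sr (dm (last (y # xs)))" by (simp only: src_cod[OF t1(1)] t1(2))
    finally show ?thesis using 3(5) by simp
  qed
  have IH: "cmp (y # xs) \<rhd> b = cmp (map (\<lambda>x. x \<rhd> b) (y # xs)) \<and> ok (map (\<lambda>x. x \<rhd> b) (y # xs))"
    using 3 o by simp
  have e1: "cmp (x # y # xs) \<rhd> b = (x \<rhd> b) \<cdot> (cmp (y # xs) \<rhd> b)"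
    using wr_vc[of x "cmp (y # xs)" b] t1 s 3(4,5) o by simp
  have s2: "sr (dm y) = tg b"
  proof -
    have "sr (dm y) = sr (cd y)" using yA by simp
    thus ?thesis using s o by simp
  qed
  show ?case using IH e1 o s s2 3(4) yA by simp
qed auto


declare cmp.simps[simp del]
lemma cmp1[simp]: "cmp [x] = x" by (simp add: cmp.simps)

lemma rep3: "cmp xs = cmp xs' \<Longrightarrow> Ls = pre @ xs @ post \<Longrightarrow> Ls' = pre @ xs' @ post \<Longrightarrow> ok Ls \<Longrightarrow> ok xs' \<Longrightarrow>
   xs \<noteq> [] \<Longrightarrow> xs' \<noteq> [] \<Longrightarrow> cmp Ls = cmp Ls'"
  using cmp_rep by blast

lemma app1: "ok (xs @ [y]) \<Longrightarrow> xs \<noteq> [] \<Longrightarrow> cmp xs \<cdot> y = cmp (xs @ [y])"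
  using cmp_app[of xs "[y]"] by simp

lemma Sg_cmp: "Sg f f' f'' a b a' b' \<tau> \<sigma> = cmp [vinv (As b' b f), b' \<lhd> \<sigma>, As b' f' a, \<tau> \<rhd> a, vinv (As f'' a' a)]"
  by (simp add: Sg_def cmp.simps)

lemma Sg_typ: assumes "sq f f' a b \<sigma>" "sq f' f'' a' b' \<tau>"
  shows "Sg f f' f'' a b a' b' \<tau> \<sigma> \<in> A2" "dm (Sg f f' f'' a b a' b' \<tau> \<sigma>) = f'' \<diamond> (a' \<diamond> a)"
     "cd (Sg f f' f'' a b a' b' \<tau> \<sigma>) = (b' \<diamond> b) \<diamond> f"
  using sq_comp[OF assms] unfolding sq_def by auto

lemma C_asc: assumes u1: "sq f0 f1 a1 b1 \<sigma>1" and u2: "sq f1 f2 a2 b2 \<sigma>2" and u3: "sq f2 f3 a3 b3 \<sigma>3"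
  shows "pc f0 f3 ((a3 \<diamond> a2) \<diamond> a1) ((b3 \<diamond> b2) \<diamond> b1) (Sg f0 f1 f3 a1 b1 (a3 \<diamond> a2) (b3 \<diamond> b2) (Sg f1 f2 f3 a2 b2 a3 b3 \<sigma>3 \<sigma>2) \<sigma>1)
     (a3 \<diamond> (a2 \<diamond> a1)) (b3 \<diamond> (b2 \<diamond> b1)) (Sg f0 f2 f3 (a2 \<diamond> a1) (b2 \<diamond> b1) a3 b3 \<sigma>3 (Sg f0 f1 f2 a1 b1 a2 b2 \<sigma>2 \<sigma>1))
     (As a3 a2 a1) (As b3 b2 b1)"
proof -
  note ctx = u1[unfolded sq_def] u2[unfolded sq_def] u3[unfolded sq_def]
  note Sty = Sg_typ[OF u1 u2] Sg_typ[OF u2 u3]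
  have q1: "vinv (As b3 (b2 \<diamond> b1) f0) \<cdot> (b3 \<lhd> vinv (As b2 b1 f0)) = (As b3 b2 b1 \<rhd> f0) \<cdot> vinv (As (b3 \<diamond> b2) b1 f0) \<cdot> vinv (As b3 b2 (b1 \<diamond> f0))"
    by (rule pent_s4) (use ctx in simp_all)
  have q2: "b3 \<lhd> As b2 f1 a1 = As b3 b2 (f1 \<diamond> a1) \<cdot> As (b3 \<diamond> b2) f1 a1 \<cdot> (vinv (As b3 b2 f1) \<rhd> a1) \<cdot> vinv (As b3 (b2 \<diamond> f1) a1)"
    by (rule pent_s1) (use ctx in simp_all)
  have q3: "(b3 \<lhd> vinv (As f2 a2 a1)) \<cdot> As b3 f2 (a2 \<diamond> a1) = As b3 (f2 \<diamond> a2) a1 \<cdot> (As b3 f2 a2 \<rhd> a1) \<cdot> vinv (As (b3 \<diamond> f2) a2 a1)"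
    by (rule pent_s2) (use ctx in simp_all)
  have q4: "vinv (As f3 a3 (a2 \<diamond> a1)) \<cdot> (f3 \<lhd> As a3 a2 a1) = As (f3 \<diamond> a3) a2 a1 \<cdot> (vinv (As f3 a3 a2) \<rhd> a1) \<cdot> vinv (As f3 (a3 \<diamond> a2) a1)"
    by (rule pent_s3) (use ctx in simp_all)
  have n1: "(b3 \<diamond> b2) \<lhd> \<sigma>1 = vinv (As b3 b2 (b1 \<diamond> f0)) \<cdot> (b3 \<lhd> (b2 \<lhd> \<sigma>1)) \<cdot> As b3 b2 (f1 \<diamond> a1)"
    using mvl[OF As_nat_l[of \<sigma>1 b3 b2]] ctx by simp
  have n2: "(b3 \<lhd> \<sigma>2) \<rhd> a1 = vinv (As b3 (b2 \<diamond> f1) a1) \<cdot> (b3 \<lhd> (\<sigma>2 \<rhd> a1)) \<cdot> As b3 (f2 \<diamond> a2) a1"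
    using mvl[OF As_nat_m[of \<sigma>2 b3 a1]] ctx by simp
  have n3: "(\<sigma>3 \<rhd> a2) \<rhd> a1 = vinv (As (b3 \<diamond> f2) a2 a1) \<cdot> (\<sigma>3 \<rhd> (a2 \<diamond> a1)) \<cdot> As (f3 \<diamond> a3) a2 a1"
    using mvl[OF As_nat_r[of \<sigma>3 a2 a1]] ctx by simp
  define M where "M = [As b3 b2 b1 \<rhd> f0, vinv (As (b3 \<diamond> b2) b1 f0), vinv (As b3 b2 (b1 \<diamond> f0)), b3 \<lhd> (b2 \<lhd> \<sigma>1),
     As b3 b2 (f1 \<diamond> a1), As (b3 \<diamond> b2) f1 a1, vinv (As b3 b2 f1) \<rhd> a1, vinv (As b3 (b2 \<diamond> f1) a1),
     b3 \<lhd> (\<sigma>2 \<rhd> a1), As b3 (f2 \<diamond> a2) a1, As b3 f2 a2 \<rhd> a1, vinv (As (b3 \<diamond> f2) a2 a1),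
     \<sigma>3 \<rhd> (a2 \<diamond> a1), As (f3 \<diamond> a3) a2 a1, vinv (As f3 a3 a2) \<rhd> a1, vinv (As f3 (a3 \<diamond> a2) a1)]"
  define XL where "XL = [vinv (As b3 (b2 \<diamond> b1) f0), b3 \<lhd> vinv (As b2 b1 f0), b3 \<lhd> (b2 \<lhd> \<sigma>1), b3 \<lhd> As b2 f1 a1, b3 \<lhd> (\<sigma>2 \<rhd> a1), b3 \<lhd> vinv (As f2 a2 a1), As b3 f2 (a2 \<diamond> a1), \<sigma>3 \<rhd> (a2 \<diamond> a1), vinv (As f3 a3 (a2 \<diamond> a1)), f3 \<lhd> As a3 a2 a1]"
  have L: "Sg f0 f2 f3 (a2 \<diamond> a1) (b2 \<diamond> b1) a3 b3 \<sigma>3 (Sg f0 f1 f2 a1 b1 a2 b2 \<sigma>2 \<sigma>1) \<cdot> (f3 \<lhd> As a3 a2 a1) = cmp XL"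
  proof -
    have w: "b3 \<lhd> Sg f0 f1 f2 a1 b1 a2 b2 \<sigma>2 \<sigma>1 = cmp (map (\<lambda>x. b3 \<lhd> x) [vinv (As b2 b1 f0), b2 \<lhd> \<sigma>1, As b2 f1 a1, \<sigma>2 \<rhd> a1, vinv (As f2 a2 a1)])"
      unfolding Sg_cmp by (rule conjunct1[OF wl_cmp]) (use ctx in simp_all)
    have w': "cmp [b3 \<lhd> Sg f0 f1 f2 a1 b1 a2 b2 \<sigma>2 \<sigma>1] = cmp (map (\<lambda>x. b3 \<lhd> x) [vinv (As b2 b1 f0), b2 \<lhd> \<sigma>1, As b2 f1 a1, \<sigma>2 \<rhd> a1, vinv (As f2 a2 a1)])"
      using w by (simp only: cmp1)
    have 1: "Sg f0 f2 f3 (a2 \<diamond> a1) (b2 \<diamond> b1) a3 b3 \<sigma>3 (Sg f0 f1 f2 a1 b1 a2 b2 \<sigma>2 \<sigma>1) =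
      cmp [vinv (As b3 (b2 \<diamond> b1) f0), b3 \<lhd> vinv (As b2 b1 f0), b3 \<lhd> (b2 \<lhd> \<sigma>1), b3 \<lhd> As b2 f1 a1,
      b3 \<lhd> (\<sigma>2 \<rhd> a1), b3 \<lhd> vinv (As f2 a2 a1), As b3 f2 (a2 \<diamond> a1), \<sigma>3 \<rhd> (a2 \<diamond> a1), vinv (As f3 a3 (a2 \<diamond> a1))]"
      unfolding Sg_cmp[of f0 f2 f3]
      by (rule rep3[OF w', where pre="[vinv (As b3 (b2 \<diamond> b1) f0)]"
          and post="[As b3 f2 (a2 \<diamond> a1), \<sigma>3 \<rhd> (a2 \<diamond> a1), vinv (As f3 a3 (a2 \<diamond> a1))]"]) (use ctx Sty in simp_all)
    have 2: "cmp [vinv (As b3 (b2 \<diamond> b1) f0), b3 \<lhd> vinv (As b2 b1 f0), b3 \<lhd> (b2 \<lhd> \<sigma>1), b3 \<lhd> As b2 f1 a1,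
      b3 \<lhd> (\<sigma>2 \<rhd> a1), b3 \<lhd> vinv (As f2 a2 a1), As b3 f2 (a2 \<diamond> a1), \<sigma>3 \<rhd> (a2 \<diamond> a1), vinv (As f3 a3 (a2 \<diamond> a1))] \<cdot> (f3 \<lhd> As a3 a2 a1)
      = cmp [vinv (As b3 (b2 \<diamond> b1) f0), b3 \<lhd> vinv (As b2 b1 f0), b3 \<lhd> (b2 \<lhd> \<sigma>1), b3 \<lhd> As b2 f1 a1,
      b3 \<lhd> (\<sigma>2 \<rhd> a1), b3 \<lhd> vinv (As f2 a2 a1), As b3 f2 (a2 \<diamond> a1), \<sigma>3 \<rhd> (a2 \<diamond> a1), vinv (As f3 a3 (a2 \<diamond> a1)), f3 \<lhd> As a3 a2 a1]"
      by (rule app1[where xs="[vinv (As b3 (b2 \<diamond> b1) f0), b3 \<lhd> vinv (As b2 b1 f0), b3 \<lhd> (b2 \<lhd> \<sigma>1), b3 \<lhd> As b2 f1 a1,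
      b3 \<lhd> (\<sigma>2 \<rhd> a1), b3 \<lhd> vinv (As f2 a2 a1), As b3 f2 (a2 \<diamond> a1), \<sigma>3 \<rhd> (a2 \<diamond> a1), vinv (As f3 a3 (a2 \<diamond> a1))]", simplified])
        (use ctx in simp_all)
    from 1 2 show ?thesis unfolding XL_def by (simp only:)
  qed
  have e1: "cmp [vinv (As b3 (b2 \<diamond> b1) f0), b3 \<lhd> vinv (As b2 b1 f0)] = cmp [As b3 b2 b1 \<rhd> f0, vinv (As (b3 \<diamond> b2) b1 f0), vinv (As b3 b2 (b1 \<diamond> f0))]" using q1 by (simp add: cmp.simps)
  have e2: "cmp [b3 \<lhd> As b2 f1 a1] = cmp [As b3 b2 (f1 \<diamond> a1), As (b3 \<diamond> b2) f1 a1, vinv (As b3 b2 f1) \<rhd> a1, vinv (As b3 (b2 \<diamond> f1) a1)]" using q2 by (simp add: cmp.simps)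
  have e3: "cmp [b3 \<lhd> vinv (As f2 a2 a1), As b3 f2 (a2 \<diamond> a1)] = cmp [As b3 (f2 \<diamond> a2) a1, As b3 f2 a2 \<rhd> a1, vinv (As (b3 \<diamond> f2) a2 a1)]" using q3 by (simp add: cmp.simps)
  have e4: "cmp [vinv (As f3 a3 (a2 \<diamond> a1)), f3 \<lhd> As a3 a2 a1] = cmp [As (f3 \<diamond> a3) a2 a1, vinv (As f3 a3 a2) \<rhd> a1, vinv (As f3 (a3 \<diamond> a2) a1)]" using q4 by (simp add: cmp.simps)
  have l4: "cmp [vinv (As b3 (b2 \<diamond> b1) f0), b3 \<lhd> vinv (As b2 b1 f0), b3 \<lhd> (b2 \<lhd> \<sigma>1), b3 \<lhd> As b2 f1 a1, b3 \<lhd> (\<sigma>2 \<rhd> a1), b3 \<lhd> vinv (As f2 a2 a1), As b3 f2 (a2 \<diamond> a1), \<sigma>3 \<rhd> (a2 \<diamond> a1), vinv (As f3 a3 (a2 \<diamond> a1)), f3 \<lhd> As a3 a2 a1] = cmp [vinv (As b3 (b2 \<diamond> b1) f0), b3 \<lhd> vinv (As b2 b1 f0), b3 \<lhd> (b2 \<lhd> \<sigma>1), b3 \<lhd> As b2 f1 a1, b3 \<lhd> (\<sigma>2 \<rhd> a1), b3 \<lhd> vinv (As f2 a2 a1), As b3 f2 (a2 \<diamond> a1), \<sigma>3 \<rhd> (a2 \<diamond> a1), As (f3 \<diamond> a3) a2 a1, vinv (As f3 a3 a2) \<rhd> a1, vinv (As f3 (a3 \<diamond> a2) a1)]"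
    by (rule rep3[OF e4, where pre="[vinv (As b3 (b2 \<diamond> b1) f0), b3 \<lhd> vinv (As b2 b1 f0), b3 \<lhd> (b2 \<lhd> \<sigma>1), b3 \<lhd> As b2 f1 a1, b3 \<lhd> (\<sigma>2 \<rhd> a1), b3 \<lhd> vinv (As f2 a2 a1), As b3 f2 (a2 \<diamond> a1), \<sigma>3 \<rhd> (a2 \<diamond> a1)]" and post="[]"]) (use ctx Sty in simp_all)
  have l3: "cmp [vinv (As b3 (b2 \<diamond> b1) f0), b3 \<lhd> vinv (As b2 b1 f0), b3 \<lhd> (b2 \<lhd> \<sigma>1), b3 \<lhd> As b2 f1 a1, b3 \<lhd> (\<sigma>2 \<rhd> a1), b3 \<lhd> vinv (As f2 a2 a1), As b3 f2 (a2 \<diamond> a1), \<sigma>3 \<rhd> (a2 \<diamond> a1), As (f3 \<diamond> a3) a2 a1, vinv (As f3 a3 a2) \<rhd> a1, vinv (As f3 (a3 \<diamond> a2) a1)] = cmp [vinv (As b3 (b2 \<diamond> b1) f0), b3 \<lhd> vinv (As b2 b1 f0), b3 \<lhd> (b2 \<lhd> \<sigma>1), b3 \<lhd> As b2 f1 a1, b3 \<lhd> (\<sigma>2 \<rhd> a1), As b3 (f2 \<diamond> a2) a1, As b3 f2 a2 \<rhd> a1, vinv (As (b3 \<diamond> f2) a2 a1), \<sigma>3 \<rhd> (a2 \<diamond> a1), As (f3 \<diamond> a3) a2 a1, vinv (As f3 a3 a2) \<rhd> a1, vinv (As f3 (a3 \<diamond> a2) a1)]"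
    by (rule rep3[OF e3, where pre="[vinv (As b3 (b2 \<diamond> b1) f0), b3 \<lhd> vinv (As b2 b1 f0), b3 \<lhd> (b2 \<lhd> \<sigma>1), b3 \<lhd> As b2 f1 a1, b3 \<lhd> (\<sigma>2 \<rhd> a1)]" and post="[\<sigma>3 \<rhd> (a2 \<diamond> a1), As (f3 \<diamond> a3) a2 a1, vinv (As f3 a3 a2) \<rhd> a1, vinv (As f3 (a3 \<diamond> a2) a1)]"]) (use ctx Sty in simp_all)
  have l2: "cmp [vinv (As b3 (b2 \<diamond> b1) f0), b3 \<lhd> vinv (As b2 b1 f0), b3 \<lhd> (b2 \<lhd> \<sigma>1), b3 \<lhd> As b2 f1 a1, b3 \<lhd> (\<sigma>2 \<rhd> a1), As b3 (f2 \<diamond> a2) a1, As b3 f2 a2 \<rhd> a1, vinv (As (b3 \<diamond> f2) a2 a1), \<sigma>3 \<rhd> (a2 \<diamond> a1), As (f3 \<diamond> a3) a2 a1, vinv (As f3 a3 a2) \<rhd> a1, vinv (As f3 (a3 \<diamond> a2) a1)] = cmp [vinv (As b3 (b2 \<diamond> b1) f0), b3 \<lhd> vinv (As b2 b1 f0), b3 \<lhd> (b2 \<lhd> \<sigma>1), As b3 b2 (f1 \<diamond> a1), As (b3 \<diamond> b2) f1 a1, vinv (As b3 b2 f1) \<rhd> a1, vinv (As b3 (b2 \<diamond> f1) a1), b3 \<lhd> (\<sigma>2 \<rhd> a1), As b3 (f2 \<diamond> a2) a1, As b3 f2 a2 \<rhd> a1, vinv (As (b3 \<diamond> f2) a2 a1),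 \<sigma>3 \<rhd> (a2 \<diamond> a1), As (f3 \<diamond> a3) a2 a1, vinv (As f3 a3 a2) \<rhd> a1, vinv (As f3 (a3 \<diamond> a2) a1)]"
    by (rule rep3[OF e2, where pre="[vinv (As b3 (b2 \<diamond> b1) f0), b3 \<lhd> vinv (As b2 b1 f0), b3 \<lhd> (b2 \<lhd> \<sigma>1)]" and post="[b3 \<lhd> (\<sigma>2 \<rhd> a1), As b3 (f2 \<diamond> a2) a1, As b3 f2 a2 \<rhd> a1, vinv (As (b3 \<diamond> f2) a2 a1), \<sigma>3 \<rhd> (a2 \<diamond> a1), As (f3 \<diamond> a3) a2 a1, vinv (As f3 a3 a2) \<rhd> a1, vinv (As f3 (a3 \<diamond> a2) a1)]"]) (use ctx Sty in simp_all)
  have l1: "cmp [vinv (As b3 (b2 \<diamond> b1) f0), b3 \<lhd> vinv (As b2 b1 f0), b3 \<lhd> (b2 \<lhd> \<sigma>1), As b3 b2 (f1 \<diamond> a1), As (b3 \<diamond> b2) f1 a1, vinv (As b3 b2 f1) \<rhd> a1, vinv (As b3 (b2 \<diamond> f1) a1), b3 \<lhd> (\<sigma>2 \<rhd> a1), As b3 (f2 \<diamond> a2) a1, As b3 f2 a2 \<rhd> a1, vinv (As (b3 \<diamond> f2) a2 a1), \<sigma>3 \<rhd> (a2 \<diamond> a1), As (f3 \<diamond> a3) a2 a1, vinv (As f3 a3 a2) \<rhd> a1, vinv (As f3 (a3 \<diamond> a2) a1)] = cmp [As b3 b2 b1 \<rhd> f0, vinv (As (b3 \<diamond> b2) b1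 f0), vinv (As b3 b2 (b1 \<diamond> f0)), b3 \<lhd> (b2 \<lhd> \<sigma>1), As b3 b2 (f1 \<diamond> a1), As (b3 \<diamond> b2) f1 a1, vinv (As b3 b2 f1) \<rhd> a1, vinv (As b3 (b2 \<diamond> f1) a1), b3 \<lhd> (\<sigma>2 \<rhd> a1), As b3 (f2 \<diamond> a2) a1, As b3 f2 a2 \<rhd> a1, vinv (As (b3 \<diamond> f2) a2 a1), \<sigma>3 \<rhd> (a2 \<diamond> a1), As (f3 \<diamond> a3) a2 a1, vinv (As f3 a3 a2) \<rhd> a1, vinv (As f3 (a3 \<diamond> a2) a1)]"
    by (rule rep3[OF e1, where pre="[]" and post="[b3 \<lhd> (b2 \<lhd> \<sigma>1), As b3 b2 (f1 \<diamond> a1), As (b3 \<diamond> b2) f1 a1, vinv (As b3 b2 f1) \<rhd> a1, vinv (As b3 (b2 \<diamond> f1) a1), b3 \<lhd> (\<sigma>2 \<rhd> a1), As b3 (f2 \<diamond> a2) a1, As b3 f2 a2 \<rhd> a1, vinv (As (b3 \<diamond> f2) a2 a1), \<sigma>3 \<rhd> (a2 \<diamond> a1), As (f3 \<diamond> a3) a2 a1, vinv (As f3 a3 a2) \<rhd> a1, vinv (As f3 (a3 \<diamond> a2) a1)]"]) (use ctx Sty in simp_all)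
  have f1: "cmp [(b3 \<diamond> b2) \<lhd> \<sigma>1] = cmp [vinv (As b3 b2 (b1 \<diamond> f0)), b3 \<lhd> (b2 \<lhd> \<sigma>1), As b3 b2 (f1 \<diamond> a1)]" using n1 by (simp add: cmp.simps)
  have f2: "cmp [Sg f1 f2 f3 a2 b2 a3 b3 \<sigma>3 \<sigma>2 \<rhd> a1] = cmp [vinv (As b3 b2 f1) \<rhd> a1, (b3 \<lhd> \<sigma>2) \<rhd> a1, As b3 f2 a2 \<rhd> a1, (\<sigma>3 \<rhd> a2) \<rhd> a1, vinv (As f3 a3 a2) \<rhd> a1]"
    using conjunct1[OF wr_cmp[of "[vinv (As b3 b2 f1), b3 \<lhd> \<sigma>2, As b3 f2 a2, \<sigma>3 \<rhd> a2, vinv (As f3 a3 a2)]" a1]] ctx by (simp add: Sg_cmp)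
  have f3: "cmp [(b3 \<lhd> \<sigma>2) \<rhd> a1] = cmp [vinv (As b3 (b2 \<diamond> f1) a1), b3 \<lhd> (\<sigma>2 \<rhd> a1), As b3 (f2 \<diamond> a2) a1]" using n2 by (simp add: cmp.simps)
  have f4: "cmp [(\<sigma>3 \<rhd> a2) \<rhd> a1] = cmp [vinv (As (b3 \<diamond> f2) a2 a1), \<sigma>3 \<rhd> (a2 \<diamond> a1), As (f3 \<diamond> a3) a2 a1]" using n3 by (simp add: cmp.simps)
  have r2: "cmp [As b3 b2 b1 \<rhd> f0, vinv (As (b3 \<diamond> b2) b1 f0), (b3 \<diamond> b2) \<lhd> \<sigma>1, As (b3 \<diamond> b2) f1 a1, Sg f1 f2 f3 a2 b2 a3 b3 \<sigma>3 \<sigma>2 \<rhd> a1, vinv (As f3 (a3 \<diamond> a2) a1)] = cmp [As b3 b2 b1 \<rhd> f0, vinv (As (b3 \<diamond> b2) b1 f0), (b3 \<diamond> b2) \<lhd> \<sigma>1, As (b3 \<diamond> b2) f1 a1, vinv (As b3 b2 f1) \<rhd> a1, (b3 \<lhd> \<sigma>2) \<rhd> a1, As b3 f2 a2 \<rhd> a1, (\<sigma>3 \<rhd> a2) \<rhd> a1, vinv (As f3 a3 a2) \<rhd> a1, vinv (As f3 (a3 \<diamond> a2) a1)]"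
    by (rule rep3[OF f2, where pre="[As b3 b2 b1 \<rhd> f0, vinv (As (b3 \<diamond> b2) b1 f0), (b3 \<diamond> b2) \<lhd> \<sigma>1, As (b3 \<diamond> b2) f1 a1]" and post="[vinv (As f3 (a3 \<diamond> a2) a1)]"]) (use ctx Sty in simp_all)
  have r4: "cmp [As b3 b2 b1 \<rhd> f0, vinv (As (b3 \<diamond> b2) b1 f0), (b3 \<diamond> b2) \<lhd> \<sigma>1, As (b3 \<diamond> b2) f1 a1, vinv (As b3 b2 f1) \<rhd> a1, (b3 \<lhd> \<sigma>2) \<rhd> a1, As b3 f2 a2 \<rhd> a1, (\<sigma>3 \<rhd> a2) \<rhd> a1, vinv (As f3 a3 a2) \<rhd> a1, vinv (As f3 (a3 \<diamond> a2) a1)] = cmp [As b3 b2 b1 \<rhd> f0, vinv (As (b3 \<diamond> b2) b1 f0), (b3 \<diamond> b2) \<lhd> \<sigma>1, As (b3 \<diamond> b2) f1 a1, vinv (As b3 b2 f1) \<rhd> a1, (b3 \<lhd> \<sigma>2) \<rhd> a1, As b3 f2 a2 \<rhd> a1, vinv (As (b3 \<diamond> f2) a2 a1), \<sigma>3 \<rhd> (a2 \<diamond> a1), As (f3 \<diamond> a3) a2 a1, vinv (As f3 a3 a2) \<rhd> a1, vinv (As f3 (a3 \<diamond> a2) a1)]"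
    by (rule rep3[OF f4, where pre="[As b3 b2 b1 \<rhd> f0, vinv (As (b3 \<diamond> b2) b1 f0), (b3 \<diamond> b2) \<lhd> \<sigma>1, As (b3 \<diamond> b2) f1 a1, vinv (As b3 b2 f1) \<rhd> a1, (b3 \<lhd> \<sigma>2) \<rhd> a1, As b3 f2 a2 \<rhd> a1]" and post="[vinv (As f3 a3 a2) \<rhd> a1, vinv (As f3 (a3 \<diamond> a2) a1)]"]) (use ctx Sty in simp_all)
  have r3: "cmp [As b3 b2 b1 \<rhd> f0, vinv (As (b3 \<diamond> b2) b1 f0), (b3 \<diamond> b2) \<lhd> \<sigma>1, As (b3 \<diamond> b2) f1 a1, vinv (As b3 b2 f1) \<rhd> a1, (b3 \<lhd> \<sigma>2) \<rhd> a1, As b3 f2 a2 \<rhd> a1, vinv (As (b3 \<diamond> f2) a2 a1), \<sigma>3 \<rhd> (a2 \<diamond> a1), As (f3 \<diamond> a3) a2 a1, vinv (As f3 a3 a2) \<rhd> a1, vinv (As f3 (a3 \<diamond> a2) a1)] = cmp [As b3 b2 b1 \<rhd> f0, vinv (As (b3 \<diamond> b2) b1 f0), (b3 \<diamond> b2) \<lhd> \<sigma>1, As (b3 \<diamond> b2) f1 a1, vinv (As b3 b2 f1) \<rhd> a1, vinv (As b3 (b2 \<diamond> f1) a1), b3 \<lhd> (\<sigma>2 \<rhd> a1), As b3 (f2 \<diamond> a2) a1, As b3 f2 a2 \<rhd> a1, vinv (As (b3 \<diamond> f2) a2 a1), \<sigma>3 \<rhd> (a2 \<diamond> a1), As (f3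 \<diamond> a3) a2 a1, vinv (As f3 a3 a2) \<rhd> a1, vinv (As f3 (a3 \<diamond> a2) a1)]"
    by (rule rep3[OF f3, where pre="[As b3 b2 b1 \<rhd> f0, vinv (As (b3 \<diamond> b2) b1 f0), (b3 \<diamond> b2) \<lhd> \<sigma>1, As (b3 \<diamond> b2) f1 a1, vinv (As b3 b2 f1) \<rhd> a1]" and post="[As b3 f2 a2 \<rhd> a1, vinv (As (b3 \<diamond> f2) a2 a1), \<sigma>3 \<rhd> (a2 \<diamond> a1), As (f3 \<diamond> a3) a2 a1, vinv (As f3 a3 a2) \<rhd> a1, vinv (As f3 (a3 \<diamond> a2) a1)]"]) (use ctx Sty in simp_all)
  have r1: "cmp [As b3 b2 b1 \<rhd> f0, vinv (As (b3 \<diamond> b2) b1 f0), (b3 \<diamond> b2) \<lhd> \<sigma>1, As (b3 \<diamond> b2) f1 a1, vinv (As b3 b2 f1) \<rhd> a1, vinv (As b3 (b2 \<diamond> f1) a1), b3 \<lhd> (\<sigma>2 \<rhd> a1), As b3 (f2 \<diamond> a2) a1, As b3 f2 a2 \<rhd> a1, vinv (As (b3 \<diamond> f2) a2 a1), \<sigma>3 \<rhd> (a2 \<diamond> a1), As (f3 \<diamond> a3) a2 a1, vinv (As f3 a3 a2) \<rhd> a1, vinv (As f3 (a3 \<diamond> a2) a1)] = cmp [As b3 b2 b1 \<rhd> f0, vinv (As (b3 \<diamond> b2) b1 f0), vinv (As b3 b2 (b1 \<diamond> f0)), b3 \<lhd> (b2 \<lhd> \<sigma>1), As b3 b2 (f1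 \<diamond> a1), As (b3 \<diamond> b2) f1 a1, vinv (As b3 b2 f1) \<rhd> a1, vinv (As b3 (b2 \<diamond> f1) a1), b3 \<lhd> (\<sigma>2 \<rhd> a1), As b3 (f2 \<diamond> a2) a1, As b3 f2 a2 \<rhd> a1, vinv (As (b3 \<diamond> f2) a2 a1), \<sigma>3 \<rhd> (a2 \<diamond> a1), As (f3 \<diamond> a3) a2 a1, vinv (As f3 a3 a2) \<rhd> a1, vinv (As f3 (a3 \<diamond> a2) a1)]"
    by (rule rep3[OF f1, where pre="[As b3 b2 b1 \<rhd> f0, vinv (As (b3 \<diamond> b2) b1 f0)]" and post="[As (b3 \<diamond> b2) f1 a1, vinv (As b3 b2 f1) \<rhd> a1, vinv (As b3 (b2 \<diamond> f1) a1), b3 \<lhd> (\<sigma>2 \<rhd> a1), As b3 (f2 \<diamond> a2) a1, As b3 f2 a2 \<rhd> a1, vinv (As (b3 \<diamond> f2) a2 a1), \<sigma>3 \<rhd> (a2 \<diamond> a1), As (f3 \<diamond> a3) a2 a1, vinv (As f3 a3 a2) \<rhd> a1, vinv (As f3 (a3 \<diamond> a2) a1)]"]) (use ctx Sty in simp_all)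

  have L2: "cmp XL = cmp M" unfolding XL_def M_def using l4 l3 l2 l1 by simp
  have R: "(As b3 b2 b1 \<rhd> f0) \<cdot> Sg f0 f1 f3 a1 b1 (a3 \<diamond> a2) (b3 \<diamond> b2) (Sg f1 f2 f3 a2 b2 a3 b3 \<sigma>3 \<sigma>2) \<sigma>1 = cmp M"
  proof -
    have "(As b3 b2 b1 \<rhd> f0) \<cdot> Sg f0 f1 f3 a1 b1 (a3 \<diamond> a2) (b3 \<diamond> b2) (Sg f1 f2 f3 a2 b2 a3 b3 \<sigma>3 \<sigma>2) \<sigma>1 = cmp [As b3 b2 b1 \<rhd> f0, vinv (As (b3 \<diamond> b2) b1 f0), (b3 \<diamond> b2) \<lhd> \<sigma>1, As (b3 \<diamond> b2) f1 a1, Sg f1 f2 f3 a2 b2 a3 b3 \<sigma>3 \<sigma>2 \<rhd> a1, vinv (As f3 (a3 \<diamond> a2) a1)]"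
      unfolding Sg_cmp[of f0 f1 f3] by (simp only: cmp.simps(3))
    also have "\<dots> = cmp M" unfolding M_def using r2 r4 r3 r1 by simp
    finally show ?thesis .
  qed
  show ?thesis
    apply (rule pcI)
    using sq_comp[OF u1 sq_comp[OF u2 u3]] sq_comp[OF sq_comp[OF u1 u2] u3] ctx L L2 R by simp_all
qed

end


context bg
begin

lemma cont3: "a \<cdot> b \<cdot> c = d \<Longrightarrow> a \<in> A2 \<Longrightarrow> b \<in> A2 \<Longrightarrow> c \<in> A2 \<Longrightarrow> z \<in> A2 \<Longrightarrow> cd b = dm a \<Longrightarrow> cd c = dm b \<Longrightarrow> cd z = dm c \<Longrightarrow>
   a \<cdot> b \<cdot> c \<cdot> z = d \<cdot> z"
proof -
  assume e: "a \<cdot> b \<cdot> c = d" and t: "a \<in> A2" "b \<in> A2" "c \<in> A2" "z \<in> A2" "cd b = dm a" "cd c = dm b" "cd z = dm c"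
  have "a \<cdot> b \<cdot> c \<cdot> z = (a \<cdot> b \<cdot> c) \<cdot> z" using t by simp
  thus ?thesis using e by simp
qed

definition Phi where "Phi b x y \<psi> = L y \<cdot> (Ee b \<rhd> y) \<cdot> vinv (As (inv b) b y) \<cdot> (inv b \<lhd> \<psi>) \<cdot> As (inv b) b x \<cdot> (vinv (Ee b) \<rhd> x) \<cdot> vinv (L x)"

context
  fixes b x y
  assumes bxy: "b \<in> A1" "x \<in> A1" "y \<in> A1" "sr y = sr x" "tg y = tg x" "tg x = sr b"
begin

lemma Phi_typ: "\<psi> \<in> A2 \<Longrightarrow> dm \<psi> = b \<diamond> x \<Longrightarrow> cd \<psi> = b \<diamond> y \<Longrightarrow> Phi b x y \<psi> \<in> A2 \<and> dm (Phi b x y \<psi>) = x \<and> cd (Phi b x y \<psi>) = y"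
  unfolding Phi_def using bxy by simp

lemma Phi1: assumes p: "\<phi> \<in> A2" "dm \<phi> = x" "cd \<phi> = y" shows "Phi b x y (b \<lhd> \<phi>) = \<phi>"
proof -
  note ctx = bxy p
  have n: "vinv (As (inv b) b y) \<cdot> (inv b \<lhd> (b \<lhd> \<phi>)) \<cdot> As (inv b) b x = (inv b \<diamond> b) \<lhd> \<phi>"
    using mvl[OF As_nat_l[of \<phi> "inv b" b]] ctx by simp
  have h: "(Ee b \<rhd> y) \<cdot> ((inv b \<diamond> b) \<lhd> \<phi>) = (U (sr b) \<lhd> \<phi>) \<cdot> (Ee b \<rhd> x)"
    using hc_split1[of "Ee b" \<phi>] hc_split2[of "Ee b" \<phi>] ctx by simp
  have l: "L y \<cdot> (U (sr b) \<lhd> \<phi>) = \<phi> \<cdot> L x"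
    using L_nat[of \<phi>] ctx by simp
  have "Phi b x y (b \<lhd> \<phi>) = L y \<cdot> (Ee b \<rhd> y) \<cdot> ((inv b \<diamond> b) \<lhd> \<phi>) \<cdot> (vinv (Ee b) \<rhd> x) \<cdot> vinv (L x)"
    unfolding Phi_def using ctx by (simp add: cont3[OF n])
  also have "\<dots> = L y \<cdot> (U (sr b) \<lhd> \<phi>) \<cdot> (Ee b \<rhd> x) \<cdot> (vinv (Ee b) \<rhd> x) \<cdot> vinv (L x)"
    using ctx by (simp add: cont[OF h])
  also have "\<dots> = \<phi>" using ctx by (simp add: cont[OF l])
  finally show ?thesis .
qed

lemma Phi_inj: assumes p: "\<psi>1 \<in> A2" "dm \<psi>1 = b \<diamond> x" "cd \<psi>1 = b \<diamond> y" "\<psi>2 \<in> A2" "dm \<psi>2 = b \<diamond> x" "cd \<psi>2 = b \<diamond> y"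
   and e: "Phi b x y \<psi>1 = Phi b x y \<psi>2" shows "\<psi>1 = \<psi>2"
proof -
  note ctx = bxy p
  define K where "K = As (inv b) b x \<cdot> (vinv (Ee b) \<rhd> x) \<cdot> vinv (L x)"
  have K: "K \<in> A2" "cd K = inv b \<diamond> (b \<diamond> x)" unfolding K_def using ctx by simp_all
  have "L y \<cdot> (Ee b \<rhd> y) \<cdot> vinv (As (inv b) b y) \<cdot> (inv b \<lhd> \<psi>1) \<cdot> K = L y \<cdot> (Ee b \<rhd> y) \<cdot> vinv (As (inv b) b y) \<cdot> (inv b \<lhd> \<psi>2) \<cdot> K"
    using e unfolding Phi_def K_def .
  hence "(Ee b \<rhd> y) \<cdot> vinv (As (inv b) b y) \<cdot> (inv b \<lhd> \<psi>1) \<cdot> K = (Ee b \<rhd> y) \<cdot> vinv (As (inv b) b y) \<cdot> (inv b \<lhd> \<psi>2) \<cdot> K"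
    by (rule cancel_l) (use ctx K in simp_all)
  hence "vinv (As (inv b) b y) \<cdot> (inv b \<lhd> \<psi>1) \<cdot> K = vinv (As (inv b) b y) \<cdot> (inv b \<lhd> \<psi>2) \<cdot> K"
    by (rule cancel_l) (use ctx K in simp_all)
  hence "(inv b \<lhd> \<psi>1) \<cdot> K = (inv b \<lhd> \<psi>2) \<cdot> K"
    by (rule cancel_l) (use ctx K in simp_all)
  hence "inv b \<lhd> \<psi>1 = inv b \<lhd> \<psi>2"
    by (rule cancel_r) (use ctx K in simp_all)
  thus ?thesis by (rule whisk_faithful) (use ctx in simp_all)
qed

lemma Phi3: assumes p: "\<psi> \<in> A2" "dm \<psi> = b \<diamond> x" "cd \<psi> = b \<diamond> y" shows "b \<lhd> Phi b x y \<psi> = \<psi>"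
proof -
  have t: "Phi b x y \<psi> \<in> A2" "dm (Phi b x y \<psi>) = x" "cd (Phi b x y \<psi>) = y" using Phi_typ p by auto
  have "Phi b x y (b \<lhd> Phi b x y \<psi>) = Phi b x y \<psi>" using Phi1[OF t] .
  thus ?thesis by (rule Phi_inj[rotated 6]) (use t bxy p in simp_all)
qed
end


definition psi where "psi f f' a b \<sigma> = As b (inv b) f' \<cdot> (Ii b \<rhd> f') \<cdot> iota f' \<cdot> (f' \<lhd> vinv (Ii a)) \<cdot> As f' a (inv a) \<cdot>
   (vinv \<sigma> \<rhd> inv a) \<cdot> vinv (As b f (inv a))"
definition sst where "sst f f' a b \<sigma> = Phi b (f \<diamond> inv a) (inv b \<diamond> f') (psi f f' a b \<sigma>)"

lemma psi_typ: "sq f f' a b \<sigma> \<Longrightarrow> psi f f' a b \<sigma> \<in> A2 \<and> dm (psi f f' a b \<sigma>) = b \<diamond> (f \<diamond> inv a) \<and> cd (psi f f' a b \<sigma>) = b \<diamond> (inv b \<diamond> f')"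
  unfolding psi_def sq_def by simp

lemma sst_props: assumes u: "sq f f' a b \<sigma>"
  shows "sq f' f (inv a) (inv b) (sst f f' a b \<sigma>)" "b \<lhd> sst f f' a b \<sigma> = psi f f' a b \<sigma>"
proof -
  note ctx = u[unfolded sq_def]
  have p: "psi f f' a b \<sigma> \<in> A2" "dm (psi f f' a b \<sigma>) = b \<diamond> (f \<diamond> inv a)" "cd (psi f f' a b \<sigma>) = b \<diamond> (inv b \<diamond> f')"
    using psi_typ[OF u] by auto
  have bxy: "b \<in> A1" "f \<diamond> inv a \<in> A1" "inv b \<diamond> f' \<in> A1" "sr (inv b \<diamond> f') = sr (f \<diamond> inv a)"
      "tg (inv b \<diamond> f') = tg (f \<diamond> inv a)" "tg (f \<diamond> inv a) = sr b" using ctx by simp_all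
  show "sq f' f (inv a) (inv b) (sst f f' a b \<sigma>)"
    using Phi_typ[OF bxy p] ctx unfolding sq_def sst_def by simp
  show "b \<lhd> sst f f' a b \<sigma> = psi f f' a b \<sigma>"
    unfolding sst_def by (rule Phi3[OF bxy p])
qed

lemma I_iff: assumes u: "sq f f' a b \<sigma>" and s: "sq f' f (inv a) (inv b) s"
  shows "(Sg f' f f' (inv a) (inv b) a b \<sigma> s \<cdot> (f' \<lhd> Ii a) = (Ii b \<rhd> f') \<cdot> iota f') \<longleftrightarrow> b \<lhd> s = psi f f' a b \<sigma>"
proof -
  note ctx = u[unfolded sq_def] s[unfolded sq_def]
  define K where "K = As b f (inv a) \<cdot> (\<sigma> \<rhd> inv a) \<cdot> vinv (As f' a (inv a)) \<cdot> (f' \<lhd> Ii a)"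
  have K: "K \<in> A2" "dm K = f' \<diamond> U (sr f')" "cd K = b \<diamond> (f \<diamond> inv a)" unfolding K_def using ctx by simp_all
  have vK: "vinv K = (f' \<lhd> vinv (Ii a)) \<cdot> As f' a (inv a) \<cdot> (vinv \<sigma> \<rhd> inv a) \<cdot> vinv (As b f (inv a))"
    unfolding K_def using ctx by simp
  have T: "Sg f' f f' (inv a) (inv b) a b \<sigma> s \<cdot> (f' \<lhd> Ii a) = vinv (As b (inv b) f') \<cdot> ((b \<lhd> s) \<cdot> K)"
    unfolding Sg_def K_def using ctx by simp
  have P: "psi f f' a b \<sigma> = (As b (inv b) f' \<cdot> (Ii b \<rhd> f') \<cdot> iota f') \<cdot> vinv K"
    unfolding psi_def vK using ctx by simp
  have G: "As b (inv b) f' \<cdot> (Ii b \<rhd> f') \<cdot> iota f' \<in> A2" "dm (As b (inv b) f' \<cdot> (Ii b \<rhd> f') \<cdot> iota f') = f' \<diamond> U (sr f')"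
    using ctx by simp_all
  show ?thesis
  proof
    assume e: "Sg f' f f' (inv a) (inv b) a b \<sigma> s \<cdot> (f' \<lhd> Ii a) = (Ii b \<rhd> f') \<cdot> iota f'"
    have "(b \<lhd> s) \<cdot> K = vinv (vinv (As b (inv b) f')) \<cdot> ((Ii b \<rhd> f') \<cdot> iota f')"
      by (rule mvl) (use e T ctx K in simp_all)
    hence "(b \<lhd> s) \<cdot> K = As b (inv b) f' \<cdot> (Ii b \<rhd> f') \<cdot> iota f'" using ctx by simp
    hence "b \<lhd> s = (As b (inv b) f' \<cdot> (Ii b \<rhd> f') \<cdot> iota f') \<cdot> vinv K"
      by (rule mvr) (use ctx K in simp_all)
    thus "b \<lhd> s = psi f f' a b \<sigma>" using P by simp
  next
    assume e: "b \<lhd> s = psi f f' a b \<sigma>"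
    have "Sg f' f f' (inv a) (inv b) a b \<sigma> s \<cdot> (f' \<lhd> Ii a) = vinv (As b (inv b) f') \<cdot> (((As b (inv b) f' \<cdot> (Ii b \<rhd> f') \<cdot> iota f') \<cdot> vinv K) \<cdot> K)"
      using T e P by simp
    also have "\<dots> = (Ii b \<rhd> f') \<cdot> iota f'" using ctx K G by simp
    finally show "Sg f' f f' (inv a) (inv b) a b \<sigma> s \<cdot> (f' \<lhd> Ii a) = (Ii b \<rhd> f') \<cdot> iota f'" .
  qed
qed

lemma C_I: assumes u: "sq f f' a b \<sigma>"
  shows "pc f' f' (U (sr f')) (U (tg f')) (iota f') (a \<diamond> inv a) (b \<diamond> inv b) (Sg f' f f' (inv a) (inv b) a b \<sigma> (sst f f' a b \<sigma>)) (Ii a) (Ii b)"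
proof -
  note ctx = u[unfolded sq_def]
  have e: "Sg f' f f' (inv a) (inv b) a b \<sigma> (sst f f' a b \<sigma>) \<cdot> (f' \<lhd> Ii a) = (Ii b \<rhd> f') \<cdot> iota f'"
    using I_iff[OF u sst_props(1)[OF u]] sst_props(2)[OF u] by simp
  show ?thesis
    apply (rule pcI)
    using sq_unit[of f'] sq_comp[OF sst_props(1)[OF u] u] ctx e by simp_all
qed


lemma C_E: assumes u: "sq f f' a b \<sigma>"
  shows "pc f f (inv a \<diamond> a) (inv b \<diamond> b) (Sg f f' f a b (inv a) (inv b) (sst f f' a b \<sigma>) \<sigma>) (U (sr f)) (U (tg f)) (iota f) (Ee a) (Ee b)"
proof -
  note ctx = u[unfolded sq_def]
  define s where "s = sst f f' a b \<sigma>"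
  have si: "sq f' f (inv a) (inv b) s" unfolding s_def by (rule sst_props(1)[OF u])
  note ctx2 = si[unfolded sq_def]
  have PI: "pc f' f' (U (sr f')) (U (tg f')) (iota f') (a \<diamond> inv a) (b \<diamond> inv b) (Sg f' f f' (inv a) (inv b) a b \<sigma> s) (Ii a) (Ii b)"
    unfolding s_def by (rule C_I[OF u])
  have P: "pc f f' (a \<diamond> (inv a \<diamond> a)) (b \<diamond> (inv b \<diamond> b)) (Sg f f f' (inv a \<diamond> a) (inv b \<diamond> b) a b \<sigma> (Sg f f' f a b (inv a) (inv b) s \<sigma>))
        (a \<diamond> U (sr f)) (b \<diamond> U (tg f)) (Sg f f f' (U (sr f)) (U (tg f)) a b \<sigma> (iota f))
        (vinv (Rr a) \<cdot> (L a \<cdot> ((vinv (Ii a) \<rhd> a) \<cdot> vinv (As a (inv a) a))))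
        (vinv (Rr b) \<cdot> (L b \<cdot> ((vinv (Ii b) \<rhd> b) \<cdot> vinv (As b (inv b) b))))"
    by (rule C_vc[OF C_vc[OF C_vc[OF C_vinv[OF C_asc[OF u si u]] C_rw[OF C_vinv[OF PI] u]] C_l[OF u]] C_vinv[OF C_r[OF u]]])
  have za: "a \<lhd> Ee a = vinv (Rr a) \<cdot> (L a \<cdot> ((vinv (Ii a) \<rhd> a) \<cdot> vinv (As a (inv a) a)))"
  proof -
    have "(a \<lhd> Ee a) \<cdot> As a (inv a) a \<cdot> (Ii a \<rhd> a) = vinv (Rr a) \<cdot> L a"
      by (rule mvl[OF zigzag]) (use ctx in simp_all)
    hence "a \<lhd> Ee a = (vinv (Rr a) \<cdot> L a) \<cdot> vinv (As a (inv a) a \<cdot> (Ii a \<rhd> a))"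
      by (rule mvr) (use ctx in simp_all)
    thus ?thesis using ctx by simp
  qed
  have zb: "b \<lhd> Ee b = vinv (Rr b) \<cdot> (L b \<cdot> ((vinv (Ii b) \<rhd> b) \<cdot> vinv (As b (inv b) b)))"
  proof -
    have "(b \<lhd> Ee b) \<cdot> As b (inv b) b \<cdot> (Ii b \<rhd> b) = vinv (Rr b) \<cdot> L b"
      by (rule mvl[OF zigzag]) (use ctx in simp_all)
    hence "b \<lhd> Ee b = (vinv (Rr b) \<cdot> L b) \<cdot> vinv (As b (inv b) b \<cdot> (Ii b \<rhd> b))"
      by (rule mvr) (use ctx in simp_all)
    thus ?thesis using ctx by simp
  qed
  have "pc f f (inv a \<diamond> a) (inv b \<diamond> b) (Sg f f' f a b (inv a) (inv b) s \<sigma>) (U (sr f)) (U (tg f)) (iota f) (Ee a) (Ee b)"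
    apply (rule C_lw_rev[OF u sq_comp[OF u si] sq_unit[of f]])
    using P za zb ctx by simp_all
  thus ?thesis unfolding s_def .
qed

lemma C_inv2: assumes p: "pc f f' a b \<sigma> a' b' \<sigma>' \<alpha> \<beta>"
  shows "pc f' f (inv a) (inv b) (sst f f' a b \<sigma>) (inv a') (inv b') (sst f f' a' b' \<sigma>') (iv2 \<alpha>) (iv2 \<beta>)"
proof -
  have t: "sq f f' a b \<sigma>" "sq f f' a' b' \<sigma>'" "\<alpha> \<in> A2" "dm \<alpha> = a" "cd \<alpha> = a'"
     "\<beta> \<in> A2" "dm \<beta> = b" "cd \<beta> = b'" using p unfolding pc_def by auto
  note ctx = t(1)[unfolded sq_def] t(2)[unfolded sq_def] t(3-8)
  have si: "sq f' f (inv a) (inv b) (sst f f' a b \<sigma>)" "sq f' f (inv a') (inv b') (sst f f' a' b' \<sigma>')"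
    using sst_props(1) t by auto
  have P: "pc f' f' (a \<diamond> inv a) (b \<diamond> inv b) (Sg f' f f' (inv a) (inv b) a b \<sigma> (sst f f' a b \<sigma>))
     (a \<diamond> inv a') (b \<diamond> inv b') (Sg f' f f' (inv a') (inv b') a b \<sigma> (sst f f' a' b' \<sigma>'))
     (vinv (\<alpha> \<rhd> inv a') \<cdot> (Ii a' \<cdot> vinv (Ii a))) (vinv (\<beta> \<rhd> inv b') \<cdot> (Ii b' \<cdot> vinv (Ii b)))"
    by (rule C_vc[OF C_vc[OF C_vinv[OF C_I[OF t(1)]] C_I[OF t(2)]] C_vinv[OF C_rw[OF p si(2)]]])
  have na: "a \<lhd> iv2 \<alpha> = vinv (\<alpha> \<rhd> inv a') \<cdot> (Ii a' \<cdot> vinv (Ii a))"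
  proof -
    have "(\<alpha> \<rhd> inv a') \<cdot> (a \<lhd> iv2 \<alpha>) \<cdot> Ii a = Ii a'"
      using Ii_nat[of \<alpha>] hc_split1[of \<alpha> "iv2 \<alpha>"] ctx by simp
    hence "(a \<lhd> iv2 \<alpha>) \<cdot> Ii a = vinv (\<alpha> \<rhd> inv a') \<cdot> Ii a'" by (rule mvl) (use ctx in simp_all)
    hence "a \<lhd> iv2 \<alpha> = (vinv (\<alpha> \<rhd> inv a') \<cdot> Ii a') \<cdot> vinv (Ii a)" by (rule mvr) (use ctx in simp_all)
    thus ?thesis using ctx by simp
  qed
  have nb: "b \<lhd> iv2 \<beta> = vinv (\<beta> \<rhd> inv b') \<cdot> (Ii b' \<cdot> vinv (Ii b))"
  proof -
    have "(\<beta> \<rhd> inv b') \<cdot> (b \<lhd> iv2 \<beta>) \<cdot> Ii b = Ii b'"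
      using Ii_nat[of \<beta>] hc_split1[of \<beta> "iv2 \<beta>"] ctx by simp
    hence "(b \<lhd> iv2 \<beta>) \<cdot> Ii b = vinv (\<beta> \<rhd> inv b') \<cdot> Ii b'" by (rule mvl) (use ctx in simp_all)
    hence "b \<lhd> iv2 \<beta> = (vinv (\<beta> \<rhd> inv b') \<cdot> Ii b') \<cdot> vinv (Ii b)" by (rule mvr) (use ctx in simp_all)
    thus ?thesis using ctx by simp
  qed
  show ?thesis
    apply (rule C_lw_rev[OF t(1) si])
    using P na nb ctx by simp_all
qed


definition rho where "rho f = vinv (Rr f) \<cdot> L f"

lemma rho_typ[simp]: "f \<in> A1 \<Longrightarrow> rho f \<in> A2" "f \<in> A1 \<Longrightarrow> dm (rho f) = U (tg f) \<diamond> f" "f \<in> A1 \<Longrightarrow> cd (rho f) = f \<diamond> U (sr f)"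
  unfolding rho_def by simp_all

lemma sq_R: "f \<in> A1 \<Longrightarrow> sq (U (sr f)) (U (tg f)) f f (rho f)"
  unfolding sq_def by simp

lemma C_R2: assumes al: "\<alpha> \<in> A2"
  shows "pc (U (sr (dm \<alpha>))) (U (tg (dm \<alpha>))) (dm \<alpha>) (dm \<alpha>) (rho (dm \<alpha>)) (cd \<alpha>) (cd \<alpha>) (rho (cd \<alpha>)) \<alpha> \<alpha>"
proof -
  have l: "L (cd \<alpha>) \<cdot> (U (tg (dm \<alpha>)) \<lhd> \<alpha>) = \<alpha> \<cdot> L (dm \<alpha>)" using L_nat[OF al] by simp
  have r: "(\<alpha> \<rhd> U (sr (dm \<alpha>))) \<cdot> vinv (Rr (dm \<alpha>)) = vinv (Rr (cd \<alpha>)) \<cdot> \<alpha>"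
    by (rule swap1[OF R_nat[OF al, symmetric], symmetric]) (use al in simp_all)
  have "rho (cd \<alpha>) \<cdot> (U (tg (dm \<alpha>)) \<lhd> \<alpha>) = (\<alpha> \<rhd> U (sr (dm \<alpha>))) \<cdot> rho (dm \<alpha>)"
    unfolding rho_def using al by (simp add: l cont[OF r])
  thus ?thesis using al sq_R[of "dm \<alpha>"] sq_R[of "cd \<alpha>"] by (intro pcI) simp_all
qed

lemma R_phic: assumes g: "g \<in> A1" and f: "f \<in> A1" and gf: "tg f = sr g"
  shows "Sg (U (sr f)) (U (tg f)) (U (tg g)) f f g g (rho g) (rho f) = rho (g \<diamond> f)"
proof -
  note ctx = g f gf
  have k1: "vinv (As (U (tg g)) g f) = (vinv (L g) \<rhd> f) \<cdot> L (g \<diamond> f)"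
  proof -
    have "As (U (tg g)) g f = vinv (L (g \<diamond> f)) \<cdot> (L g \<rhd> f)" by (rule mvl[OF K1]) (use ctx in simp_all)
    thus ?thesis using ctx by simp
  qed
  have w1: "(rho g \<rhd> f) \<cdot> (vinv (L g) \<rhd> f) = vinv (Rr g) \<rhd> f"
    unfolding rho_def using wr_vc[of "vinv (Rr g) \<cdot> L g" "vinv (L g)" f] ctx by simp
  have t: "As g (U (sr g)) f \<cdot> (vinv (Rr g) \<rhd> f) = g \<lhd> vinv (L f)"
  proof -
    have "As g (U (tg f)) f = vinv (g \<lhd> L f) \<cdot> (Rr g \<rhd> f)" by (rule mvl[OF triangle]) (use ctx in simp_all)
    thus ?thesis using ctx by simp
  qed
  have w2: "(g \<lhd> rho f) \<cdot> (g \<lhd> vinv (L f)) = g \<lhd> vinv (Rr f)"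
    unfolding rho_def using wl_vc[of "vinv (Rr f) \<cdot> L f" "vinv (L f)" g] ctx by simp
  have k2: "vinv (As g f (U (sr f))) \<cdot> (g \<lhd> vinv (Rr f)) = vinv (Rr (g \<diamond> f))"
  proof -
    have "vinv ((g \<lhd> Rr f) \<cdot> As g f (U (sr f))) = vinv (Rr (g \<diamond> f))" using K2[OF ctx] by simp
    thus ?thesis using ctx by simp
  qed
  have "Sg (U (sr f)) (U (tg f)) (U (tg g)) f f g g (rho g) (rho f) =
     vinv (As g f (U (sr f))) \<cdot> (g \<lhd> rho f) \<cdot> As g (U (sr g)) f \<cdot> (rho g \<rhd> f) \<cdot> (vinv (L g) \<rhd> f) \<cdot> L (g \<diamond> f)"
    unfolding Sg_def k1 using ctx by simp
  also have "\<dots> = vinv (As g f (U (sr f))) \<cdot> (g \<lhd> rho f) \<cdot> As g (U (sr g)) f \<cdot> (vinv (Rr g) \<rhd> f) \<cdot> L (g \<diamond> f)"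
    using ctx by (simp add: cont[OF w1])
  also have "\<dots> = vinv (As g f (U (sr f))) \<cdot> (g \<lhd> rho f) \<cdot> (g \<lhd> vinv (L f)) \<cdot> L (g \<diamond> f)"
    using ctx by (simp add: cont[OF t])
  also have "\<dots> = vinv (As g f (U (sr f))) \<cdot> (g \<lhd> vinv (Rr f)) \<cdot> L (g \<diamond> f)"
    using ctx by (simp add: cont[OF w2])
  also have "\<dots> = rho (g \<diamond> f)"
    unfolding rho_def using ctx by (simp add: cont[OF k2])
  finally show ?thesis .
qed

lemma R_phiu: "X \<in> obj B \<Longrightarrow> iota (U X) = rho (U X)"
  unfolding iota_def rho_def using K3 by simp

lemma R_phii: assumes f: "f \<in> A1"
  shows "sst (U (sr f)) (U (tg f)) f f (rho f) = rho (inv f)"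
proof -
  have u: "sq (U (sr f)) (U (tg f)) f f (rho f)" by (rule sq_R[OF f])
  have s: "sq (U (tg f)) (U (sr f)) (inv f) (inv f) (rho (inv f))" using sq_R[of "inv f"] f by simp
  have c: "Sg (U (tg f)) (U (sr f)) (U (tg f)) (inv f) (inv f) f f (rho f) (rho (inv f)) = rho (f \<diamond> inv f)"
    using R_phic[of f "inv f"] f by simp
  have n: "rho (f \<diamond> inv f) \<cdot> (U (tg f) \<lhd> Ii f) = (Ii f \<rhd> U (tg f)) \<cdot> rho (U (tg f))"
    using C_R2[of "Ii f"] f unfolding pc_def by simp
  have e: "Sg (U (tg f)) (U (sr f)) (U (tg f)) (inv f) (inv f) f f (rho f) (rho (inv f)) \<cdot> (U (tg f) \<lhd> Ii f) = (Ii f \<rhd> U (tg f)) \<cdot> iota (U (tg f))"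
    using c n R_phiu[of "tg f"] f by simp
  have 1: "f \<lhd> rho (inv f) = psi (U (sr f)) (U (tg f)) f f (rho f)"
    using I_iff[OF u] s e f by simp
  have 2: "f \<lhd> sst (U (sr f)) (U (tg f)) f f (rho f) = psi (U (sr f)) (U (tg f)) f f (rho f)"
    by (rule sst_props(2)[OF u])
  have t1: "sq (U (tg f)) (U (sr f)) (inv f) (inv f) (sst (U (sr f)) (U (tg f)) f f (rho f))"
    using sst_props(1)[OF u] .
  show ?thesis
    apply (rule whisk_faithful[of f])
    using 1 2 t1 s f unfolding sq_def by simp_all
qed


definition theta where "theta a b \<sigma> = Rr b \<cdot> \<sigma> \<cdot> vinv (rho a) \<cdot> vinv (Rr a)"

lemma C_eps: assumes u: "sq (U X) (U Y) a b \<sigma>" and X: "X \<in> obj B" and Y: "Y \<in> obj B"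
  shows "pc (U X) (U Y) a a (rho a) a b \<sigma> (I a) (theta a b \<sigma>)"
proof -
  note ctx = u[unfolded sq_def] X Y
  have sa: "sr a = X" "tg a = Y" "sr b = X" "tg b = Y" using ctx by simp_all
  have th: "theta a b \<sigma> \<in> A2" "dm (theta a b \<sigma>) = a" "cd (theta a b \<sigma>) = b"
    unfolding theta_def using ctx sa by simp_all
  have r: "theta a b \<sigma> \<rhd> U X = vinv (Rr b) \<cdot> theta a b \<sigma> \<cdot> Rr a"
  proof -
    have "theta a b \<sigma> \<cdot> Rr a = Rr b \<cdot> (theta a b \<sigma> \<rhd> U X)" using R_nat[OF th(1)] th sa by simp
    hence "theta a b \<sigma> \<rhd> U X = vinv (Rr b) \<cdot> (theta a b \<sigma> \<cdot> Rr a)"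
      by (rule mvl[OF sym]) (use th sa ctx in simp_all)
    thus ?thesis .
  qed
  have e: "\<sigma> \<cdot> (U Y \<lhd> I a) = (theta a b \<sigma> \<rhd> U X) \<cdot> rho a"
    unfolding r unfolding theta_def using ctx sa by simp
  show ?thesis
    apply (rule pcI)
    using sq_R[of a] u ctx sa th e by simp_all
qed

lemma C_eps_nat: assumes p: "pc (U X) (U Y) a b \<sigma> a' b' \<sigma>' \<alpha> \<beta>" and X: "X \<in> obj B" and Y: "Y \<in> obj B"
  shows "\<beta> \<cdot> theta a b \<sigma> = theta a' b' \<sigma>' \<cdot> \<alpha>"
proof -
  have t: "sq (U X) (U Y) a b \<sigma>" "sq (U X) (U Y) a' b' \<sigma>'" "\<alpha> \<in> A2" "dm \<alpha> = a" "cd \<alpha> = a'"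
     "\<beta> \<in> A2" "dm \<beta> = b" "cd \<beta> = b'" and e: "\<sigma>' \<cdot> (U Y \<lhd> \<alpha>) = (\<beta> \<rhd> U X) \<cdot> \<sigma>"
    using p unfolding pc_def by auto
  note ctx = t(1)[unfolded sq_def] t(2)[unfolded sq_def] t(3-8) X Y
  have sa: "sr a = X" "tg a = Y" "sr b = X" "tg b = Y" "sr a' = X" "tg a' = Y" "sr b' = X" "tg b' = Y" using ctx by simp_all
  have r1: "vinv (Rr a') \<cdot> \<alpha> = (\<alpha> \<rhd> U X) \<cdot> vinv (Rr a)"
    using swap1[OF R_nat[OF t(3), symmetric]] ctx sa by simp
  have c2: "rho a' \<cdot> (U Y \<lhd> \<alpha>) = (\<alpha> \<rhd> U X) \<cdot> rho a" using C_R2[OF t(3)] ctx sa unfolding pc_def by simp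
  have r2: "vinv (rho a') \<cdot> (\<alpha> \<rhd> U X) = (U Y \<lhd> \<alpha>) \<cdot> vinv (rho a)"
    using swap1[OF c2] ctx sa by simp
  have r4: "Rr b' \<cdot> (\<beta> \<rhd> U X) = \<beta> \<cdot> Rr b" using R_nat[OF t(6)] ctx sa by simp
  have "theta a' b' \<sigma>' \<cdot> \<alpha> = Rr b' \<cdot> \<sigma>' \<cdot> vinv (rho a') \<cdot> vinv (Rr a') \<cdot> \<alpha>"
    unfolding theta_def using ctx sa by simp
  also have "\<dots> = Rr b' \<cdot> \<sigma>' \<cdot> vinv (rho a') \<cdot> (\<alpha> \<rhd> U X) \<cdot> vinv (Rr a)" using r1 by simp
  also have "\<dots> = Rr b' \<cdot> \<sigma>' \<cdot> (U Y \<lhd> \<alpha>) \<cdot> vinv (rho a) \<cdot> vinv (Rr a)" using ctx sa by (simp add: cont[OF r2])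
  also have "\<dots> = Rr b' \<cdot> (\<beta> \<rhd> U X) \<cdot> \<sigma> \<cdot> vinv (rho a) \<cdot> vinv (Rr a)" using ctx sa by (simp add: cont[OF e])
  also have "\<dots> = \<beta> \<cdot> Rr b \<cdot> \<sigma> \<cdot> vinv (rho a) \<cdot> vinv (Rr a)" using ctx sa by (simp add: cont[OF r4])
  also have "\<dots> = \<beta> \<cdot> theta a b \<sigma>" unfolding theta_def using ctx sa by simp
  finally show ?thesis by simp
qed

lemma dom_st: "x \<in> A2 \<Longrightarrow> cd x = g \<Longrightarrow> sr (dm x) = sr g \<and> tg (dm x) = tg g"
  by (metis src_cod trg_cod)

definition fsig where "fsig f' b1 b2 = As b2 (inv b2) (f' \<diamond> b1) \<cdot> (Ii b2 \<rhd> (f' \<diamond> b1)) \<cdot> vinv (L (f' \<diamond> b1))"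

lemma fib_sq: "f' \<in> A1 \<Longrightarrow> b1 \<in> A1 \<Longrightarrow> b2 \<in> A1 \<Longrightarrow> tg b1 = sr f' \<Longrightarrow> tg b2 = tg f' \<Longrightarrow>
   sq (inv b2 \<diamond> (f' \<diamond> b1)) f' b1 b2 (fsig f' b1 b2)"
  unfolding sq_def fsig_def by simp

lemma fib_pc: assumes u: "sq f f' a' b' \<sigma>'" and b: "\<beta>1 \<in> A2" "cd \<beta>1 = a'" "\<beta>2 \<in> A2" "cd \<beta>2 = b'"
  shows "pc f f' (dm \<beta>1) (dm \<beta>2) (vinv (\<beta>2 \<rhd> f) \<cdot> \<sigma>' \<cdot> (f' \<lhd> \<beta>1)) a' b' \<sigma>' \<beta>1 \<beta>2"
proof -
  note ctx = u[unfolded sq_def] b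
  have s: "sr (dm \<beta>1) = sr f" "tg (dm \<beta>1) = sr f'" "sr (dm \<beta>2) = tg f" "tg (dm \<beta>2) = tg f'"
    using dom_st[OF b(1,2)] dom_st[OF b(3,4)] ctx by simp_all
  show ?thesis
    apply (rule pcI)
    using ctx s unfolding sq_def by simp_all
qed

lemma ess_sq: "f \<in> A1 \<Longrightarrow> sq f (U (sr f)) (U (sr f)) (inv f) (vinv (Ee f) \<cdot> L (U (sr f)))"
  unfolding sq_def by simp

end


abbreviation E1 :: "'a \<Rightarrow> 'o + 'a + 'c" where "E1 x \<equiv> Inr (Inl x)"
abbreviation E2 :: "'c \<Rightarrow> 'o + 'a + 'c" where "E2 x \<equiv> Inr (Inr x)"

fun g1 :: "'o + 'a + 'c \<Rightarrow> 'a" where "g1 (Inr (Inl x)) = x" | "g1 _ = undefined"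
fun g2 :: "'o + 'a + 'c \<Rightarrow> 'c" where "g2 (Inr (Inr x)) = x" | "g2 _ = undefined"

fun pF :: "('o,'a,'c) pcell \<Rightarrow> 'a" where "pF (x # xs) = g1 x" | "pF [] = undefined"
fun pF' :: "('o,'a,'c) pcell \<Rightarrow> 'a" where "pF' (x0 # x1 # xs) = g1 x1" | "pF' _ = undefined"
fun pA :: "('o,'a,'c) pcell \<Rightarrow> 'a" where "pA (x0 # x1 # x2 # xs) = g1 x2" | "pA _ = undefined"
fun pB :: "('o,'a,'c) pcell \<Rightarrow> 'a" where "pB (x0 # x1 # x2 # x3 # xs) = g1 x3" | "pB _ = undefined"
fun pS :: "('o,'a,'c) pcell \<Rightarrow> 'c" where "pS (x0 # x1 # x2 # x3 # x4 # xs) = g2 x4" | "pS _ = undefined"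
fun pA2 :: "('o,'a,'c) pcell \<Rightarrow> 'a" where "pA2 (x0 # x1 # x2 # x3 # x4 # x5 # xs) = g1 x5" | "pA2 _ = undefined"
fun pB2 :: "('o,'a,'c) pcell \<Rightarrow> 'a" where "pB2 (x0 # x1 # x2 # x3 # x4 # x5 # x6 # xs) = g1 x6" | "pB2 _ = undefined"
fun pS2 :: "('o,'a,'c) pcell \<Rightarrow> 'c" where "pS2 (x0 # x1 # x2 # x3 # x4 # x5 # x6 # x7 # xs) = g2 x7" | "pS2 _ = undefined"
fun pAl :: "('o,'a,'c) pcell \<Rightarrow> 'c" where "pAl (x0 # x1 # x2 # x3 # x4 # x5 # x6 # x7 # x8 # xs) = g2 x8" | "pAl _ = undefined"
fun pBe :: "('o,'a,'c) pcell \<Rightarrow> 'c" where "pBe (x0 # x1 # x2 # x3 # x4 # x5 # x6 # x7 # x8 # x9 # xs) = g2 x9" | "pBe _ = undefined"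

definition C1 :: "'a \<Rightarrow> 'a \<Rightarrow> 'a \<Rightarrow> 'a \<Rightarrow> 'c \<Rightarrow> ('o,'a,'c) pcell" where
  "C1 f f' a b s = [E1 f, E1 f', E1 a, E1 b, E2 s]"
definition C2 :: "'a \<Rightarrow> 'a \<Rightarrow> 'a \<Rightarrow> 'a \<Rightarrow> 'c \<Rightarrow> 'a \<Rightarrow> 'a \<Rightarrow> 'c \<Rightarrow> 'c \<Rightarrow> 'c \<Rightarrow> ('o,'a,'c) pcell" where
  "C2 f f' a b s a' b' s' al be = [E1 f, E1 f', E1 a, E1 b, E2 s, E1 a', E1 b', E2 s', E2 al, E2 be]"

lemma C1_inj[simp]: "C1 f f' a b s = C1 g g' c d t \<longleftrightarrow> f = g \<and> f' = g' \<and> a = c \<and> b = d \<and> s = t"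
  unfolding C1_def by simp
lemma C2_inj[simp]: "C2 f f' a b s a' b' s' al be = C2 g g' c d t c' d' t' al2 be2 \<longleftrightarrow>
   f = g \<and> f' = g' \<and> a = c \<and> b = d \<and> s = t \<and> a' = c' \<and> b' = d' \<and> s' = t' \<and> al = al2 \<and> be = be2"
  unfolding C2_def by simp
lemma C1_sel[simp]: "pF (C1 f f' a b s) = f" "pF' (C1 f f' a b s) = f'" "pA (C1 f f' a b s) = a"
  "pB (C1 f f' a b s) = b" "pS (C1 f f' a b s) = s" unfolding C1_def by simp_all
lemma C2_sel[simp]: "pF (C2 f f' a b s a' b' s' al be) = f" "pF' (C2 f f' a b s a' b' s' al be) = f'"
  "pA (C2 f f' a b s a' b' s' al be) = a" "pB (C2 f f' a b s a' b' s' al be) = b" "pS (C2 f f' a b s a' b' s' al be) = s"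
  "pA2 (C2 f f' a b s a' b' s' al be) = a'" "pB2 (C2 f f' a b s a' b' s' al be) = b'" "pS2 (C2 f f' a b s a' b' s' al be) = s'"
  "pAl (C2 f f' a b s a' b' s' al be) = al" "pBe (C2 f f' a b s a' b' s' al be) = be"
  unfolding C2_def by simp_all

definition d2 :: "('o,'a,'c) pcell \<Rightarrow> ('o,'a,'c) pcell" where "d2 w = C1 (pF w) (pF' w) (pA w) (pB w) (pS w)"
definition c2 :: "('o,'a,'c) pcell \<Rightarrow> ('o,'a,'c) pcell" where "c2 w = C1 (pF w) (pF' w) (pA2 w) (pB2 w) (pS2 w)"
definition M2 :: "('o,'a,'c) pcell \<Rightarrow> ('o,'a,'c) pcell \<Rightarrow> 'c \<Rightarrow> 'c \<Rightarrow> ('o,'a,'c) pcell" where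
  "M2 u v al be = C2 (pF u) (pF' u) (pA u) (pB u) (pS u) (pA v) (pB v) (pS v) al be"

lemma d2_C2[simp]: "d2 (C2 f f' a b s a' b' s' al be) = C1 f f' a b s" unfolding d2_def by simp
lemma c2_C2[simp]: "c2 (C2 f f' a b s a' b' s' al be) = C1 f f' a' b' s'" unfolding c2_def by simp
lemma M2_C1[simp]: "M2 (C1 f f' a b s) (C1 g g' a' b' s') al be = C2 f f' a b s a' b' s' al be" unfolding M2_def by simp

context bg
begin

definition hc1P :: "('o,'a,'c) pcell \<Rightarrow> ('o,'a,'c) pcell \<Rightarrow> ('o,'a,'c) pcell" where
  "hc1P v u = C1 (pF u) (pF' v) (pA v \<diamond> pA u) (pB v \<diamond> pB u) (Sg (pF u) (pF' u) (pF' v) (pA u) (pB u) (pA v) (pB v) (pS v) (pS u))"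
definition unP :: "('o,'a,'c) pcell \<Rightarrow> ('o,'a,'c) pcell" where
  "unP x = C1 (pF x) (pF x) (U (sr (pF x))) (U (tg (pF x))) (iota (pF x))"
definition invP :: "('o,'a,'c) pcell \<Rightarrow> ('o,'a,'c) pcell" where
  "invP u = C1 (pF' u) (pF u) (inv (pA u)) (inv (pB u)) (sst (pF u) (pF' u) (pA u) (pB u) (pS u))"

lemma hc1P_C1[simp]: "hc1P (C1 f' f'' a' b' t) (C1 f f0 a b s) = C1 f f'' (a' \<diamond> a) (b' \<diamond> b) (Sg f f0 f'' a b a' b' t s)"
  unfolding hc1P_def by simp
lemma unP_C[simp]: "unP [E1 f] = C1 f f (U (sr f)) (U (tg f)) (iota f)" unfolding unP_def by simp
lemma invP_C1[simp]: "invP (C1 f f' a b s) = C1 f' f (inv a) (inv b) (sst f f' a b s)" unfolding invP_def by simp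

definition PB :: "(('o,'a,'c) pcell, ('o,'a,'c) pcell, ('o,'a,'c) pcell) bigroupoid" where
  "PB = \<lparr> obj = (\<lambda>f. [E1 f]) ` A1,
    arr1 = {C1 f f' a b s | f f' a b s. sq f f' a b s},
    src1 = (\<lambda>u. [E1 (pF u)]), trg1 = (\<lambda>u. [E1 (pF' u)]),
    arr2 = {C2 f f' a b s a' b' s' al be | f f' a b s a' b' s' al be. pc f f' a b s a' b' s' al be},
    dom2 = d2, cod2 = c2,
    vcomp = (\<lambda>w' w. C2 (pF w) (pF' w) (pA w) (pB w) (pS w) (pA2 w') (pB2 w') (pS2 w') (pAl w' \<cdot> pAl w) (pBe w' \<cdot> pBe w)),
    id2 = (\<lambda>u. C2 (pF u) (pF' u) (pA u) (pB u) (pS u) (pA u) (pB u) (pS u) (I (pA u)) (I (pB u))),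
    hcomp1 = hc1P,
    hcomp2 = (\<lambda>w' w. M2 (hc1P (d2 w') (d2 w)) (hc1P (c2 w') (c2 w)) (pAl w' \<star> pAl w) (pBe w' \<star> pBe w)),
    unit1 = unP,
    inv1 = invP,
    inv2 = (\<lambda>w. M2 (invP (d2 w)) (invP (c2 w)) (iv2 (pAl w)) (iv2 (pBe w))),
    asc = (\<lambda>w v u. M2 (hc1P (hc1P w v) u) (hc1P w (hc1P v u)) (As (pA w) (pA v) (pA u)) (As (pB w) (pB v) (pB u))),
    lunit = (\<lambda>u. M2 (hc1P (unP [E1 (pF' u)]) u) u (L (pA u)) (L (pB u))),
    runit = (\<lambda>u. M2 (hc1P u (unP [E1 (pF u)])) u (Rr (pA u)) (Rr (pB u))),
    counit_e = (\<lambda>u. M2 (hc1P (invP u) u) (unP [E1 (pF u)]) (Ee (pA u)) (Ee (pB u))),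
    unit_i = (\<lambda>u. M2 (unP [E1 (pF' u)]) (hc1P u (invP u)) (Ii (pA u)) (Ii (pB u))) \<rparr>"

lemma PB_sel[simp]: "obj PB = (\<lambda>f. [E1 f]) ` A1" "arr1 PB = {C1 f f' a b s | f f' a b s. sq f f' a b s}"
  "src1 PB = (\<lambda>u. [E1 (pF u)])" "trg1 PB = (\<lambda>u. [E1 (pF' u)])"
  "arr2 PB = {C2 f f' a b s a' b' s' al be | f f' a b s a' b' s' al be. pc f f' a b s a' b' s' al be}"
  "dom2 PB = d2" "cod2 PB = c2" "hcomp1 PB = hc1P" "unit1 PB = unP" "inv1 PB = invP"
  unfolding PB_def by simp_all

lemma PB_fields[simp]:
  "vcomp PB w' w = C2 (pF w) (pF' w) (pA w) (pB w) (pS w) (pA2 w') (pB2 w') (pS2 w') (pAl w' \<cdot> pAl w) (pBe w' \<cdot> pBe w)"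
  "id2 PB u = C2 (pF u) (pF' u) (pA u) (pB u) (pS u) (pA u) (pB u) (pS u) (I (pA u)) (I (pB u))"
  "hcomp2 PB w' w = M2 (hc1P (d2 w') (d2 w)) (hc1P (c2 w') (c2 w)) (pAl w' \<star> pAl w) (pBe w' \<star> pBe w)"
  "inv2 PB w = M2 (invP (d2 w)) (invP (c2 w)) (iv2 (pAl w)) (iv2 (pBe w))"
  "asc PB w v u = M2 (hc1P (hc1P w v) u) (hc1P w (hc1P v u)) (As (pA w) (pA v) (pA u)) (As (pB w) (pB v) (pB u))"
  "lunit PB u = M2 (hc1P (unP [E1 (pF' u)]) u) u (L (pA u)) (L (pB u))"
  "runit PB u = M2 (hc1P u (unP [E1 (pF u)])) u (Rr (pA u)) (Rr (pB u))"
  "counit_e PB u = M2 (hc1P (invP u) u) (unP [E1 (pF u)]) (Ee (pA u)) (Ee (pB u))"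
  "unit_i PB u = M2 (unP [E1 (pF' u)]) (hc1P u (invP u)) (Ii (pA u)) (Ii (pB u))"
  unfolding PB_def by simp_all

lemma arr1_mem[simp]: "C1 f f' a b s \<in> arr1 PB \<longleftrightarrow> sq f f' a b s" by auto
lemma arr2_mem[simp]: "C2 f f' a b s a' b' s' al be \<in> arr2 PB \<longleftrightarrow> pc f f' a b s a' b' s' al be" by auto
lemma obj_mem[simp]: "[E1 f] \<in> obj PB \<longleftrightarrow> f \<in> A1" by auto
lemma arr1E[elim!]: "u \<in> arr1 PB \<Longrightarrow> (\<And>f f' a b s. u = C1 f f' a b s \<Longrightarrow> sq f f' a b s \<Longrightarrow> P) \<Longrightarrow> P" by auto
lemma arr2E[elim!]: "w \<in> arr2 PB \<Longrightarrow> (\<And>f f' a b s a' b' s' al be. w = C2 f f' a b s a' b' s' al be \<Longrightarrow> pc f f' a b s a' b' s' al be \<Longrightarrow> P) \<Longrightarrow> P" by auto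
lemma objE[elim!]: "x \<in> obj PB \<Longrightarrow> (\<And>f. x = [E1 f] \<Longrightarrow> f \<in> A1 \<Longrightarrow> P) \<Longrightarrow> P" by auto
lemma C1_src_trg[simp]: "[E1 f] = [E1 g] \<longleftrightarrow> f = g" by simp

end


context bg
begin

lemma triangle2: "f \<in> A1 \<Longrightarrow> g \<in> A1 \<Longrightarrow> tg f = sr g \<Longrightarrow> tg f = X \<Longrightarrow> (g \<lhd> L f) \<cdot> As g (U X) f = Rr g \<rhd> f"
  using triangle by blast

lemma PBax1: "(\<forall>f\<in>arr1 PB. src1 PB f \<in> obj PB \<and> trg1 PB f \<in> obj PB)"
  by (auto simp: sq_def)

lemma PBax2: "(\<forall>\<alpha>\<in>arr2 PB. dom2 PB \<alpha> \<in> arr1 PB \<and> cod2 PB \<alpha> \<in> arr1 PB \<and>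
        src1 PB (dom2 PB \<alpha>) = src1 PB (cod2 PB \<alpha>) \<and> trg1 PB (dom2 PB \<alpha>) = trg1 PB (cod2 PB \<alpha>))"
  by (auto simp: pc_def)

lemma PBax3: "(\<forall>f\<in>arr1 PB. cell2 PB f f (id2 PB f))"
  by (auto simp: cell2_def intro: C_id)

lemma PBax4: "(\<forall>\<alpha>\<in>arr2 PB. \<forall>\<beta>\<in>arr2 PB. cod2 PB \<alpha> = dom2 PB \<beta> \<longrightarrow>
        cell2 PB (dom2 PB \<alpha>) (cod2 PB \<beta>) (vcomp PB \<beta> \<alpha>))"
  by (auto simp: cell2_def intro: C_vc)

lemma PBax5: "(\<forall>\<alpha>\<in>arr2 PB. vcomp PB \<alpha> (id2 PB (dom2 PB \<alpha>)) = \<alpha> \<and> vcomp PB (id2 PB (cod2 PB \<alpha>)) \<alpha> = \<alpha>)"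
  by (auto simp: pc_def)

lemma PBax6: "(\<forall>\<alpha>\<in>arr2 PB. \<forall>\<beta>\<in>arr2 PB. \<forall>\<gamma>\<in>arr2 PB. cod2 PB \<alpha> = dom2 PB \<beta> \<and> cod2 PB \<beta> = dom2 PB \<gamma> \<longrightarrow>
        vcomp PB \<gamma> (vcomp PB \<beta> \<alpha>) = vcomp PB (vcomp PB \<gamma> \<beta>) \<alpha>)"
  by (auto simp: pc_def)

lemma PBax7: "(\<forall>\<alpha>\<in>arr2 PB. \<exists>\<beta>\<in>arr2 PB. dom2 PB \<beta> = cod2 PB \<alpha> \<and> cod2 PB \<beta> = dom2 PB \<alpha> \<and>
        vcomp PB \<beta> \<alpha> = id2 PB (dom2 PB \<alpha>) \<and> vcomp PB \<alpha> \<beta> = id2 PB (cod2 PB \<alpha>))"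
  apply (intro ballI)
  apply (erule arr2E)
  subgoal for w f f' a b s a' b' s' al be
    apply (frule C_vinv)
    apply (rule bexI[where x="C2 f f' a' b' s' a b s (vinv al) (vinv be)"])
    by (auto simp: pc_def)
  done

lemma PBax8: "(\<forall>f\<in>arr1 PB. \<forall>g\<in>arr1 PB. trg1 PB f = src1 PB g \<longrightarrow>
        hom1 PB (src1 PB f) (trg1 PB g) (hcomp1 PB g f))"
  by (auto simp: hom1_def intro: sq_comp)

lemma PBax9: "(\<forall>\<alpha>\<in>arr2 PB. \<forall>\<beta>\<in>arr2 PB. trg1 PB (dom2 PB \<alpha>) = src1 PB (dom2 PB \<beta>) \<longrightarrow>
        cell2 PB (hcomp1 PB (dom2 PB \<beta>) (dom2 PB \<alpha>)) (hcomp1 PB (cod2 PB \<beta>) (cod2 PB \<alpha>)) (hcomp2 PB \<beta> \<alpha>))"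
  by (auto simp: cell2_def intro: C_hc)

lemma PBax10: "(\<forall>f\<in>arr1 PB. \<forall>g\<in>arr1 PB. trg1 PB f = src1 PB g \<longrightarrow>
        hcomp2 PB (id2 PB g) (id2 PB f) = id2 PB (hcomp1 PB g f))"
  by (auto simp: sq_def)

lemma PBax11: "(\<forall>\<alpha>\<in>arr2 PB. \<forall>\<alpha>'\<in>arr2 PB. \<forall>\<beta>\<in>arr2 PB. \<forall>\<beta>'\<in>arr2 PB.
        cod2 PB \<alpha> = dom2 PB \<alpha>' \<and> cod2 PB \<beta> = dom2 PB \<beta>' \<and> trg1 PB (dom2 PB \<alpha>) = src1 PB (dom2 PB \<beta>) \<longrightarrow>
        hcomp2 PB (vcomp PB \<beta>' \<beta>) (vcomp PB \<alpha>' \<alpha>) = vcomp PB (hcomp2 PB \<beta>' \<alpha>') (hcomp2 PB \<beta> \<alpha>))"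
  by (auto simp: pc_def sq_def interchange)

lemma PBax12: "(\<forall>X\<in>obj PB. hom1 PB X X (unit1 PB X))"
  by (auto intro: sq_unit simp: hom1_def)

lemma PBax13: "(\<forall>f\<in>arr1 PB. hom1 PB (trg1 PB f) (src1 PB f) (inv1 PB f))"
  by (auto simp: hom1_def intro: sst_props(1))

lemma PBax14: "(\<forall>\<alpha>\<in>arr2 PB. cell2 PB (inv1 PB (dom2 PB \<alpha>)) (inv1 PB (cod2 PB \<alpha>)) (inv2 PB \<alpha>))"
  by (auto simp: cell2_def intro: C_inv2)

lemma PBax15: "(\<forall>f\<in>arr1 PB. inv2 PB (id2 PB f) = id2 PB (inv1 PB f))"
  by (auto simp: sq_def)

lemma PBax16: "(\<forall>\<alpha>\<in>arr2 PB. \<forall>\<beta>\<in>arr2 PB. cod2 PB \<alpha> = dom2 PB \<beta> \<longrightarrow>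
        inv2 PB (vcomp PB \<beta> \<alpha>) = vcomp PB (inv2 PB \<beta>) (inv2 PB \<alpha>))"
  by (auto simp: pc_def)

lemma PBax17: "(\<forall>f\<in>arr1 PB. \<forall>g\<in>arr1 PB. \<forall>h\<in>arr1 PB. trg1 PB f = src1 PB g \<and> trg1 PB g = src1 PB h \<longrightarrow>
        cell2 PB (hcomp1 PB (hcomp1 PB h g) f) (hcomp1 PB h (hcomp1 PB g f)) (asc PB h g f))"
  by (auto simp: cell2_def intro: C_asc)

lemma PBax18: "(\<forall>\<alpha>\<in>arr2 PB. \<forall>\<beta>\<in>arr2 PB. \<forall>\<gamma>\<in>arr2 PB.
        trg1 PB (dom2 PB \<alpha>) = src1 PB (dom2 PB \<beta>) \<and> trg1 PB (dom2 PB \<beta>) = src1 PB (dom2 PB \<gamma>) \<longrightarrow>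
        vcomp PB (asc PB (cod2 PB \<gamma>) (cod2 PB \<beta>) (cod2 PB \<alpha>)) (hcomp2 PB (hcomp2 PB \<gamma> \<beta>) \<alpha>) =
        vcomp PB (hcomp2 PB \<gamma> (hcomp2 PB \<beta> \<alpha>)) (asc PB (dom2 PB \<gamma>) (dom2 PB \<beta>) (dom2 PB \<alpha>)))"
  by (auto simp: pc_def sq_def As_nat)

lemma PBax19: "(\<forall>f\<in>arr1 PB. cell2 PB (hcomp1 PB (unit1 PB (trg1 PB f)) f) f (lunit PB f))"
  by (auto simp: cell2_def intro: C_l)

lemma PBax20: "(\<forall>\<alpha>\<in>arr2 PB. vcomp PB \<alpha> (lunit PB (dom2 PB \<alpha>)) =
        vcomp PB (lunit PB (cod2 PB \<alpha>)) (hcomp2 PB (id2 PB (unit1 PB (trg1 PB (dom2 PB \<alpha>)))) \<alpha>))"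
  by (auto simp: pc_def sq_def L_nat)

lemma PBax21: "(\<forall>f\<in>arr1 PB. cell2 PB (hcomp1 PB f (unit1 PB (src1 PB f))) f (runit PB f))"
  by (auto simp: cell2_def intro: C_r)

lemma PBax22: "(\<forall>\<alpha>\<in>arr2 PB. vcomp PB \<alpha> (runit PB (dom2 PB \<alpha>)) =
        vcomp PB (runit PB (cod2 PB \<alpha>)) (hcomp2 PB \<alpha> (id2 PB (unit1 PB (src1 PB (dom2 PB \<alpha>))))))"
  by (auto simp: pc_def sq_def R_nat)

lemma PBax23: "(\<forall>f\<in>arr1 PB. cell2 PB (hcomp1 PB (inv1 PB f) f) (unit1 PB (src1 PB f)) (counit_e PB f))"
  by (auto simp: cell2_def intro: C_E)

lemma PBax24: "(\<forall>\<alpha>\<in>arr2 PB. vcomp PB (counit_e PB (cod2 PB \<alpha>)) (hcomp2 PB (inv2 PB \<alpha>) \<alpha>) = counit_e PB (dom2 PB \<alpha>))"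
  by (auto simp: pc_def sq_def E_nat)

lemma PBax25: "(\<forall>f\<in>arr1 PB. cell2 PB (unit1 PB (trg1 PB f)) (hcomp1 PB f (inv1 PB f)) (unit_i PB f))"
  by (auto simp: cell2_def intro: C_I)

lemma PBax26: "(\<forall>\<alpha>\<in>arr2 PB. vcomp PB (hcomp2 PB \<alpha> (inv2 PB \<alpha>)) (unit_i PB (dom2 PB \<alpha>)) = unit_i PB (cod2 PB \<alpha>))"
  by (auto simp: pc_def sq_def Ii_nat)

lemma PBax27: "(\<forall>f\<in>arr1 PB. \<forall>g\<in>arr1 PB. \<forall>h\<in>arr1 PB. \<forall>k\<in>arr1 PB.
        trg1 PB f = src1 PB g \<and> trg1 PB g = src1 PB h \<and> trg1 PB h = src1 PB k \<longrightarrow>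
        vcomp PB (asc PB k h (hcomp1 PB g f)) (asc PB (hcomp1 PB k h) g f) =
        vcomp PB (hcomp2 PB (id2 PB k) (asc PB h g f))
          (vcomp PB (asc PB k (hcomp1 PB h g) f) (hcomp2 PB (asc PB k h g) (id2 PB f))))"
  by (auto simp: sq_def pentagon)

lemma PBax28: "(\<forall>f\<in>arr1 PB. \<forall>g\<in>arr1 PB. trg1 PB f = src1 PB g \<longrightarrow>
        vcomp PB (hcomp2 PB (id2 PB g) (lunit PB f)) (asc PB g (unit1 PB (trg1 PB f)) f) =
        hcomp2 PB (runit PB g) (id2 PB f))"
  by (auto simp: sq_def triangle2)

lemma PBax29: "(\<forall>f\<in>arr1 PB.
        vcomp PB (runit PB f) (vcomp PB (hcomp2 PB (id2 PB f) (counit_e PB f))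
          (vcomp PB (asc PB f (inv1 PB f) f) (hcomp2 PB (unit_i PB f) (id2 PB f)))) = lunit PB f)"
  by (auto simp: sq_def zigzag)

lemma PB_bg: "bigroupoid PB"
  unfolding bigroupoid_def by (intro conjI) (fact PBax1 PBax2 PBax3 PBax4 PBax5 PBax6 PBax7 PBax8 PBax9 PBax10 PBax11 PBax12 PBax13 PBax14 PBax15 PBax16 PBax17 PBax18 PBax19 PBax20 PBax21 PBax22 PBax23 PBax24 PBax25 PBax26 PBax27 PBax28 PBax29)+

end


context bg
begin

definition Rm :: "('o,'a,'c,('o,'a,'c) pcell,('o,'a,'c) pcell,('o,'a,'c) pcell) bgmorph" where
  "Rm = \<lparr> fobj = (\<lambda>X. [E1 (U X)]), fone = (\<lambda>f. C1 (U (sr f)) (U (tg f)) f f (rho f)),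
    ftwo = (\<lambda>\<alpha>. C2 (U (sr (dm \<alpha>))) (U (tg (dm \<alpha>))) (dm \<alpha>) (dm \<alpha>) (rho (dm \<alpha>)) (cd \<alpha>) (cd \<alpha>) (rho (cd \<alpha>)) \<alpha> \<alpha>),
    phic = (\<lambda>g f. C2 (U (sr f)) (U (tg g)) (g \<diamond> f) (g \<diamond> f) (Sg (U (sr f)) (U (tg f)) (U (tg g)) f f g g (rho g) (rho f))
                 (g \<diamond> f) (g \<diamond> f) (rho (g \<diamond> f)) (I (g \<diamond> f)) (I (g \<diamond> f))),
    phiu = (\<lambda>X. C2 (U X) (U X) (U (sr (U X))) (U (tg (U X))) (iota (U X)) (U X) (U X) (rho (U X)) (I (U X)) (I (U X))),
    phii = (\<lambda>f. C2 (U (tg f)) (U (sr f)) (inv f) (inv f) (sst (U (sr f)) (U (tg f)) f f (rho f)) (inv f) (inv f) (rho (inv f))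
                 (I (inv f)) (I (inv f))) \<rparr>"

lemma Rm_sel[simp]: "fobj Rm X = [E1 (U X)]" "fone Rm f = C1 (U (sr f)) (U (tg f)) f f (rho f)"
  "ftwo Rm \<alpha> = C2 (U (sr (dm \<alpha>))) (U (tg (dm \<alpha>))) (dm \<alpha>) (dm \<alpha>) (rho (dm \<alpha>)) (cd \<alpha>) (cd \<alpha>) (rho (cd \<alpha>)) \<alpha> \<alpha>"
  "phic Rm g f = C2 (U (sr f)) (U (tg g)) (g \<diamond> f) (g \<diamond> f) (Sg (U (sr f)) (U (tg f)) (U (tg g)) f f g g (rho g) (rho f))
                 (g \<diamond> f) (g \<diamond> f) (rho (g \<diamond> f)) (I (g \<diamond> f)) (I (g \<diamond> f))"
  "phiu Rm X = C2 (U X) (U X) (U (sr (U X))) (U (tg (U X))) (iota (U X)) (U X) (U X) (rho (U X)) (I (U X)) (I (U X))"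
  "phii Rm f = C2 (U (tg f)) (U (sr f)) (inv f) (inv f) (sst (U (sr f)) (U (tg f)) f f (rho f)) (inv f) (inv f) (rho (inv f))
                 (I (inv f)) (I (inv f))"
  unfolding Rm_def by simp_all

definition Pm :: "(('o,'a,'c) pcell,('o,'a,'c) pcell,('o,'a,'c) pcell,'o\<times>'o,'a\<times>'a,'c\<times>'c) bgmorph" where
  "Pm = \<lparr> fobj = (\<lambda>x. (sr (pF x), tg (pF x))), fone = (\<lambda>u. (pA u, pB u)), ftwo = (\<lambda>w. (pAl w, pBe w)),
    phic = (\<lambda>v u. (I (pA v \<diamond> pA u), I (pB v \<diamond> pB u))),
    phiu = (\<lambda>x. (I (U (sr (pF x))), I (U (tg (pF x))))),
    phii = (\<lambda>u. (I (inv (pA u)), I (inv (pB u)))) \<rparr>"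

lemma Pm_sel[simp]: "fobj Pm x = (sr (pF x), tg (pF x))" "fone Pm u = (pA u, pB u)" "ftwo Pm w = (pAl w, pBe w)"
  "phic Pm v u = (I (pA v \<diamond> pA u), I (pB v \<diamond> pB u))" "phiu Pm x = (I (U (sr (pF x))), I (U (tg (pF x))))"
  "phii Pm u = (I (inv (pA u)), I (inv (pB u)))"
  unfolding Pm_def by simp_all

lemma R_phic': "g \<in> A1 \<Longrightarrow> f \<in> A1 \<Longrightarrow> tg f = sr g \<Longrightarrow> Sg (U (sr f)) (U (sr g)) (U (tg g)) f f g g (rho g) (rho f) = rho (g \<diamond> f)"
  using R_phic by simp

lemma sq_R': "f \<in> A1 \<Longrightarrow> X = sr f \<Longrightarrow> Y = tg f \<Longrightarrow> sq (U X) (U Y) f f (rho f)"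
  using sq_R by simp

lemma prod_sel[simp]:
  "obj (prod_bg A C) = obj A \<times> obj C" "arr1 (prod_bg A C) = arr1 A \<times> arr1 C"
  "src1 (prod_bg A C) = (\<lambda>f. (src1 A (fst f), src1 C (snd f)))" "trg1 (prod_bg A C) = (\<lambda>f. (trg1 A (fst f), trg1 C (snd f)))"
  "arr2 (prod_bg A C) = arr2 A \<times> arr2 C"
  "dom2 (prod_bg A C) = (\<lambda>x. (dom2 A (fst x), dom2 C (snd x)))" "cod2 (prod_bg A C) = (\<lambda>x. (cod2 A (fst x), cod2 C (snd x)))"
  "vcomp (prod_bg A C) = (\<lambda>y x. (vcomp A (fst y) (fst x), vcomp C (snd y) (snd x)))"
  "id2 (prod_bg A C) = (\<lambda>f. (id2 A (fst f), id2 C (snd f)))"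
  "hcomp1 (prod_bg A C) = (\<lambda>g f. (hcomp1 A (fst g) (fst f), hcomp1 C (snd g) (snd f)))"
  "hcomp2 (prod_bg A C) = (\<lambda>y x. (hcomp2 A (fst y) (fst x), hcomp2 C (snd y) (snd x)))"
  "unit1 (prod_bg A C) = (\<lambda>X. (unit1 A (fst X), unit1 C (snd X)))"
  "inv1 (prod_bg A C) = (\<lambda>f. (inv1 A (fst f), inv1 C (snd f)))"
  "inv2 (prod_bg A C) = (\<lambda>x. (inv2 A (fst x), inv2 C (snd x)))"
  "asc (prod_bg A C) = (\<lambda>h g f. (asc A (fst h) (fst g) (fst f), asc C (snd h) (snd g) (snd f)))"
  "lunit (prod_bg A C) = (\<lambda>f. (lunit A (fst f), lunit C (snd f)))"
  "runit (prod_bg A C) = (\<lambda>f. (runit A (fst f), runit C (snd f)))"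
  "counit_e (prod_bg A C) = (\<lambda>f. (counit_e A (fst f), counit_e C (snd f)))"
  "unit_i (prod_bg A C) = (\<lambda>f. (unit_i A (fst f), unit_i C (snd f)))"
  unfolding prod_bg_def by simp_all


lemma Rax1: "(\<forall>X\<in>obj B. fobj Rm X \<in> obj PB)"
  by simp

lemma Rax2: "(\<forall>f\<in>arr1 B. hom1 PB (fobj Rm (src1 B f)) (fobj Rm (trg1 B f)) (fone Rm f))"
  by (simp add: hom1_def sq_R)

lemma Rax3: "(\<forall>\<alpha>\<in>arr2 B. cell2 PB (fone Rm (dom2 B \<alpha>)) (fone Rm (cod2 B \<alpha>)) (ftwo Rm \<alpha>))"
  using C_R2 by (simp add: cell2_def)

lemma Rax4: "(\<forall>f\<in>arr1 B. ftwo Rm (id2 B f) = id2 PB (fone Rm f))"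
  by simp

lemma Rax5: "(\<forall>\<alpha>\<in>arr2 B. \<forall>\<beta>\<in>arr2 B. cod2 B \<alpha> = dom2 B \<beta> \<longrightarrow>
        ftwo Rm (vcomp B \<beta> \<alpha>) = vcomp PB (ftwo Rm \<beta>) (ftwo Rm \<alpha>))"
  by simp

lemma Rax6: "(\<forall>f\<in>arr1 B. \<forall>g\<in>arr1 B. trg1 B f = src1 B g \<longrightarrow>
        cell2 PB (hcomp1 PB (fone Rm g) (fone Rm f)) (fone Rm (hcomp1 B g f)) (phic Rm g f))"
  by (auto simp: cell2_def hom1_def R_phic' intro!: C_id sq_R')

lemma Rax7: "(\<forall>\<alpha>\<in>arr2 B. \<forall>\<beta>\<in>arr2 B. trg1 B (dom2 B \<alpha>) = src1 B (dom2 B \<beta>) \<longrightarrow>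
        vcomp PB (ftwo Rm (hcomp2 B \<beta> \<alpha>)) (phic Rm (dom2 B \<beta>) (dom2 B \<alpha>)) =
        vcomp PB (phic Rm (cod2 B \<beta>) (cod2 B \<alpha>)) (hcomp2 PB (ftwo Rm \<beta>) (ftwo Rm \<alpha>)))"
  by (auto simp: hom1_def cell2_def)

lemma Rax8: "(\<forall>X\<in>obj B. cell2 PB (unit1 PB (fobj Rm X)) (fone Rm (unit1 B X)) (phiu Rm X))"
  by (auto simp: cell2_def R_phiu intro!: C_id sq_R')

lemma Rax9: "(\<forall>f\<in>arr1 B. cell2 PB (inv1 PB (fone Rm f)) (fone Rm (inv1 B f)) (phii Rm f))"
  by (auto simp: cell2_def R_phii intro!: C_id sq_R')

lemma Rax10: "(\<forall>\<alpha>\<in>arr2 B. vcomp PB (ftwo Rm (inv2 B \<alpha>)) (phii Rm (dom2 B \<alpha>)) =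
        vcomp PB (phii Rm (cod2 B \<alpha>)) (inv2 PB (ftwo Rm \<alpha>)))"
  by simp

lemma Rax11: "(\<forall>f\<in>arr1 B. \<forall>g\<in>arr1 B. \<forall>h\<in>arr1 B. trg1 B f = src1 B g \<and> trg1 B g = src1 B h \<longrightarrow>
        vcomp PB (ftwo Rm (asc B h g f))
          (vcomp PB (phic Rm (hcomp1 B h g) f) (hcomp2 PB (phic Rm h g) (id2 PB (fone Rm f)))) =
        vcomp PB (phic Rm h (hcomp1 B g f))
          (vcomp PB (hcomp2 PB (id2 PB (fone Rm h)) (phic Rm g f)) (asc PB (fone Rm h) (fone Rm g) (fone Rm f))))"
  by simp

lemma Rax12: "(\<forall>f\<in>arr1 B.
        vcomp PB (ftwo Rm (runit B f))
          (vcomp PB (phic Rm f (unit1 B (src1 B f))) (hcomp2 PB (id2 PB (fone Rm f)) (phiu Rm (src1 B f)))) =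
        runit PB (fone Rm f))"
  by simp

lemma Rax13: "(\<forall>f\<in>arr1 B.
        vcomp PB (ftwo Rm (lunit B f))
          (vcomp PB (phic Rm (unit1 B (trg1 B f)) f) (hcomp2 PB (phiu Rm (trg1 B f)) (id2 PB (fone Rm f)))) =
        lunit PB (fone Rm f))"
  by simp

lemma Rax14: "(\<forall>f\<in>arr1 B.
        vcomp PB (ftwo Rm (counit_e B f))
          (vcomp PB (phic Rm (inv1 B f) f) (hcomp2 PB (phii Rm f) (id2 PB (fone Rm f)))) =
        vcomp PB (phiu Rm (src1 B f)) (counit_e PB (fone Rm f)))"
  by simp

lemma Rax15: "(\<forall>f\<in>arr1 B.
        vcomp PB (ftwo Rm (unit_i B f)) (phiu Rm (trg1 B f)) =
        vcomp PB (phic Rm f (inv1 B f))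
          (vcomp PB (hcomp2 PB (id2 PB (fone Rm f)) (phii Rm f)) (unit_i PB (fone Rm f))))"
  by simp

lemma Rm_morph: "bgmorphism B PB Rm"
  unfolding bgmorphism_def by (intro conjI) (fact Rax1 Rax2 Rax3 Rax4 Rax5 Rax6 Rax7 Rax8 Rax9 Rax10 Rax11 Rax12 Rax13 Rax14 Rax15)+

lemma Pax1: "(\<forall>X\<in>obj PB. fobj Pm X \<in> obj (prod_bg B B))"
  by (auto simp: pc_def sq_def cell2_def hom1_def)

lemma Pax2: "(\<forall>f\<in>arr1 PB. hom1 (prod_bg B B) (fobj Pm (src1 PB f)) (fobj Pm (trg1 PB f)) (fone Pm f))"
  by (auto simp: pc_def sq_def cell2_def hom1_def)

lemma Pax3: "(\<forall>\<alpha>\<in>arr2 PB. cell2 (prod_bg B B) (fone Pm (dom2 PB \<alpha>)) (fone Pm (cod2 PB \<alpha>)) (ftwo Pm \<alpha>))"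
  by (auto simp: pc_def sq_def cell2_def hom1_def)

lemma Pax4: "(\<forall>f\<in>arr1 PB. ftwo Pm (id2 PB f) = id2 (prod_bg B B) (fone Pm f))"
  by (auto simp: pc_def sq_def cell2_def hom1_def)

lemma Pax5: "(\<forall>\<alpha>\<in>arr2 PB. \<forall>\<beta>\<in>arr2 PB. cod2 PB \<alpha> = dom2 PB \<beta> \<longrightarrow>
        ftwo Pm (vcomp PB \<beta> \<alpha>) = vcomp (prod_bg B B) (ftwo Pm \<beta>) (ftwo Pm \<alpha>))"
  by (auto simp: pc_def sq_def cell2_def hom1_def)

lemma Pax6: "(\<forall>f\<in>arr1 PB. \<forall>g\<in>arr1 PB. trg1 PB f = src1 PB g \<longrightarrow>
        cell2 (prod_bg B B) (hcomp1 (prod_bg B B) (fone Pm g) (fone Pm f)) (fone Pm (hcomp1 PB g f)) (phic Pm g f))"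
  by (auto simp: pc_def sq_def cell2_def hom1_def)

lemma Pax7: "(\<forall>\<alpha>\<in>arr2 PB. \<forall>\<beta>\<in>arr2 PB. trg1 PB (dom2 PB \<alpha>) = src1 PB (dom2 PB \<beta>) \<longrightarrow>
        vcomp (prod_bg B B) (ftwo Pm (hcomp2 PB \<beta> \<alpha>)) (phic Pm (dom2 PB \<beta>) (dom2 PB \<alpha>)) =
        vcomp (prod_bg B B) (phic Pm (cod2 PB \<beta>) (cod2 PB \<alpha>)) (hcomp2 (prod_bg B B) (ftwo Pm \<beta>) (ftwo Pm \<alpha>)))"
  by (auto simp: pc_def sq_def cell2_def hom1_def)

lemma Pax8: "(\<forall>X\<in>obj PB. cell2 (prod_bg B B) (unit1 (prod_bg B B) (fobj Pm X)) (fone Pm (unit1 PB X)) (phiu Pm X))"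
  by (auto simp: pc_def sq_def cell2_def hom1_def)

lemma Pax9: "(\<forall>f\<in>arr1 PB. cell2 (prod_bg B B) (inv1 (prod_bg B B) (fone Pm f)) (fone Pm (inv1 PB f)) (phii Pm f))"
  by (auto simp: pc_def sq_def cell2_def hom1_def)

lemma Pax10: "(\<forall>\<alpha>\<in>arr2 PB. vcomp (prod_bg B B) (ftwo Pm (inv2 PB \<alpha>)) (phii Pm (dom2 PB \<alpha>)) =
        vcomp (prod_bg B B) (phii Pm (cod2 PB \<alpha>)) (inv2 (prod_bg B B) (ftwo Pm \<alpha>)))"
  by (auto simp: pc_def sq_def cell2_def hom1_def)

lemma Pax11: "(\<forall>f\<in>arr1 PB. \<forall>g\<in>arr1 PB. \<forall>h\<in>arr1 PB. trg1 PB f = src1 PB g \<and> trg1 PB g = src1 PB h \<longrightarrow>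
        vcomp (prod_bg B B) (ftwo Pm (asc PB h g f))
          (vcomp (prod_bg B B) (phic Pm (hcomp1 PB h g) f) (hcomp2 (prod_bg B B) (phic Pm h g) (id2 (prod_bg B B) (fone Pm f)))) =
        vcomp (prod_bg B B) (phic Pm h (hcomp1 PB g f))
          (vcomp (prod_bg B B) (hcomp2 (prod_bg B B) (id2 (prod_bg B B) (fone Pm h)) (phic Pm g f)) (asc (prod_bg B B) (fone Pm h) (fone Pm g) (fone Pm f))))"
  by (auto simp: pc_def sq_def cell2_def hom1_def)

lemma Pax12: "(\<forall>f\<in>arr1 PB.
        vcomp (prod_bg B B) (ftwo Pm (runit PB f))
          (vcomp (prod_bg B B) (phic Pm f (unit1 PB (src1 PB f))) (hcomp2 (prod_bg B B) (id2 (prod_bg B B) (fone Pm f)) (phiu Pm (src1 PB f)))) =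
        runit (prod_bg B B) (fone Pm f))"
  by (auto simp: pc_def sq_def cell2_def hom1_def)

lemma Pax13: "(\<forall>f\<in>arr1 PB.
        vcomp (prod_bg B B) (ftwo Pm (lunit PB f))
          (vcomp (prod_bg B B) (phic Pm (unit1 PB (trg1 PB f)) f) (hcomp2 (prod_bg B B) (phiu Pm (trg1 PB f)) (id2 (prod_bg B B) (fone Pm f)))) =
        lunit (prod_bg B B) (fone Pm f))"
  by (auto simp: pc_def sq_def cell2_def hom1_def)

lemma Pax14: "(\<forall>f\<in>arr1 PB.
        vcomp (prod_bg B B) (ftwo Pm (counit_e PB f))
          (vcomp (prod_bg B B) (phic Pm (inv1 PB f) f) (hcomp2 (prod_bg B B) (phii Pm f) (id2 (prod_bg B B) (fone Pm f)))) =
        vcomp (prod_bg B B) (phiu Pm (src1 PB f)) (counit_e (prod_bg B B) (fone Pm f)))"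
  by (auto simp: pc_def sq_def cell2_def hom1_def)

lemma Pax15: "(\<forall>f\<in>arr1 PB.
        vcomp (prod_bg B B) (ftwo Pm (unit_i PB f)) (phiu Pm (trg1 PB f)) =
        vcomp (prod_bg B B) (phic Pm f (inv1 PB f))
          (vcomp (prod_bg B B) (hcomp2 (prod_bg B B) (id2 (prod_bg B B) (fone Pm f)) (phii Pm f)) (unit_i (prod_bg B B) (fone Pm f))))"
  by (auto simp: pc_def sq_def cell2_def hom1_def)

lemma Pm_morph: "bgmorphism PB (prod_bg B B) Pm"
  unfolding bgmorphism_def by (intro conjI) (fact Pax1 Pax2 Pax3 Pax4 Pax5 Pax6 Pax7 Pax8 Pax9 Pax10 Pax11 Pax12 Pax13 Pax14 Pax15)+

end


context bg
begin

lemma R_weq: "weak_equivalence B PB Rm"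
  unfolding weak_equivalence_def
proof (intro conjI ballI)
  fix Y assume "Y \<in> obj PB"
  then obtain f where f: "Y = [E1 f]" "f \<in> A1" by auto
  show "\<exists>X'\<in>obj B. \<exists>u\<in>arr1 PB. src1 PB u = Y \<and> trg1 PB u = fobj Rm X'"
    apply (rule bexI[where x="sr f"])
     apply (rule bexI[where x="C1 f (U (sr f)) (U (sr f)) (inv f) (vinv (Ee f) \<cdot> L (U (sr f)))"])
    using f ess_sq[of f] by auto
next
  fix X Y assume X: "X \<in> obj B" and Y: "Y \<in> obj B"
  show "hom_equivalence B PB Rm X Y"
    unfolding hom_equivalence_def
    apply (rule exI[where x=pA])
    apply (rule exI[where x=pAl])
    apply (rule exI[where x=I])
    apply (rule exI[where x="\<lambda>u. C2 (U X) (U Y) (pA u) (pA u) (rho (pA u)) (pA u) (pB u) (pS u) (I (pA u)) (theta (pA u) (pB u) (pS u))"])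
    apply (intro conjI allI ballI impI)
    subgoal by (auto simp: hom1_def sq_def X Y)
    subgoal by (auto simp: hom1_def cell2_def pc_def sq_def X Y)
    subgoal by (auto simp: hom1_def sq_def X Y)
    subgoal by (auto simp: hom1_def pc_def sq_def X Y)
    subgoal by (auto simp: hom1_def cell2_def)
    subgoal by (auto simp: hom1_def)
    subgoal for u
      using C_eps[OF _ X Y] by (auto simp: hom1_def cell2_def sq_def X Y)
    subgoal for w
      using C_eps_nat[OF _ X Y] by (auto simp: hom1_def pc_def sq_def X Y)
    done
qed


lemma P_fib: "fibration PB (prod_bg B B) Pm"
  unfolding fibration_def
proof (intro conjI ballI impI)
  fix X' b assume X': "X' \<in> obj PB" and b: "b \<in> arr1 (prod_bg B B)" and t: "trg1 (prod_bg B B) b = fobj Pm X'"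
  obtain f' where f': "X' = [E1 f']" "f' \<in> A1" using X' by auto
  obtain b1 b2 where bb: "b = (b1, b2)" "b1 \<in> A1" "b2 \<in> A1" using b by auto
  have tt: "tg b1 = sr f'" "tg b2 = tg f'" using t f' bb by auto
  show "\<exists>a\<in>arr1 PB. trg1 PB a = X' \<and> fobj Pm (src1 PB a) = src1 (prod_bg B B) b \<and> fone Pm a = b"
    apply (rule bexI[where x="C1 (inv b2 \<diamond> (f' \<diamond> b1)) f' b1 b2 (fsig f' b1 b2)"])
    using fib_sq[OF f'(2) bb(2,3) tt] f' bb tt by auto
next
  fix a' \<beta> assume a': "a' \<in> arr1 PB" and be: "\<beta> \<in> arr2 (prod_bg B B)" and c: "cod2 (prod_bg B B) \<beta> = fone Pm a'"
  obtain f f' a b s where u: "a' = C1 f f' a b s" "sq f f' a b s" using a' by auto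
  obtain \<beta>1 \<beta>2 where bb: "\<beta> = (\<beta>1, \<beta>2)" "\<beta>1 \<in> A2" "\<beta>2 \<in> A2" using be by auto
  have cc: "cd \<beta>1 = a" "cd \<beta>2 = b" using c u bb by auto
  show "\<exists>\<alpha>\<in>arr2 PB. cod2 PB \<alpha> = a' \<and> fone Pm (dom2 PB \<alpha>) = dom2 (prod_bg B B) \<beta> \<and> ftwo Pm \<alpha> = \<beta>"
    apply (rule bexI[where x="C2 f f' (dm \<beta>1) (dm \<beta>2) (vinv (\<beta>2 \<rhd> f) \<cdot> s \<cdot> (f' \<lhd> \<beta>1)) a b s \<beta>1 \<beta>2"])
    using fib_pc[OF u(2) bb(2) cc(1) bb(3) cc(2)] u bb cc by auto
qed

lemma PR_diag: "morph_eq B (morph_comp (prod_bg B B) Pm Rm) (diag B)"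
  unfolding morph_eq_def morph_comp_def diag_def by simp

end

theorem lemma5p11:
  fixes B :: "('o,'a,'c) bigroupoid"
  assumes "bigroupoid B"
  shows "\<exists>(PB :: (('o,'a,'c) pcell, ('o,'a,'c) pcell, ('o,'a,'c) pcell) bigroupoid) R P.
           bigroupoid PB \<and>
           bgmorphism B PB R \<and> bgmorphism PB (prod_bg B B) P \<and>
           weak_equivalence B PB R \<and> fibration PB (prod_bg B B) P \<and>
           morph_eq B (morph_comp (prod_bg B B) P R) (diag B)"
proof -
  interpret bg B by (rule bg.intro[OF assms])
  show ?thesis
    by (intro exI[of _ PB] exI[of _ Rm] exI[of _ Pm] conjI PB_bg Rm_morph Pm_morph R_weq P_fib PR_diag)
qed



end
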